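(* Let $d\ge 2$ be an integer and let $\mathfrak{F}$ be either an ordered field or a field that has more than two elements, with universe $F$. Let $\mathcal{G}$ be an FFD coordinate geometry over $\mathfrak{F}$ (of dimension $d$), and let $\mathsf{R}\subseteq (F^d)^n$ be an $n$-ary relation on the points $F^d$, for some $n\ge 1$. Then the following statements are equivalent: (i) $\mathsf{R}$ is a concept of $\mathcal{G}$, i.e. $\mathsf{R}$ is definable in $\mathcal{G}$; (ii) $\mathsf{R}$ is definable over $\mathfrak{F}$ and is closed under all automorphisms of $\mathcal{G}$; (iii) $\mathsf{R}$ is definable over $\mathfrak{F}$ and is closed under all affine automorphisms of $\mathcal{G}$.
   Context: A field is $\langle F,+,\cdot,0,1\rangle$; an ordered field is $\langle F,+,\cdot,0,1,\le\rangle$. "Definable" always means first-order definable without parameters: an $n$-ary relation $\mathsf{S}$ on the universe $M$ of a model $\mathfrak{M}$ is definable in $\mathfrak{M}$ iff there is a formula $\varphi(v_1,\dots,v_n)$ of the language of $\mathfrak{M}$ with $(a_1,\dots,a_n)\in\mathsf{S}\iff \mathfrak{M}\models\varphi[a_1,\dots,a_n]$; definable relations are called concepts of $\mathfrak{M}$. For $\vec p=\langle p_1,\dots,p_d\rangle\in F^d$, the collinearity relation is ${\mathsf{Col}}(\vec p,\vec q,\vec r)$ iff $\vec q=\vec p+\lambda(\vec r-\vec p)$ for some $\lambda\in F$ or $\vec r=\vec p$; for an ordered field, the betweenness relation is ${\mathsf{Bw}}(\vec p,\vec q,\vec r)$ iff $\vec q=\vec p+\lambda(\vec r-\vec p)$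 for some $\lambda\in F$ with $0\le\lambda\le 1$. An $n$-ary relation $\mathsf{R}$ on $F^d$ is definable over $\mathfrak{F}$ iff the $dn$-ary relation $\widehat{\mathsf{R}}=\{(p_{11},\dots,p_{1d},\dots,p_{n1},\dots,p_{nd}) : (\langle p_{11},\dots,p_{1d}\rangle,\dots,\langle p_{n1},\dots,p_{nd}\rangle)\in\mathsf{R}\}$ on $F$ is definable in $\mathfrak{F}$. A ($d$-dimensional) coordinate geometry over a field $\mathfrak{F}$ is a first-order model $\mathcal{G}$ whose universe is $F^d$, whose language contains only relation symbols (no functions or constants), and in which ${\mathsf{Col}}$ is definable. A coordinate geometry over an ordered field $\mathfrak{F}$ is defined the same way, with ${\mathsf{Bw}}$ in place of ${\mathsf{Col}}$. A coordinate geometry is field-definable if all its relations are definable over $\mathfrak{F}$, and FFD (finitely field-definable) if it is field-definable and has only finitely many relations. An affine transformation of $F^d$ is a map $\tau\circ L$ with $L$ an invertible linear map $F^d\to F^d$ and $\tau$ a translation. An affine automorphism of $\mathcal{G}$ is an automorphism of $\mathcal{G}$ that is an affine transformation. A relation $\mathsf{R}$ is closed under $f$ if $(a_1,\dots,a_n)\in\mathsf{R}$ implies $(f(a_1),\dots,f(a_n))\in\mathsf{R}$. *)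

theory Defs
  imports Main
begin

definition pts :: "nat \<Rightarrow> 'a list set" where
  "pts d = {p. length p = d}"

definition tuples :: "nat \<Rightarrow> nat \<Rightarrow> 'a list list set" where
  "tuples d n = {t. length t = n \<and> set t \<subseteq> pts d}"

definition vadd :: "'a::field list \<Rightarrow> 'a list \<Rightarrow> 'a list" where
  "vadd p q = map2 (+) p q"

definition vsub :: "'a::field list \<Rightarrow> 'a list \<Rightarrow> 'a list" where
  "vsub p q = map2 (-) p q"

definition smul :: "'a::field \<Rightarrow> 'a list \<Rightarrow> 'a list" where
  "smul c p = map ((*) c) p"

definition col :: "'a::field list \<Rightarrow> 'a list \<Rightarrow> 'a list \<Rightarrow> bool" where
  "col p q r \<longleftrightarrow> (\<exists>l. q = vadd p (smul l (vsub r p))) \<or> r = p"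

definition bw :: "('a::field \<Rightarrow> 'a \<Rightarrow> bool) \<Rightarrow> 'a list \<Rightarrow> 'a list \<Rightarrow> 'a list \<Rightarrow> bool" where
  "bw le p q r \<longleftrightarrow> (\<exists>l. le 0 l \<and> le l 1 \<and> q = vadd p (smul l (vsub r p)))"

definition col_rel :: "nat \<Rightarrow> 'a::field list list set" where
  "col_rel d = {[p, q, r] | p q r. p \<in> pts d \<and> q \<in> pts d \<and> r \<in> pts d \<and> col p q r}"

definition bw_rel :: "('a::field \<Rightarrow> 'a \<Rightarrow> bool) \<Rightarrow> nat \<Rightarrow> 'a list list set" where
  "bw_rel le d = {[p, q, r] | p q r. p \<in> pts d \<and> q \<in> pts d \<and> r \<in> pts d \<and> bw le p q r}"

text \<open>The field axioms come from the type class; an order relation le turns it into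
  an ordered field when the following axioms hold.\<close>

definition is_field_order :: "('a::field \<Rightarrow> 'a \<Rightarrow> bool) \<Rightarrow> bool" where
  "is_field_order le \<longleftrightarrow>
     (\<forall>x. le x x) \<and> (\<forall>x y. le x y \<and> le y x \<longrightarrow> x = y) \<and>
     (\<forall>x y z. le x y \<and> le y z \<longrightarrow> le x z) \<and> (\<forall>x y. le x y \<or> le y x) \<and>
     (\<forall>x y z. le x y \<longrightarrow> le (x + z) (y + z)) \<and>
     (\<forall>x y. le 0 x \<and> le 0 y \<longrightarrow> le 0 (x * y))"

text \<open>The field structure: le = None means the field language (+,*,0,1);
  le = Some r means the ordered field language (+,*,0,1,r).\<close>

definition field_hyp :: "('a::field \<Rightarrow> 'a \<Rightarrow> bool) option \<Rightarrow> bool" where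
  "field_hyp le = (case le of
      None \<Rightarrow> (\<exists>x y z::'a. distinct [x, y, z])
    | Some r \<Rightarrow> is_field_order r)"

datatype ftm = FVar nat | FZero | FOne | FAdd ftm ftm | FMul ftm ftm

datatype ffm = FEq ftm ftm | FLe ftm ftm | FNot ffm | FAnd ffm ffm | FEx nat ffm

fun feval :: "(nat \<Rightarrow> 'a::field) \<Rightarrow> ftm \<Rightarrow> 'a" where
  "feval e (FVar i) = e i"
| "feval e FZero = 0"
| "feval e FOne = 1"
| "feval e (FAdd s t) = feval e s + feval e t"
| "feval e (FMul s t) = feval e s * feval e t"

text \<open>The symbol FLe is only meaningful in the ordered-field language; for the plain
  field language it is interpreted as False (so it adds no expressive power).\<close>

fun fsat :: "('a::field \<Rightarrow> 'a \<Rightarrow> bool) option \<Rightarrow> (nat \<Rightarrow> 'a) \<Rightarrow> ffm \<Rightarrow> bool" where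
  "fsat le e (FEq s t) = (feval e s = feval e t)"
| "fsat le e (FLe s t) = (case le of None \<Rightarrow> False | Some r \<Rightarrow> r (feval e s) (feval e t))"
| "fsat le e (FNot \<phi>) = (\<not> fsat le e \<phi>)"
| "fsat le e (FAnd \<phi> \<psi>) = (fsat le e \<phi> \<and> fsat le e \<psi>)"
| "fsat le e (FEx x \<phi>) = (\<exists>a. fsat le (e(x := a)) \<phi>)"

text \<open>Parameter-free definability of an m-ary relation S on F (variables 0..m-1 are the
  free variables; the truth value must not depend on the other variables).\<close>

definition fdefinable_rel :: "('a::field \<Rightarrow> 'a \<Rightarrow> bool) option \<Rightarrow> nat \<Rightarrow> 'a list set \<Rightarrow> bool" where
  "fdefinable_rel le m S \<longleftrightarrow> (\<exists>\<phi>. \<forall>e. map e [0..<m] \<in> S \<longleftrightarrow> fsat le e \<phi>)"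

definition flatten :: "'a list list set \<Rightarrow> 'a list set" where
  "flatten R = concat ` R"

definition fdefinable :: "('a::field \<Rightarrow> 'a \<Rightarrow> bool) option \<Rightarrow> nat \<Rightarrow> nat \<Rightarrow> 'a list list set \<Rightarrow> bool" where
  "fdefinable le d n R \<longleftrightarrow> fdefinable_rel le (d * n) (flatten R)"

text \<open>Symbols of type 's; I s is the interpretation (a set of tuples of points).\<close>

datatype 's gfm = GEq nat nat | GRel 's "nat list" | GNot "'s gfm" | GAnd "'s gfm" "'s gfm"
  | GEx nat "'s gfm"

fun gsat :: "nat \<Rightarrow> ('s \<Rightarrow> 'a list list \<Rightarrow> bool) \<Rightarrow> (nat \<Rightarrow> 'a list) \<Rightarrow> 's gfm \<Rightarrow> bool" where
  "gsat d I e (GEq x y) = (e x = e y)"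
| "gsat d I e (GRel s xs) = I s (map e xs)"
| "gsat d I e (GNot \<phi>) = (\<not> gsat d I e \<phi>)"
| "gsat d I e (GAnd \<phi> \<psi>) = (gsat d I e \<phi> \<and> gsat d I e \<psi>)"
| "gsat d I e (GEx x \<phi>) = (\<exists>p. length p = d \<and> gsat d I (e(x := p)) \<phi>)"

definition gdefinable :: "nat \<Rightarrow> ('s \<Rightarrow> 'a list list \<Rightarrow> bool) \<Rightarrow> nat \<Rightarrow> 'a list list set \<Rightarrow> bool" where
  "gdefinable d I n R \<longleftrightarrow>
     (\<exists>\<phi>. \<forall>e. (\<forall>i. length (e i) = d) \<longrightarrow> (map e [0..<n] \<in> R \<longleftrightarrow> gsat d I e \<phi>))"

definition wf_struct :: "nat \<Rightarrow> ('s \<Rightarrow> nat) \<Rightarrow> ('s \<Rightarrow> 'a list list \<Rightarrow> bool) \<Rightarrow> bool" where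
  "wf_struct d ar I \<longleftrightarrow> (\<forall>s t. I s t \<longrightarrow> t \<in> tuples d (ar s))"

definition coord_geom :: "('a::field \<Rightarrow> 'a \<Rightarrow> bool) option \<Rightarrow> nat \<Rightarrow> ('s \<Rightarrow> nat)
    \<Rightarrow> ('s \<Rightarrow> 'a list list \<Rightarrow> bool) \<Rightarrow> bool" where
  "coord_geom le d ar I \<longleftrightarrow> wf_struct d ar I \<and>
     (case le of None \<Rightarrow> gdefinable d I 3 (col_rel d)
               | Some r \<Rightarrow> gdefinable d I 3 (bw_rel r d))"

definition FFD :: "('a::field \<Rightarrow> 'a \<Rightarrow> bool) option \<Rightarrow> nat \<Rightarrow> ('s \<Rightarrow> nat)
    \<Rightarrow> ('s \<Rightarrow> 'a list list \<Rightarrow> bool) \<Rightarrow> bool" where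
  "FFD le d ar I \<longleftrightarrow> coord_geom le d ar I \<and> finite (UNIV :: 's set) \<and>
     (\<forall>s. fdefinable le d (ar s) {t. I s t})"

definition automorphism :: "nat \<Rightarrow> ('s \<Rightarrow> 'a list list \<Rightarrow> bool) \<Rightarrow> ('a list \<Rightarrow> 'a list) \<Rightarrow> bool" where
  "automorphism d I f \<longleftrightarrow> bij_betw f (pts d) (pts d) \<and>
     (\<forall>s t. set t \<subseteq> pts d \<longrightarrow> (I s t \<longleftrightarrow> I s (map f t)))"

definition linear_on :: "nat \<Rightarrow> ('a::field list \<Rightarrow> 'a list) \<Rightarrow> bool" where
  "linear_on d L \<longleftrightarrow>
     (\<forall>p\<in>pts d. \<forall>q\<in>pts d. L (vadd p q) = vadd (L p) (L q)) \<and>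
     (\<forall>c. \<forall>p\<in>pts d. L (smul c p) = smul c (L p))"

definition affine_transf :: "nat \<Rightarrow> ('a::field list \<Rightarrow> 'a list) \<Rightarrow> bool" where
  "affine_transf d f \<longleftrightarrow> (\<exists>L b. linear_on d L \<and> bij_betw L (pts d) (pts d) \<and> b \<in> pts d \<and>
      (\<forall>p\<in>pts d. f p = vadd (L p) b))"

definition closed_under :: "'b list set \<Rightarrow> ('b \<Rightarrow> 'b) \<Rightarrow> bool" where
  "closed_under R f \<longleftrightarrow> (\<forall>t\<in>R. map f t \<in> R)"

end

theory Submission
  imports Defs
begin


definition colc :: "nat \<Rightarrow> 'a::field list \<Rightarrow> 'a list \<Rightarrow> 'a list \<Rightarrow> bool" where
  "colc d p q r \<longleftrightarrow> (\<exists>l. \<forall>i<d. q!i = p!i + l*(r!i - p!i)) \<or> (\<forall>i<d. r!i = p!i)"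

definition bwc :: "('a::field \<Rightarrow> 'a \<Rightarrow> bool) \<Rightarrow> nat \<Rightarrow> 'a list \<Rightarrow> 'a list \<Rightarrow> 'a list \<Rightarrow> bool" where
  "bwc r d p q f \<longleftrightarrow> (\<exists>l. r 0 l \<and> r l 1 \<and> (\<forall>i<d. q!i = p!i + l*(f!i - p!i)))"

definition pt :: "nat \<Rightarrow> 'a::field list \<Rightarrow> 'a list \<Rightarrow> 'a \<Rightarrow> 'a list" where
  "pt d o' e a = map (\<lambda>i. o'!i + a*(e!i - o'!i)) [0..<d]"

lemma list_eq_d: "length p = d \<Longrightarrow> length q = d \<Longrightarrow> p = q \<longleftrightarrow> (\<forall>i<d. p!i = q!i)"
  by (simp add: list_eq_iff_nth_eq)

lemma vadd_nth: "i < length p \<Longrightarrow> i < length q \<Longrightarrow> vadd p q ! i = p!i + q!i"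
  by (simp add: vadd_def)
lemma vsub_nth: "i < length p \<Longrightarrow> i < length q \<Longrightarrow> vsub p q ! i = p!i - q!i"
  by (simp add: vsub_def)
lemma smul_nth: "i < length p \<Longrightarrow> smul c p ! i = c * p!i"
  by (simp add: smul_def)
lemma len_vadd[simp]: "length (vadd p q) = min (length p) (length q)" by (simp add: vadd_def)
lemma len_vsub[simp]: "length (vsub p q) = min (length p) (length q)" by (simp add: vsub_def)
lemma len_smul[simp]: "length (smul c p) = length p" by (simp add: smul_def)

lemma col_colc:
  assumes "length p = d" "length q = d" "length r = d"
  shows "col p q r \<longleftrightarrow> colc d p q r"
proof -
  have "(q = vadd p (smul l (vsub r p))) \<longleftrightarrow> (\<forall>i<d. q!i = p!i + l*(r!i - p!i))" for l
    using assms by (simp add: list_eq_iff_nth_eq vadd_nth vsub_nth smul_nth)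
  moreover have "r = p \<longleftrightarrow> (\<forall>i<d. r!i = p!i)" using assms by (simp add: list_eq_iff_nth_eq)
  ultimately show ?thesis unfolding col_def colc_def by simp
qed

lemma bw_bwc:
  assumes "length p = d" "length q = d" "length f = d"
  shows "bw r p q f \<longleftrightarrow> bwc r d p q f"
proof -
  have "(q = vadd p (smul l (vsub f p))) \<longleftrightarrow> (\<forall>i<d. q!i = p!i + l*(f!i - p!i))" for l
    using assms by (simp add: list_eq_iff_nth_eq vadd_nth vsub_nth smul_nth)
  then show ?thesis unfolding bw_def bwc_def by simp
qed

lemma len_pt[simp]: "length (pt d o' e a) = d" by (simp add: pt_def)
lemma pt_nth[simp]: "i < d \<Longrightarrow> pt d o' e a ! i = o'!i + a*(e!i - o'!i)" by (simp add: pt_def)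

lemma ne_d: "length p = d \<Longrightarrow> length q = d \<Longrightarrow> p \<noteq> q \<longleftrightarrow> (\<exists>i<d. p!i \<noteq> q!i)"
  by (auto simp add: list_eq_iff_nth_eq)

lemma pt_inj:
  assumes "length o' = d" "length e = d" "o' \<noteq> e"
  shows "pt d o' e a = pt d o' e b \<longleftrightarrow> a = b"
proof
  assume h: "pt d o' e a = pt d o' e b"
  from assms obtain i where i: "i<d" "o'!i \<noteq> e!i" using ne_d by blast
  from h have "pt d o' e a ! i = pt d o' e b ! i" by simp
  with i have "a*(e!i - o'!i) = b*(e!i - o'!i)" by simp
  with i show "a = b" by simp
qed simp

lemma pt_0: "length o' = d \<Longrightarrow> pt d o' e 0 = o'"
  by (simp add: list_eq_iff_nth_eq)
lemma pt_1: "length e = d \<Longrightarrow> pt d o' e 1 = e"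
  by (simp add: list_eq_iff_nth_eq)

lemma colc_pt:
  assumes "length o' = d" "length e = d" "length p = d" "o' \<noteq> e"
  shows "colc d o' p e \<longleftrightarrow> (\<exists>a. p = pt d o' e a)"
proof -
  from assms obtain i where i: "i<d" "o'!i \<noteq> e!i" using ne_d by blast
  have "\<not> (\<forall>i<d. e!i = o'!i)" using i by metis
  moreover have "(\<forall>i<d. p!i = o'!i + l*(e!i - o'!i)) \<longleftrightarrow> p = pt d o' e l" for l
    using assms by (simp add: list_eq_iff_nth_eq)
  ultimately show ?thesis unfolding colc_def by auto
qed

lemma indep:
  assumes nc: "\<not> colc d o' a b"
    and h: "\<forall>i<d. x*(a!i - o'!i) = y*(b!i - o'!i)"
  shows "x = 0 \<and> y = 0"
proof -
  have x0: "x = 0"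
  proof (rule ccontr)
    assume "x \<noteq> 0"
    then have "\<forall>i<d. a!i = o'!i + (y/x)*(b!i - o'!i)"
      using h by (auto simp: field_simps)
    then show False using nc unfolding colc_def by blast
  qed
  have "y = 0"
  proof (rule ccontr)
    assume "y \<noteq> 0"
    then have "\<forall>i<d. b!i = o'!i" using h x0 by auto
    then show False using nc unfolding colc_def by blast
  qed
  with x0 show ?thesis by simp
qed

lemma ncol_ne1: "\<not> colc d o' e w \<Longrightarrow> length o' = d \<Longrightarrow> length e = d \<Longrightarrow> o' \<noteq> e"
  unfolding colc_def by (metis add.right_neutral mult_zero_left)
lemma ncol_ne2: "\<not> colc d o' e w \<Longrightarrow> length o' = d \<Longrightarrow> length w = d \<Longrightarrow> o' \<noteq> w"
  unfolding colc_def by metis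

fun grename :: "(nat \<Rightarrow> nat) \<Rightarrow> 's gfm \<Rightarrow> 's gfm" where
  "grename r (GEq x y) = GEq (r x) (r y)"
| "grename r (GRel s xs) = GRel s (map r xs)"
| "grename r (GNot \<phi>) = GNot (grename r \<phi>)"
| "grename r (GAnd \<phi> \<psi>) = GAnd (grename r \<phi>) (grename r \<psi>)"
| "grename r (GEx x \<phi>) = GEx (r x) (grename r \<phi>)"

lemma gsat_grename: "inj r \<Longrightarrow> gsat d I e (grename r \<phi>) = gsat d I (e \<circ> r) \<phi>"
proof (induction \<phi> arbitrary: e)
  case (GEx x \<phi>)
  have h: "(e(r x := p)) \<circ> r = (e \<circ> r)(x := p)" for p
    using GEx.prems by (auto simp: fun_eq_iff inj_eq)
  have "gsat d I e (grename r (GEx x \<phi>)) = (\<exists>p. length p = d \<and> gsat d I ((e(r x := p)) \<circ> r) \<phi>)"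
    by (simp only: grename.simps gsat.simps GEx.IH[OF GEx.prems])
  then show ?case by (simp only: h gsat.simps)
qed auto

definition gd :: "nat \<Rightarrow> ('s \<Rightarrow> 'a list list \<Rightarrow> bool) \<Rightarrow> ((nat \<Rightarrow> 'a list) \<Rightarrow> bool) \<Rightarrow> bool" where
  "gd d I P \<longleftrightarrow> (\<exists>\<phi>. \<forall>e. (\<forall>i. length (e i) = d) \<longrightarrow> (gsat d I e \<phi> \<longleftrightarrow> P e))"

definition gdl :: "nat \<Rightarrow> ('s \<Rightarrow> 'a list list \<Rightarrow> bool) \<Rightarrow> nat \<Rightarrow> ('a list list \<Rightarrow> bool) \<Rightarrow> bool" where
  "gdl d I m P \<longleftrightarrow> gd d I (\<lambda>e. P (map e [0..<m]))"

lemma gdefinable_gdl: "gdefinable d I n R \<longleftrightarrow> gdl d I n (\<lambda>xs. xs \<in> R)"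
  unfolding gdefinable_def gdl_def gd_def by (metis (no_types, lifting))

lemma gd_cong: "gd d I P \<Longrightarrow> (\<And>e. (\<forall>i. length (e i) = d) \<Longrightarrow> P e = Q e) \<Longrightarrow> gd d I Q"
  unfolding gd_def by metis

lemma gdl_cong: "gdl d I m P \<Longrightarrow> (\<And>xs. length xs = m \<Longrightarrow> (\<forall>x\<in>set xs. length x = d) \<Longrightarrow> P xs = Q xs)
   \<Longrightarrow> gdl d I m Q"
  unfolding gdl_def by (erule gd_cong) auto

lemma gd_eq: "gd d I (\<lambda>e. e i = e j)"
  unfolding gd_def by (rule exI[of _ "GEq i j"]) simp

lemma gd_rel: "gd d I (\<lambda>e. I s (map e xs))"
  unfolding gd_def by (rule exI[of _ "GRel s xs"]) simp

lemma gd_not: "gd d I P \<Longrightarrow> gd d I (\<lambda>e. \<not> P e)"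
  unfolding gd_def by (metis gsat.simps(3))

lemma gd_and: "gd d I P \<Longrightarrow> gd d I Q \<Longrightarrow> gd d I (\<lambda>e. P e \<and> Q e)"
  unfolding gd_def by (metis gsat.simps(4))

lemma gd_or: "gd d I P \<Longrightarrow> gd d I Q \<Longrightarrow> gd d I (\<lambda>e. P e \<or> Q e)"
proof -
  assume "gd d I P" "gd d I Q"
  then have "gd d I (\<lambda>e. \<not> (\<not> P e \<and> \<not> Q e))" by (intro gd_not gd_and)
  then show ?thesis by (rule gd_cong) simp
qed

lemma gd_imp: "gd d I P \<Longrightarrow> gd d I Q \<Longrightarrow> gd d I (\<lambda>e. P e \<longrightarrow> Q e)"
proof -
  assume "gd d I P" "gd d I Q"
  then have "gd d I (\<lambda>e. \<not> P e \<or> Q e)" by (intro gd_not gd_or)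
  then show ?thesis by (rule gd_cong) simp
qed

lemma gd_iff: "gd d I P \<Longrightarrow> gd d I Q \<Longrightarrow> gd d I (\<lambda>e. P e \<longleftrightarrow> Q e)"
proof -
  assume "gd d I P" "gd d I Q"
  then have "gd d I (\<lambda>e. (P e \<longrightarrow> Q e) \<and> (Q e \<longrightarrow> P e))" by (intro gd_imp gd_and)
  then show ?thesis by (rule gd_cong) blast
qed

lemma gd_true: "gd d I (\<lambda>e. True)"
  using gd_eq[of d I 0 0] by (rule gd_cong) simp

lemma gd_false: "gd d I (\<lambda>e. False)"
  using gd_not[OF gd_true] by simp

lemma gd_const: "gd d I (\<lambda>e. b)"
  by (cases b) (simp_all add: gd_true gd_false)

lemma gd_ex: "gd d I P \<Longrightarrow> gd d I (\<lambda>e. \<exists>p. length p = d \<and> P (e(x := p)))"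
  unfolding gd_def
proof (elim exE)
  fix \<phi> assume h: "\<forall>e. (\<forall>i. length (e i) = d) \<longrightarrow> gsat d I e \<phi> = P e"
  show "\<exists>\<phi>. \<forall>e. (\<forall>i. length (e i) = d) \<longrightarrow> gsat d I e \<phi> = (\<exists>p. length p = d \<and> P (e(x := p)))"
    apply (rule exI[of _ "GEx x \<phi>"])
    using h by auto
qed

lemma gd_all: "gd d I P \<Longrightarrow> gd d I (\<lambda>e. \<forall>p. length p = d \<longrightarrow> P (e(x := p)))"
  using gd_not[OF gd_ex[OF gd_not]] by (rule gd_cong) auto

lemma gd_rename: "inj r \<Longrightarrow> gd d I P \<Longrightarrow> gd d I (\<lambda>e. P (e \<circ> r))"
  unfolding gd_def
proof (elim exE)
  fix \<phi> assume r: "inj r" and h: "\<forall>e. (\<forall>i. length (e i) = d) \<longrightarrow> gsat d I e \<phi> = P e"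
  show "\<exists>\<phi>. \<forall>e. (\<forall>i. length (e i) = d) \<longrightarrow> gsat d I e \<phi> = P (e \<circ> r)"
    apply (rule exI[of _ "grename r \<phi>"])
    using h r by (simp add: gsat_grename)
qed

lemma gd_ball: "(\<And>j. j < (m::nat) \<Longrightarrow> gd d I (Q j)) \<Longrightarrow> gd d I (\<lambda>e. \<forall>j<m. Q j e)"
proof (induction m)
  case 0 then show ?case using gd_true by simp
next
  case (Suc m)
  have "gd d I (\<lambda>e. (\<forall>j<m. Q j e) \<and> Q m e)" using Suc by (intro gd_and) auto
  then show ?case by (rule gd_cong) (auto simp: less_Suc_eq)
qed

lemma gd_fin: assumes "finite S" "\<And>s. s \<in> S \<Longrightarrow> gd d I (Q s)" shows "gd d I (\<lambda>e. \<forall>s\<in>S. Q s e)"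
  using assms proof (induction S rule: finite_induct)
  case empty then show ?case using gd_true by simp
next
  case (insert x F)
  have "gd d I (\<lambda>e. Q x e \<and> (\<forall>s\<in>F. Q s e))" using insert by (intro gd_and) auto
  then show ?case by (rule gd_cong) auto
qed

definition upb :: "(nat \<Rightarrow> 'b) \<Rightarrow> nat \<Rightarrow> 'b list \<Rightarrow> nat \<Rightarrow> 'b" where
  "upb e N ps = (\<lambda>i. if N \<le> i \<and> i < N + length ps then ps!(i-N) else e i)"

lemma upb_Nil[simp]: "upb e N [] = e" by (auto simp add: upb_def fun_eq_iff)
lemma upb_Cons: "upb e N (p#ps) = upb (e(N:=p)) (Suc N) ps"
  by (auto simp: upb_def fun_eq_iff nth_Cons' Suc_diff_Suc)

lemma upb_in[simp]: "i < length ps \<Longrightarrow> upb e N ps (N+i) = ps!i" by (simp add: upb_def)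
lemma upb_in2[simp]: "i < length ps \<Longrightarrow> upb e N ps (i+N) = ps!i" by (simp add: upb_def)
lemma upb_out1[simp]: "i < N \<Longrightarrow> upb e N ps i = e i" by (simp add: upb_def)
lemma upb_out2: "N + length ps \<le> i \<Longrightarrow> upb e N ps i = e i" by (simp add: upb_def)

lemma gd_exs: "gd d I P \<Longrightarrow>
   gd d I (\<lambda>e. \<exists>ps. length ps = m \<and> (\<forall>p\<in>set ps. length p = d) \<and> P (upb e N ps))"
proof (induction m arbitrary: N)
  case 0 then show ?case by (rule gd_cong) auto
next
  case (Suc m)
  have "gd d I (\<lambda>e. \<exists>p. length p = d \<and> (\<lambda>e. \<exists>ps. length ps = m \<and> (\<forall>p\<in>set ps. length p = d) \<and> P (upb e (Suc N) ps)) (e(N := p)))"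
    using Suc by (intro gd_ex) auto
  then show ?case
  proof (rule gd_cong)
    fix e :: "nat \<Rightarrow> _"
    show "(\<exists>p. length p = d \<and> (\<exists>ps. length ps = m \<and> (\<forall>p\<in>set ps. length p = d) \<and> P (upb (e(N := p)) (Suc N) ps))) =
      (\<exists>ps. length ps = Suc m \<and> (\<forall>p\<in>set ps. length p = d) \<and> P (upb e N ps))" (is "?L = ?R")
    proof
      assume ?L
      then obtain p ps where "length p = d" "length ps = m" "\<forall>p\<in>set ps. length p = d" "P (upb (e(N := p)) (Suc N) ps)"
        by blast
      then show ?R by (intro exI[of _ "p#ps"]) (simp add: upb_Cons)
    next
      assume ?R
      then obtain ps where ps: "length ps = Suc m" "\<forall>p\<in>set ps. length p = d" "P (upb e N ps)" by blast
      then obtain p ps' where "ps = p#ps'" by (cases ps) auto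
      with ps show ?L by (simp add: upb_Cons) blast
    qed
  qed
qed

lemma gd_alls: "gd d I P \<Longrightarrow>
   gd d I (\<lambda>e. \<forall>ps. length ps = m \<and> (\<forall>p\<in>set ps. length p = d) \<longrightarrow> P (upb e N ps))"
  using gd_not[OF gd_exs[OF gd_not]] by (rule gd_cong) auto

lemma gdl_inst:
  assumes "gdl d I m P" "length vs = m"
  shows "gd d I (\<lambda>e. P (map e vs))"
proof -
  define N where "N = Suc (Max (insert 0 (set vs)))"
  have vsN: "v < N" if "v \<in> set vs" for v
    using that unfolding N_def by (simp add: le_imp_less_Suc)
  have inj: "inj (\<lambda>i::nat. i + N)" by (simp add: inj_def)
  have g1: "gd d I (\<lambda>e. P (map (e \<circ> (\<lambda>i. i + N)) [0..<m]))"
    using gd_rename[OF inj assms(1)[unfolded gdl_def]] by simp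
  have g2: "gd d I (\<lambda>e. \<forall>j<m. e (N + j) = e (vs!j))" by (intro gd_ball gd_eq)
  have "gd d I (\<lambda>e. \<exists>ps. length ps = m \<and> (\<forall>p\<in>set ps. length p = d) \<and>
     (\<lambda>e. (\<forall>j<m. e (N + j) = e (vs!j)) \<and> P (map (e \<circ> (\<lambda>i. i + N)) [0..<m])) (upb e N ps))"
    by (intro gd_exs gd_and g1 g2)
  then show ?thesis
  proof (rule gd_cong)
    fix e :: "nat \<Rightarrow> 'b list" assume len: "\<forall>i. length (e i) = d"
    have vj: "vs!j < N" if "j < m" for j using vsN assms(2) that by auto
    have m1: "map (upb e N ps \<circ> (\<lambda>i. i + N)) [0..<m] = ps" if "length ps = m" for ps
      using that by (simp add: list_eq_iff_nth_eq)
    show "(\<exists>ps. length ps = m \<and> (\<forall>p\<in>set ps. length p = d) \<and>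
       (\<forall>j<m. upb e N ps (N + j) = upb e N ps (vs ! j)) \<and> P (map (upb e N ps \<circ> (\<lambda>i. i + N)) [0..<m]))
      = P (map e vs)" (is "?L = ?R")
    proof
      assume ?L
      then obtain ps where ps: "length ps = m" "\<forall>j<m. upb e N ps (N + j) = upb e N ps (vs ! j)"
        "P (map (upb e N ps \<circ> (\<lambda>i. i + N)) [0..<m])" by blast
      have "ps = map e vs" using ps(1,2) vj assms(2) by (simp add: list_eq_iff_nth_eq)
      then show ?R using ps(3) m1[OF ps(1)] by simp
    next
      assume ?R
      show ?L
        apply (rule exI[of _ "map e vs"])
        using vj assms(2) len m1[of "map e vs"] \<open>?R\<close> by auto
    qed
  qed
qed


definition parc :: "nat \<Rightarrow> 'a::field list \<Rightarrow> 'a list \<Rightarrow> 'a list \<Rightarrow> 'a list \<Rightarrow> bool" where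
  "parc d a b c f \<longleftrightarrow> a \<noteq> b \<and> c \<noteq> f \<and> (\<exists>s. \<forall>i<d. f!i - c!i = s*(b!i - a!i))"

definition parg :: "nat \<Rightarrow> 'a::field list \<Rightarrow> 'a list \<Rightarrow> 'a list \<Rightarrow> 'a list \<Rightarrow> bool" where
  "parg d a b c f \<longleftrightarrow> a \<noteq> b \<and> c \<noteq> f \<and> ((colc d a c b \<and> colc d a f b) \<or>
     ((\<exists>x. length x = d \<and> (\<exists>y. length y = d \<and> colc d a x b \<and> colc d a y c \<and> x \<noteq> y \<and> colc d x f y)) \<and>
      \<not> (\<exists>z. length z = d \<and> colc d a z b \<and> colc d c z f)))"

lemma colc_ne:
  assumes "length a = d" "length b = d" "a \<noteq> b"
  shows "colc d a x b \<longleftrightarrow> (\<exists>l. \<forall>i<d. x!i = a!i + l*(b!i - a!i))"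
proof -
  have "\<not> (\<forall>i<d. b!i = a!i)" using assms by (auto simp: list_eq_iff_nth_eq)
  then show ?thesis unfolding colc_def by blast
qed

lemma lam_ex: "\<exists>lam::'a::field. lam \<noteq> 0 \<and> lam \<noteq> 1 \<Longrightarrow> True" by simp

lemma par_equiv:
  assumes lam: "\<exists>lam::'a::field. lam \<noteq> 0 \<and> lam \<noteq> 1"
    and len: "length a = d" "length b = d" "length c = d" "length f = d"
  shows "parg d a b c f \<longleftrightarrow> parc d a b c (f::'a list)"
proof
  assume P: "parg d a b c f"
  then have ab: "a \<noteq> b" and cf: "c \<noteq> f" unfolding parg_def by auto
  note cab = colc_ne[OF len(1,2) ab]
  show "parc d a b c f"
  proof (cases "colc d a c b \<and> colc d a f b")
    case True
    then obtain g h where g: "\<forall>i<d. c!i = a!i + g*(b!i - a!i)" and h: "\<forall>i<d. f!i = a!i + h*(b!i - a!i)"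
      using cab by auto
    have "\<forall>i<d. f!i - c!i = (h - g)*(b!i - a!i)" using g h by (auto simp: algebra_simps)
    then show ?thesis using ab cf unfolding parc_def by blast
  next
    case False
    with P obtain x y where xy: "length x = d" "length y = d" "colc d a x b" "colc d a y c" "x \<noteq> y" "colc d x f y"
      and nz: "\<not> (\<exists>z. length z = d \<and> colc d a z b \<and> colc d c z f)"
      unfolding parg_def by blast
    have ca: "c \<noteq> a"
    proof
      assume "c = a"
      then have "colc d a a b \<and> colc d c a f" unfolding colc_def by (auto intro: exI[of _ 0])
      then show False using nz len by blast
    qed
    obtain al where al: "\<forall>i<d. x!i = a!i + al*(b!i - a!i)" using xy(3) cab by auto
    obtain be where be: "\<forall>i<d. y!i = a!i + be*(c!i - a!i)" using xy(4) colc_ne[OF len(1,3) ca[symmetric]] by auto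
    obtain la where la: "\<forall>i<d. f!i = x!i + la*(y!i - x!i)" using xy(6) colc_ne[OF xy(1,2,5)] by auto
    have fi: "\<forall>i<d. f!i - c!i = ((1-la)*al)*(b!i - a!i) + (la*be - 1)*(c!i - a!i)"
    proof (intro allI impI)
      fix i assume i: "i < d"
      have "f!i - c!i = (a!i + al*(b!i - a!i)) + la*((a!i + be*(c!i-a!i)) - (a!i + al*(b!i - a!i))) - c!i"
        using al be la i by simp
      then show "f!i - c!i = ((1-la)*al)*(b!i - a!i) + (la*be - 1)*(c!i - a!i)"
        by (simp add: algebra_simps)
    qed
    show ?thesis
    proof (cases "la*be = 1")
      case True
      then have "\<forall>i<d. f!i - c!i = ((1-la)*al)*(b!i - a!i)" using fi by simp
      then show ?thesis using ab cf unfolding parc_def by blast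
    next
      case False
      define mu where "mu = 1/(1 - la*be)"
      have mu: "mu * (la*be - 1) = -1" using False unfolding mu_def by (simp add: field_simps)
      define z where "z = map (\<lambda>i. c!i + mu*(f!i - c!i)) [0..<d]"
      have lz: "length z = d" unfolding z_def by simp
      have z1: "\<forall>i<d. z!i = a!i + (mu*((1-la)*al))*(b!i - a!i)"
      proof (intro allI impI)
        fix i assume i: "i < d"
        have "z!i = c!i + mu*(((1-la)*al)*(b!i - a!i) + (la*be - 1)*(c!i - a!i))"
          using fi i unfolding z_def by simp
        also have "\<dots> = c!i + mu*((1-la)*al)*(b!i - a!i) + (mu*(la*be - 1))*(c!i - a!i)"
          by (simp add: algebra_simps)
        also have "\<dots> = c!i + mu*((1-la)*al)*(b!i - a!i) + (-1)*(c!i - a!i)" using mu by simp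
        also have "\<dots> = a!i + (mu*((1-la)*al))*(b!i - a!i)" by (simp add: algebra_simps)
        finally show "z!i = a!i + (mu*((1-la)*al))*(b!i - a!i)" .
      qed
      have "colc d a z b" using z1 unfolding colc_def by blast
      moreover have "colc d c z f" unfolding colc_def z_def by auto
      ultimately show ?thesis using nz lz by blast
    qed
  qed
next
  assume P: "parc d a b c f"
  then obtain s where ab: "a \<noteq> b" and cf: "c \<noteq> f" and s: "\<forall>i<d. f!i - c!i = s*(b!i - a!i)"
    unfolding parc_def by blast
  note cab = colc_ne[OF len(1,2) ab]
  show "parg d a b c f"
  proof (cases "colc d a c b")
    case True
    then obtain g where g: "\<forall>i<d. c!i = a!i + g*(b!i - a!i)" using cab by auto
    have "\<forall>i<d. f!i = a!i + (g+s)*(b!i - a!i)"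
    proof (intro allI impI)
      fix i assume i: "i < d"
      show "f!i = a!i + (g+s)*(b!i - a!i)" using g[rule_format, OF i] s[rule_format, OF i] by algebra
    qed
    then have "colc d a f b" using cab by blast
    then show ?thesis using True ab cf unfolding parg_def by blast
  next
    case False
    obtain la :: 'a where la: "la \<noteq> 0" "la \<noteq> 1" using lam by blast
    have la1: "1 - la \<noteq> 0" using la by simp
    define x where "x = map (\<lambda>i. a!i + (s/(1-la))*(b!i - a!i)) [0..<d]"
    define y where "y = map (\<lambda>i. a!i + (1/la)*(c!i - a!i)) [0..<d]"
    have lx: "length x = d" and ly: "length y = d" unfolding x_def y_def by simp_all
    have cx: "colc d a x b" unfolding colc_def x_def by (intro disjI1 exI[of _ "s/(1-la)"]) simp
    have cy: "colc d a y c" unfolding colc_def y_def by (intro disjI1 exI[of _ "1/la"]) simp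
    have xy: "x \<noteq> y"
    proof
      assume "x = y"
      then have "\<forall>i<d. a!i + (s/(1-la))*(b!i - a!i) = a!i + (1/la)*(c!i - a!i)"
        unfolding x_def y_def by (metis (no_types, lifting) diff_zero length_upt nth_map nth_upt plus_nat.add_0)
      then have "\<forall>i<d. c!i = a!i + (la*(s/(1-la)))*(b!i - a!i)"
        using la by (auto simp: field_simps)
      then show False using False cab by blast
    qed
    have cf': "colc d x f y"
    proof -
      have "\<forall>i<d. f!i = x!i + la*(y!i - x!i)"
      proof (intro allI impI)
        fix i assume i: "i<d"
        have "x!i + la*(y!i - x!i) = (1-la)*x!i + la*y!i" by (simp add: algebra_simps)
        also have "\<dots> = (1-la)*a!i + s*(b!i - a!i) + la*a!i + (c!i - a!i)"
          using i la la1 unfolding x_def y_def by (simp add: field_simps)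
        also have "\<dots> = c!i + s*(b!i - a!i)" by (simp add: algebra_simps)
        also have "\<dots> = f!i" using s i by (simp add: algebra_simps)
        finally show "f!i = x!i + la*(y!i - x!i)" by simp
      qed
      then show ?thesis unfolding colc_def by blast
    qed
    have nz: "\<not> (\<exists>z. length z = d \<and> colc d a z b \<and> colc d c z f)"
    proof
      assume "\<exists>z. length z = d \<and> colc d a z b \<and> colc d c z f"
      then obtain z where z: "colc d a z b" "colc d c z f" by blast
      obtain al where al: "\<forall>i<d. z!i = a!i + al*(b!i - a!i)" using z(1) cab by auto
      obtain mu where mu: "\<forall>i<d. z!i = c!i + mu*(f!i - c!i)" using z(2) colc_ne[OF len(3,4) cf] by auto
      have "\<forall>i<d. c!i = a!i + (al - mu*s)*(b!i - a!i)"
      proof (intro allI impI)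
        fix i assume i: "i < d"
        have "c!i = z!i - mu*(f!i - c!i)" using mu i by simp
        also have "\<dots> = a!i + al*(b!i - a!i) - mu*(s*(b!i - a!i))" using al s i by simp
        finally show "c!i = a!i + (al - mu*s)*(b!i - a!i)" by (simp add: algebra_simps)
      qed
      then show False using False cab by blast
    qed
    show ?thesis unfolding parg_def using ab cf lx ly cx cy xy cf' nz by blast
  qed
qed


definition padd :: "nat \<Rightarrow> 'a::field list \<Rightarrow> 'a list \<Rightarrow> 'a list \<Rightarrow> 'a list" where
  "padd d oo p y = map (\<lambda>i. p!i + y!i - oo!i) [0..<d]"

lemma len_padd[simp]: "length (padd d oo p y) = d" by (simp add: padd_def)
lemma padd_nth[simp]: "i < d \<Longrightarrow> padd d oo p y ! i = p!i + y!i - oo!i" by (simp add: padd_def)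

definition plusc :: "nat \<Rightarrow> 'a::field list \<Rightarrow> 'a list \<Rightarrow> 'a list \<Rightarrow> 'a list \<Rightarrow> bool" where
  "plusc d oo p y r \<longleftrightarrow> (p = oo \<and> r = y) \<or> (y = oo \<and> r = p) \<or>
     (\<not> colc d oo p y \<and> parc d p r oo y \<and> parc d y r oo p)"

definition trc :: "nat \<Rightarrow> 'a::field list \<Rightarrow> 'a list \<Rightarrow> 'a list \<Rightarrow> 'a list \<Rightarrow> 'a list \<Rightarrow> bool" where
  "trc d oo e1 ej t y \<longleftrightarrow> (t = oo \<and> y = oo) \<or> (t \<noteq> oo \<and> colc d oo y ej \<and> parc d t y e1 ej)"

definition addc :: "nat \<Rightarrow> 'a::field list \<Rightarrow> 'a list \<Rightarrow> 'a list \<Rightarrow> 'a list \<Rightarrow> 'a list \<Rightarrow> 'a list \<Rightarrow> bool" where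
  "addc d oo e w a b c \<longleftrightarrow> colc d oo c e \<and> (\<exists>q. length q = d \<and> plusc d oo b w q \<and> parc d c q a w)"

definition mulc :: "nat \<Rightarrow> 'a::field list \<Rightarrow> 'a list \<Rightarrow> 'a list \<Rightarrow> 'a list \<Rightarrow> 'a list \<Rightarrow> 'a list \<Rightarrow> bool" where
  "mulc d oo e w a b c \<longleftrightarrow> colc d oo c e \<and> (\<exists>a'. length a' = d \<and> trc d oo e w a a' \<and>
      (a = oo \<longrightarrow> c = oo) \<and> (a \<noteq> oo \<longrightarrow> parc d a' c w b))"

definition lec :: "('a::field \<Rightarrow> 'a \<Rightarrow> bool) \<Rightarrow> nat \<Rightarrow> 'a list \<Rightarrow> 'a list \<Rightarrow> 'a list \<Rightarrow> 'a list \<Rightarrow> 'a list \<Rightarrow> bool" where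
  "lec r d oo e w a b \<longleftrightarrow> (\<exists>c. length c = d \<and> colc d oo c e \<and> addc d oo e w a c b \<and> (bwc r d oo c e \<or> bwc r d oo e c))"

lemma parcD: "parc d a b c f \<Longrightarrow> \<exists>s. \<forall>i<d. f!i - c!i = s*(b!i - a!i)"
  by (simp add: parc_def)
lemma parcD2: "parc d a b c f \<Longrightarrow> a \<noteq> b \<and> c \<noteq> f"
  by (simp add: parc_def)
lemma parcI: "a \<noteq> b \<Longrightarrow> c \<noteq> f \<Longrightarrow> \<forall>i<d. f!i - c!i = s*(b!i - a!i) \<Longrightarrow> parc d a b c f"
  unfolding parc_def by (intro conjI exI[of _ s]) auto

lemma parc_sym:
  assumes "length a = d" "length b = d" "length c = d" "length f = d"
  shows "parc d a b c f \<longleftrightarrow> parc d c f a b"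
proof -
  have *: "parc d c f a b" if h: "parc d a b c f" and len: "length a = d" "length b = d" "length c = d" "length f = d"
    for a b c f :: "'a::field list"
  proof -
    from h have ab: "a \<noteq> b" and cf: "c \<noteq> f" by (simp_all add: parc_def)
    from h obtain s where s: "\<forall>i<d. f!i - c!i = s*(b!i - a!i)" by (auto simp: parc_def)
    have s0: "s \<noteq> 0"
    proof
      assume "s = 0"
      then have "\<forall>i<d. f!i = c!i" using s by simp
      then have "f = c" using len by (simp add: list_eq_iff_nth_eq)
      with cf show False by simp
    qed
    have "\<forall>i<d. b!i - a!i = (1/s)*(f!i - c!i)" using s s0 by simp
    then show ?thesis using ab cf parcI[of c f a b d "1/s"] by simp
  qed
  show ?thesis using *[of a b c f] *[of c f a b] assms by blast
qed

lemma parcD': "parc d a b c f \<Longrightarrow> length a = d \<Longrightarrow> length b = d \<Longrightarrow> length c = d \<Longrightarrow> length f = d \<Longrightarrow>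
   \<exists>s. \<forall>i<d. b!i - a!i = s*(f!i - c!i)"
  using parc_sym parcD by metis

lemma plus_sound:
  assumes len: "length oo = d" "length p = d" "length y = d" "length r = d"
    and P: "plusc d oo p y r"
  shows "r = padd d oo p y"
proof -
  consider "p = oo \<and> r = y" | "y = oo \<and> r = p" | "\<not> colc d oo p y \<and> parc d p r oo y \<and> parc d y r oo p"
    using P unfolding plusc_def by blast
  then show ?thesis
  proof cases
    case 1 then show ?thesis using len by (simp add: list_eq_iff_nth_eq)
  next
    case 2 then show ?thesis using len by (simp add: list_eq_iff_nth_eq)
  next
    case 3
    have p1: "parc d p r oo y" and p2: "parc d y r oo p" using 3 by simp_all
    obtain s where s: "\<forall>i<d. r!i - p!i = s*(y!i - oo!i)" using parcD'[OF p1] len by metis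
    obtain s' where s': "\<forall>i<d. r!i - y!i = s'*(p!i - oo!i)" using parcD'[OF p2] len by metis
    have "\<forall>i<d. (s' - 1)*(p!i - oo!i) = (s - 1)*(y!i - oo!i)"
    proof (intro allI impI)
      fix i assume i: "i<d"
      show "(s' - 1)*(p!i - oo!i) = (s - 1)*(y!i - oo!i)" using s[rule_format, OF i] s'[rule_format, OF i] by algebra
    qed
    then have "s' - 1 = 0 \<and> s - 1 = 0" using indep 3 by blast
    then have "s = 1" by simp
    then show ?thesis using s len by (simp add: list_eq_iff_nth_eq algebra_simps)
  qed
qed

lemma plus_complete:
  assumes len: "length oo = d" "length p = d" "length y = d"
    and h: "p = oo \<or> y = oo \<or> \<not> colc d oo p y"
  shows "plusc d oo p y (padd d oo p y)"
proof -
  consider "p = oo" | "y = oo" | "\<not> colc d oo p y" using h by blast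
  then show ?thesis
  proof cases
    case 1 then show ?thesis using len unfolding plusc_def by (simp add: list_eq_iff_nth_eq)
  next
    case 2 then show ?thesis using len unfolding plusc_def by (simp add: list_eq_iff_nth_eq)
  next
    case 3
    have po: "p \<noteq> oo" using 3 unfolding colc_def by (metis add.right_neutral mult_zero_left)
    have yo: "y \<noteq> oo" using 3 unfolding colc_def by metis
    have "p \<noteq> padd d oo p y"
    proof
      assume "p = padd d oo p y"
      then have "\<forall>i<d. p!i = p!i + y!i - oo!i" by (metis padd_nth)
      then have "y = oo" using len by (simp add: list_eq_iff_nth_eq)
      with yo show False by simp
    qed
    moreover have "y \<noteq> padd d oo p y"
    proof
      assume "y = padd d oo p y"
      then have "\<forall>i<d. y!i = p!i + y!i - oo!i" by (metis padd_nth)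
      then have "p = oo" using len by (simp add: list_eq_iff_nth_eq)
      with po show False by simp
    qed
    moreover have "\<forall>i<d. padd d oo p y!i - p!i = 1*(y!i - oo!i)" by simp
    moreover have "\<forall>i<d. padd d oo p y!i - y!i = 1*(p!i - oo!i)" by simp
    ultimately have "parc d oo y p (padd d oo p y)" "parc d oo p y (padd d oo p y)"
      using po yo by (auto intro!: parcI)
    then have "parc d p (padd d oo p y) oo y" "parc d y (padd d oo p y) oo p"
      using parc_sym len by (metis len_padd)+
    then show ?thesis using 3 unfolding plusc_def by simp
  qed
qed

lemma tr_sound:
  assumes len: "length oo = d" "length e1 = d" "length ej = d" "length y = d"
    and nc: "\<not> colc d oo e1 ej"
    and T: "trc d oo e1 ej (pt d oo e1 a) y"
  shows "y = pt d oo ej a"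
proof -
  have oe: "oo \<noteq> e1" using ncol_ne1[OF nc len(1,2)] .
  have oj: "oo \<noteq> ej" using ncol_ne2[OF nc len(1,3)] .
  consider "pt d oo e1 a = oo \<and> y = oo" | "colc d oo y ej \<and> parc d (pt d oo e1 a) y e1 ej"
    using T unfolding trc_def by blast
  then show ?thesis
  proof cases
    case 1
    then have "pt d oo e1 a = pt d oo e1 0" using pt_0[OF len(1)] by simp
    then have "a = 0" using pt_inj[OF len(1,2) oe] by simp
    then show ?thesis using 1 pt_0[OF len(1)] by simp
  next
    case 2
    then obtain mu where mu: "\<forall>i<d. y!i = oo!i + mu*(ej!i - oo!i)" using colc_ne[OF len(1,3) oj] by blast
    have p2: "parc d (pt d oo e1 a) y e1 ej" using 2 by simp
    obtain s where s: "\<forall>i<d. y!i - pt d oo e1 a!i = s*(ej!i - e1!i)" using parcD'[OF p2] len by (metis len_pt)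
    have "\<forall>i<d. (a - s)*(e1!i - oo!i) = (mu - s)*(ej!i - oo!i)"
    proof (intro allI impI)
      fix i assume i: "i<d"
      show "(a - s)*(e1!i - oo!i) = (mu - s)*(ej!i - oo!i)"
        using mu[rule_format, OF i] s[rule_format, OF i] i by simp algebra
    qed
    then have "a - s = 0 \<and> mu - s = 0" using indep[OF nc] by blast
    then have "mu = a" by simp
    then show ?thesis using mu len by (simp add: list_eq_iff_nth_eq)
  qed
qed

lemma tr_complete:
  assumes len: "length oo = d" "length e1 = d" "length ej = d"
    and nc: "\<not> colc d oo e1 ej"
  shows "trc d oo e1 ej (pt d oo e1 a) (pt d oo ej a)"
proof (cases "a = 0")
  case True then show ?thesis unfolding trc_def using pt_0[OF len(1)] by simp
next
  case False
  have oe: "oo \<noteq> e1" using ncol_ne1[OF nc len(1,2)] .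
  have t: "pt d oo e1 a \<noteq> oo" using pt_inj[OF len(1,2) oe, of a 0] pt_0[OF len(1)] False by simp
  have c: "colc d oo (pt d oo ej a) ej" unfolding colc_def by (intro disjI1 exI[of _ a]) simp
  have e1j: "e1 \<noteq> ej"
  proof
    assume "e1 = ej"
    then have "colc d oo e1 ej" unfolding colc_def by (intro disjI1 exI[of _ 1]) simp
    with nc show False by simp
  qed
  have ty: "pt d oo e1 a \<noteq> pt d oo ej a"
  proof
    assume h: "pt d oo e1 a = pt d oo ej a"
    have "\<forall>i<d. a*(e1!i - oo!i) = a*(ej!i - oo!i)"
    proof (intro allI impI)
      fix i assume i: "i<d"
      have "pt d oo e1 a ! i = pt d oo ej a ! i" using h by simp
      then show "a*(e1!i - oo!i) = a*(ej!i - oo!i)" using i by simp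
    qed
    then have "a = 0" using indep[OF nc] by blast
    with False show False by simp
  qed
  have "\<forall>i<d. pt d oo ej a ! i - pt d oo e1 a ! i = a*(ej!i - e1!i)"
  proof (intro allI impI)
    fix i assume i: "i < d"
    have "pt d oo ej a ! i - pt d oo e1 a ! i = (oo!i + a*(ej!i - oo!i)) - (oo!i + a*(e1!i - oo!i))"
      using i by simp
    also have "\<dots> = a*(ej!i - e1!i)" by algebra
    finally show "pt d oo ej a ! i - pt d oo e1 a ! i = a*(ej!i - e1!i)" .
  qed
  then have "parc d e1 ej (pt d oo e1 a) (pt d oo ej a)" using ty e1j by (intro parcI)
  then have "parc d (pt d oo e1 a) (pt d oo ej a) e1 ej" using parc_sym len by (metis len_pt)
  then show ?thesis unfolding trc_def using t c by blast
qed


lemma pt_nth_eq: "i < d \<Longrightarrow> pt d oo e a ! i - oo!i = a*(e!i - oo!i)" by simp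

lemma add_sound:
  assumes len: "length oo = d" "length e = d" "length w = d" "length c = d"
    and nc: "\<not> colc d oo e w"
    and A: "addc d oo e w (pt d oo e a) (pt d oo e b) c"
  shows "c = pt d oo e (a+b)"
proof -
  have oe: "oo \<noteq> e" using ncol_ne1[OF nc len(1,2)] .
  from A have cc: "colc d oo c e" by (simp add: addc_def)
  then obtain g where g: "c = pt d oo e g" using colc_pt[OF len(1,2,4) oe] by blast
  from A obtain q where q: "length q = d" "plusc d oo (pt d oo e b) w q" "parc d c q (pt d oo e a) w"
    unfolding addc_def by blast
  have q1: "q = padd d oo (pt d oo e b) w" using plus_sound[OF len(1) _ len(3) q(1) q(2)] by simp
  obtain s where s: "\<forall>i<d. q!i - c!i = s*(w!i - pt d oo e a!i)" using parcD'[OF q(3) len(4) q(1) _ len(3)] by (metis len_pt)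
  have "\<forall>i<d. (b - g + s*a)*(e!i - oo!i) = (s - 1)*(w!i - oo!i)"
  proof (intro allI impI)
    fix i assume i: "i < d"
    have "q!i - c!i = s*(w!i - pt d oo e a!i)" using s i by simp
    then have "(oo!i + b*(e!i - oo!i)) + w!i - oo!i - (oo!i + g*(e!i - oo!i)) = s*(w!i - (oo!i + a*(e!i - oo!i)))"
      using i q1 g by simp
    then show "(b - g + s*a)*(e!i - oo!i) = (s - 1)*(w!i - oo!i)" by algebra
  qed
  then have "b - g + s*a = 0 \<and> s - 1 = 0" using indep[OF nc] by blast
  then have "s = 1" "b - g + s*a = 0" by auto
  then have "g = a + b" by algebra
  then show ?thesis using g by simp
qed

lemma ncol_pt:
  assumes len: "length oo = d" "length e = d" "length w = d"
    and nc: "\<not> colc d oo e w"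
  shows "b = 0 \<or> \<not> colc d oo (pt d oo e b) w"
proof (rule ccontr)
  assume "\<not> (b = 0 \<or> \<not> colc d oo (pt d oo e b) w)"
  then have b: "b \<noteq> 0" and c: "colc d oo (pt d oo e b) w" by auto
  have ow: "oo \<noteq> w" using ncol_ne2[OF nc len(1,3)] .
  from c obtain l where l: "\<forall>i<d. pt d oo e b ! i = oo!i + l*(w!i - oo!i)"
    using colc_ne[OF len(1,3) ow] by blast
  have "\<forall>i<d. b*(e!i - oo!i) = l*(w!i - oo!i)" using l by auto
  then have "b = 0" using indep[OF nc] by blast
  with b show False by simp
qed

lemma w_ne_pt:
  assumes len: "length oo = d" "length e = d" "length w = d"
    and nc: "\<not> colc d oo e w"
  shows "pt d oo e a \<noteq> w"
proof
  assume h: "pt d oo e a = w"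
  have "\<forall>i<d. a*(e!i - oo!i) = 1*(w!i - oo!i)"
  proof (intro allI impI)
    fix i assume "i<d"
    then show "a*(e!i - oo!i) = 1*(w!i - oo!i)" using h[symmetric] by simp
  qed
  then show False using indep[OF nc, of a 1] by simp
qed

lemma add_complete:
  assumes len: "length oo = d" "length e = d" "length w = d"
    and nc: "\<not> colc d oo e w"
  shows "addc d oo e w (pt d oo e a) (pt d oo e b) (pt d oo e (a+b))"
proof -
  define q where "q = padd d oo (pt d oo e b) w"
  have pb: "pt d oo e b = oo \<or> w = oo \<or> \<not> colc d oo (pt d oo e b) w"
    using ncol_pt[OF len nc, of b] pt_0[OF len(1)] by auto
  have pl: "plusc d oo (pt d oo e b) w q" unfolding q_def using plus_complete[OF len(1) _ len(3) pb] by simp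
  have aw: "pt d oo e a \<noteq> w" using w_ne_pt[OF len nc] .
  have qd: "\<forall>i<d. q!i - pt d oo e (a+b) ! i = 1*(w!i - pt d oo e a ! i)"
    unfolding q_def by (simp add: algebra_simps)
  have cq: "pt d oo e (a+b) \<noteq> q"
  proof
    assume "pt d oo e (a+b) = q"
    then have "\<forall>i<d. w!i = pt d oo e a ! i" using qd by simp
    then have "w = pt d oo e a" using len by (simp add: list_eq_iff_nth_eq)
    with aw show False by simp
  qed
  have "parc d (pt d oo e a) w (pt d oo e (a+b)) q" by (rule parcI[OF aw cq qd])
  then have "parc d (pt d oo e (a+b)) q (pt d oo e a) w" using parc_sym len q_def by (metis len_pt len_padd)
  moreover have "colc d oo (pt d oo e (a+b)) e" unfolding colc_def by (intro disjI1 exI[of _ "a+b"]) simp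
  ultimately show ?thesis unfolding addc_def using pl q_def by (metis len_padd)
qed

lemma add_iff:
  assumes len: "length oo = d" "length e = d" "length w = d" "length c = d"
    and nc: "\<not> colc d oo e w"
  shows "addc d oo e w (pt d oo e a) (pt d oo e b) c \<longleftrightarrow> c = pt d oo e (a+b)"
  using add_sound[OF len nc] add_complete[OF len(1-3) nc] by blast

lemma mul_sound:
  assumes len: "length oo = d" "length e = d" "length w = d" "length c = d"
    and nc: "\<not> colc d oo e w"
    and M: "mulc d oo e w (pt d oo e a) (pt d oo e b) c"
  shows "c = pt d oo e (a*b)"
proof -
  have oe: "oo \<noteq> e" using ncol_ne1[OF nc len(1,2)] .
  from M have cc: "colc d oo c e" by (simp add: mulc_def)
  then obtain g where g: "c = pt d oo e g" using colc_pt[OF len(1,2,4) oe] by blast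
  from M obtain a' where a': "length a' = d" "trc d oo e w (pt d oo e a) a'"
    "pt d oo e a = oo \<longrightarrow> c = oo" "pt d oo e a \<noteq> oo \<longrightarrow> parc d a' c w (pt d oo e b)"
    unfolding mulc_def by blast
  have a'e: "a' = pt d oo w a" using tr_sound[OF len(1,2,3) a'(1) nc a'(2)] .
  show ?thesis
  proof (cases "a = 0")
    case True
    then have "c = oo" using a'(3) pt_0[OF len(1)] by simp
    then show ?thesis using True pt_0[OF len(1)] by simp
  next
    case False
    then have "pt d oo e a \<noteq> oo" using pt_inj[OF len(1,2) oe, of a 0] pt_0[OF len(1)] by simp
    then have p: "parc d a' c w (pt d oo e b)" using a'(4) by simp
    obtain s where s: "\<forall>i<d. c!i - a'!i = s*(pt d oo e b!i - w!i)" using parcD'[OF p a'(1) len(4) len(3)] by (metis len_pt)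
    have "\<forall>i<d. (g - s*b)*(e!i - oo!i) = (a - s)*(w!i - oo!i)"
    proof (intro allI impI)
      fix i assume i: "i < d"
      have "c!i - a'!i = s*(pt d oo e b!i - w!i)" using s i by simp
      then have "(oo!i + g*(e!i - oo!i)) - (oo!i + a*(w!i - oo!i)) = s*((oo!i + b*(e!i - oo!i)) - w!i)"
        using i a'e g by simp
      then show "(g - s*b)*(e!i - oo!i) = (a - s)*(w!i - oo!i)" by algebra
    qed
    then have "g - s*b = 0 \<and> a - s = 0" using indep[OF nc] by blast
    then have "g = a*b" by simp
    then show ?thesis using g by simp
  qed
qed

lemma mul_complete:
  assumes len: "length oo = d" "length e = d" "length w = d"
    and nc: "\<not> colc d oo e w"
  shows "mulc d oo e w (pt d oo e a) (pt d oo e b) (pt d oo e (a*b))"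
proof -
  have oe: "oo \<noteq> e" using ncol_ne1[OF nc len(1,2)] .
  define a' where "a' = pt d oo w a"
  have tr: "trc d oo e w (pt d oo e a) a'" unfolding a'_def using tr_complete[OF len nc] .
  have cc: "colc d oo (pt d oo e (a*b)) e" unfolding colc_def by (intro disjI1 exI[of _ "a*b"]) simp
  show ?thesis
  proof (cases "a = 0")
    case True
    then show ?thesis unfolding mulc_def using cc tr pt_0[OF len(1)] a'_def by (metis len_pt mult_zero_left)
  next
    case False
    have pa: "pt d oo e a \<noteq> oo" using pt_inj[OF len(1,2) oe, of a 0] pt_0[OF len(1)] False by simp
    have wb: "w \<noteq> pt d oo e b" using w_ne_pt[OF len nc] by metis
    have dd: "\<forall>i<d. pt d oo e (a*b) ! i - a'!i = a*(pt d oo e b ! i - w!i)"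
    proof (intro allI impI)
      fix i assume i: "i < d"
      have "pt d oo e (a*b) ! i - a'!i = (oo!i + (a*b)*(e!i - oo!i)) - (oo!i + a*(w!i - oo!i))"
        using i a'_def by simp
      also have "\<dots> = a*((oo!i + b*(e!i - oo!i)) - w!i)" by algebra
      finally show "pt d oo e (a*b) ! i - a'!i = a*(pt d oo e b ! i - w!i)" using i by simp
    qed
    have ac: "a' \<noteq> pt d oo e (a*b)"
    proof
      assume h: "a' = pt d oo e (a*b)"
      have "\<forall>i<d. a*(w!i - oo!i) = (a*b)*(e!i - oo!i)"
      proof (intro allI impI)
        fix i assume i: "i<d"
        have "a'!i = pt d oo e (a*b) ! i" using h by simp
        then show "a*(w!i - oo!i) = (a*b)*(e!i - oo!i)" using i a'_def by simp
      qed
      then have "a*b = 0 \<and> a = 0" using indep[OF nc] by metis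
      with False show False by simp
    qed
    have "parc d w (pt d oo e b) a' (pt d oo e (a*b))" by (rule parcI[OF wb ac dd])
    then have "parc d a' (pt d oo e (a*b)) w (pt d oo e b)" using parc_sym len a'_def by (metis len_pt)
    then show ?thesis unfolding mulc_def using cc tr pa a'_def by (metis len_pt)
  qed
qed

lemma mul_iff:
  assumes len: "length oo = d" "length e = d" "length w = d" "length c = d"
    and nc: "\<not> colc d oo e w"
  shows "mulc d oo e w (pt d oo e a) (pt d oo e b) c \<longleftrightarrow> c = pt d oo e (a*b)"
  using mul_sound[OF len nc] mul_complete[OF len(1-3) nc] by blast

section \<open>Ordered fields\<close>

context
  fixes r :: "'a::field \<Rightarrow> 'a \<Rightarrow> bool"
  assumes ord: "is_field_order r"
begin

lemma o_refl: "r x x" using ord unfolding is_field_order_def by blast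
lemma o_antisym: "r x y \<Longrightarrow> r y x \<Longrightarrow> x = y" using ord unfolding is_field_order_def by blast
lemma o_trans: "r x y \<Longrightarrow> r y z \<Longrightarrow> r x z" using ord unfolding is_field_order_def by blast
lemma o_total: "r x y \<or> r y x" using ord unfolding is_field_order_def by blast
lemma o_add: "r x y \<Longrightarrow> r (x+z) (y+z)" using ord unfolding is_field_order_def by blast
lemma o_mul: "r 0 x \<Longrightarrow> r 0 y \<Longrightarrow> r 0 (x*y)" using ord unfolding is_field_order_def by blast

lemma o_sub: "r x y \<longleftrightarrow> r 0 (y - x)"
proof
  assume "r x y" then have "r (x + -x) (y + -x)" by (rule o_add)
  then show "r 0 (y - x)" by simp
next
  assume "r 0 (y - x)" then have "r (0 + x) (y - x + x)" by (rule o_add)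
  then show "r x y" by simp
qed

lemma o_sq: "r 0 (z*z)"
proof (cases "r 0 z")
  case True then show ?thesis using o_mul by blast
next
  case False
  then have "r z 0" using o_total by blast
  then have "r 0 (0 - z)" using o_sub by blast
  then have "r 0 (-z)" by simp
  then have "r 0 ((-z)*(-z))" using o_mul[of "-z" "-z"] by simp
  then show ?thesis by simp
qed

lemma o_01: "r 0 1" using o_sq[of 1] by simp

lemma o_inv: "r 0 x \<Longrightarrow> r 0 (1/x)"
proof (cases "x = 0")
  case False
  assume "r 0 x"
  moreover have "r 0 ((1/x)*(1/x))" by (rule o_sq)
  ultimately have "r 0 (x*((1/x)*(1/x)))" using o_mul by blast
  then show ?thesis using False by (simp add: field_simps)
qed simp

lemma o_ne01: "(1::'a) \<noteq> 0" by simp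

lemma o_inv1: "r 1 c \<Longrightarrow> r (1/c) 1 \<and> c \<noteq> 0"
proof -
  assume h: "r 1 c"
  have c0: "r 0 c" using o_trans[OF o_01 h] .
  have cn: "c \<noteq> 0"
  proof
    assume "c = 0"
    then have "(1::'a) = 0" using o_antisym[OF h] o_01 by simp
    then show False by simp
  qed
  have "r 0 (c - 1)" using h o_sub by simp
  moreover have "r 0 (1/c)" using o_inv[OF c0] .
  ultimately have "r 0 ((c - 1)*(1/c))" using o_mul by blast
  then have "r 0 (1 - 1/c)" using cn by (simp add: field_simps)
  then show ?thesis using o_sub cn by simp
qed

lemma pos_iff:
  assumes len: "length oo = d" "length e = d" and oe: "oo \<noteq> e"
  shows "(bwc r d oo (pt d oo e g) e \<or> bwc r d oo e (pt d oo e g)) \<longleftrightarrow> r 0 g"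
proof -
  obtain k where k: "k < d" "oo!k \<noteq> e!k" using ne_d[of oo d e] len oe by blast
  have b1: "bwc r d oo (pt d oo e g) e \<longleftrightarrow> r 0 g \<and> r g 1"
  proof -
    have "(\<forall>i<d. pt d oo e g ! i = oo!i + l*(e!i - oo!i)) \<longleftrightarrow> g = l" for l
    proof
      assume "\<forall>i<d. pt d oo e g ! i = oo!i + l*(e!i - oo!i)"
      then have "pt d oo e g ! k = oo!k + l*(e!k - oo!k)" using k by blast
      then show "g = l" using k by simp
    qed simp
    then show ?thesis unfolding bwc_def by auto
  qed
  have b2: "bwc r d oo e (pt d oo e g) \<longleftrightarrow> (\<exists>l. r 0 l \<and> r l 1 \<and> l*g = 1)"
  proof -
    have "(\<forall>i<d. e!i = oo!i + l*(pt d oo e g ! i - oo!i)) \<longleftrightarrow> l*g = 1" for l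
    proof
      assume "\<forall>i<d. e!i = oo!i + l*(pt d oo e g ! i - oo!i)"
      then have "e!k = oo!k + l*(pt d oo e g ! k - oo!k)" using k by blast
      then have "(1 - l*g)*(e!k - oo!k) = 0" using k by (simp add: algebra_simps)
      then show "l*g = 1" using k by simp
    next
      assume "l*g = 1"
      then show "\<forall>i<d. e!i = oo!i + l*(pt d oo e g ! i - oo!i)"
        by (simp add: algebra_simps flip: mult.assoc)
    qed
    then show ?thesis unfolding bwc_def by auto
  qed
  show ?thesis
  proof
    assume "bwc r d oo (pt d oo e g) e \<or> bwc r d oo e (pt d oo e g)"
    then show "r 0 g"
    proof
      assume "bwc r d oo (pt d oo e g) e" then show ?thesis using b1 by simp
    next
      assume "bwc r d oo e (pt d oo e g)"
      then obtain l where l: "r 0 l" "l*g = 1" using b2 by blast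
      then have "g = 1/l" by (metis divide_eq_eq mult.commute mult_zero_right zero_neq_one)
      then show ?thesis using o_inv[OF l(1)] by simp
    qed
  next
    assume g: "r 0 g"
    show "bwc r d oo (pt d oo e g) e \<or> bwc r d oo e (pt d oo e g)"
    proof (cases "r g 1")
      case True then show ?thesis using b1 g by simp
    next
      case False
      then have g1: "r 1 g" using o_total by blast
      from o_inv1[OF g1] have "r (1/g) 1" "g \<noteq> 0" by auto
      moreover have "r 0 (1/g)" using o_inv[OF g] .
      ultimately show ?thesis using b2 by (intro disjI2) (auto intro!: exI[of _ "1/g"])
    qed
  qed
qed

lemma le_iff:
  assumes len: "length oo = d" "length e = d" "length w = d"
    and nc: "\<not> colc d oo e w"
  shows "lec r d oo e w (pt d oo e a) (pt d oo e b) \<longleftrightarrow> r a b"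
proof -
  have oe: "oo \<noteq> e" using ncol_ne1[OF nc len(1,2)] .
  have "lec r d oo e w (pt d oo e a) (pt d oo e b) \<longleftrightarrow>
     (\<exists>g. addc d oo e w (pt d oo e a) (pt d oo e g) (pt d oo e b) \<and> (bwc r d oo (pt d oo e g) e \<or> bwc r d oo e (pt d oo e g)))"
    unfolding lec_def using colc_pt[OF len(1,2) _ oe] by (metis len_pt)
  also have "\<dots> \<longleftrightarrow> (\<exists>g. pt d oo e b = pt d oo e (a+g) \<and> r 0 g)"
    using add_iff[OF len(1-3) _ nc] pos_iff[OF len(1,2) oe] by (metis len_pt)
  also have "\<dots> \<longleftrightarrow> (\<exists>g. b = a + g \<and> r 0 g)" using pt_inj[OF len(1,2) oe] by metis
  also have "\<dots> \<longleftrightarrow> r 0 (b - a)" by (metis add_diff_cancel_left' diff_add_cancel add.commute)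
  also have "\<dots> \<longleftrightarrow> r a b" using o_sub by simp
  finally show ?thesis .
qed

end


lemma gd_exI:
  assumes "gd d I P" "\<And>e. (\<forall>i. length (e i) = d) \<Longrightarrow> Q e = (\<exists>p. length p = d \<and> P (e(x := p)))"
  shows "gd d I Q"
  using gd_ex[OF assms(1), of x]
proof (rule gd_cong)
  fix e :: "nat \<Rightarrow> 'b list" assume h: "\<forall>i. length (e i) = d"
  show "(\<exists>p. length p = d \<and> P (e(x := p))) = Q e" using assms(2)[OF h] by simp
qed

lemma gd_inst3: "gd d I (\<lambda>e. P (e 0) (e 1) (e 2)) \<Longrightarrow> gd d I (\<lambda>e. P (e i) (e j) (e k))"
proof -
  assume h: "gd d I (\<lambda>e. P (e 0) (e 1) (e 2))"
  have u: "[0..<3] = [0,1,2::nat]" by (simp add: upt_rec)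
  have "gdl d I 3 (\<lambda>xs. P (xs!0) (xs!1) (xs!2))" unfolding gdl_def u using h by (rule gd_cong) simp
  from gdl_inst[OF this, of "[i,j,k]"] show ?thesis by simp
qed

lemma gd_inst4: "gd d I (\<lambda>e. P (e 0) (e 1) (e 2) (e 3)) \<Longrightarrow> gd d I (\<lambda>e. P (e i) (e j) (e k) (e l))"
proof -
  assume h: "gd d I (\<lambda>e. P (e 0) (e 1) (e 2) (e 3))"
  have u: "[0..<4] = [0,1,2,3::nat]" by (simp add: upt_rec)
  have "gdl d I 4 (\<lambda>xs. P (xs!0) (xs!1) (xs!2) (xs!3))" unfolding gdl_def u using h by (rule gd_cong) simp
  from gdl_inst[OF this, of "[i,j,k,l]"] show ?thesis by simp
qed

lemma gd_inst5: "gd d I (\<lambda>e. P (e 0) (e 1) (e 2) (e 3) (e 4)) \<Longrightarrow> gd d I (\<lambda>e. P (e i) (e j) (e k) (e l) (e m))"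
proof -
  assume h: "gd d I (\<lambda>e. P (e 0) (e 1) (e 2) (e 3) (e 4))"
  have u: "[0..<5] = [0,1,2,3,4::nat]" by (simp add: upt_rec)
  have "gdl d I 5 (\<lambda>xs. P (xs!0) (xs!1) (xs!2) (xs!3) (xs!4))" unfolding gdl_def u using h by (rule gd_cong) simp
  from gdl_inst[OF this, of "[i,j,k,l,m]"] show ?thesis by simp
qed

lemma gd_inst6: "gd d I (\<lambda>e. P (e 0) (e 1) (e 2) (e 3) (e 4) (e 5)) \<Longrightarrow> gd d I (\<lambda>e. P (e i) (e j) (e k) (e l) (e m) (e n))"
proof -
  assume h: "gd d I (\<lambda>e. P (e 0) (e 1) (e 2) (e 3) (e 4) (e 5))"
  have u: "[0..<6] = [0,1,2,3,4,5::nat]" by (simp add: upt_rec)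
  have "gdl d I 6 (\<lambda>xs. P (xs!0) (xs!1) (xs!2) (xs!3) (xs!4) (xs!5))" unfolding gdl_def u using h by (rule gd_cong) simp
  from gdl_inst[OF this, of "[i,j,k,l,m,n]"] show ?thesis by simp
qed

locale geo =
  fixes d :: nat and I :: "'s \<Rightarrow> 'a::field list list \<Rightarrow> bool"
  assumes gcol0: "gd d I (\<lambda>e. colc d (e 0) (e 1) (e 2))"
    and lam: "\<exists>lam::'a. lam \<noteq> 0 \<and> lam \<noteq> 1"
begin

lemma gcol: "gd d I (\<lambda>e. colc d (e i) (e j) (e k))"
  using gd_inst3[OF gcol0] .

lemma gpar0: "gd d I (\<lambda>e. parc d (e 0) (e 1) (e 2) (e 3))"
proof -
  have g1: "gd d I (\<lambda>e. colc d (e 0) (e 4) (e 1) \<and> colc d (e 0) (e 5) (e 2) \<and> e 4 \<noteq> e 5 \<and> colc d (e 4) (e 3) (e 5))"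
    by (intro gd_and gd_not gd_eq gcol)
  have g2: "gd d I (\<lambda>e. \<exists>y. length y = d \<and> colc d (e 0) (e 4) (e 1) \<and> colc d (e 0) y (e 2) \<and> e 4 \<noteq> y \<and> colc d (e 4) (e 3) y)"
    by (rule gd_exI[OF g1, of _ 5]) simp
  have g3: "gd d I (\<lambda>e. \<exists>x. length x = d \<and> (\<exists>y. length y = d \<and> colc d (e 0) x (e 1) \<and> colc d (e 0) y (e 2) \<and> x \<noteq> y \<and> colc d x (e 3) y))"
    by (rule gd_exI[OF g2, of _ 4]) simp
  have g0: "gd d I (\<lambda>e. colc d (e 0) (e 4) (e 1) \<and> colc d (e 2) (e 4) (e 3))"
    by (intro gd_and gcol)
  have g4: "gd d I (\<lambda>e. \<exists>z. length z = d \<and> colc d (e 0) z (e 1) \<and> colc d (e 2) z (e 3))"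
    by (rule gd_exI[OF g0, of _ 4]) simp
  have "gd d I (\<lambda>e. parg d (e 0) (e 1) (e 2) (e 3))"
    unfolding parg_def by (intro gd_and gd_not gd_eq gd_or gcol g3 g4)
  then show ?thesis by (rule gd_cong) (simp add: par_equiv[OF lam])
qed

lemma gpar: "gd d I (\<lambda>e. parc d (e i) (e j) (e k) (e l))"
  using gd_inst4[OF gpar0] .

lemma gplus: "gd d I (\<lambda>e. plusc d (e i) (e j) (e k) (e l))"
proof -
  have "gd d I (\<lambda>e. plusc d (e 0) (e 1) (e 2) (e 3))"
    unfolding plusc_def by (intro gd_and gd_not gd_eq gd_or gcol gpar)
  then show ?thesis using gd_inst4 by blast
qed

lemma gtr: "gd d I (\<lambda>e. trc d (e i) (e j) (e k) (e l) (e m))"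
proof -
  have "gd d I (\<lambda>e. trc d (e 0) (e 1) (e 2) (e 3) (e 4))"
    unfolding trc_def by (intro gd_and gd_not gd_eq gd_or gcol gpar)
  then show ?thesis using gd_inst5 by blast
qed

lemma gadd: "gd d I (\<lambda>e. addc d (e i) (e j) (e k) (e l) (e m) (e n))"
proof -
  have g: "gd d I (\<lambda>e. plusc d (e 0) (e 4) (e 2) (e 6) \<and> parc d (e 5) (e 6) (e 3) (e 2))"
    by (intro gd_and gplus gpar)
  have "gd d I (\<lambda>e. colc d (e 0) (e 5) (e 1) \<and> (\<exists>q. length q = d \<and> plusc d (e 0) (e 4) (e 2) q \<and> parc d (e 5) q (e 3) (e 2)))"
    by (intro gd_and gcol gd_exI[OF g, of _ 6]) simp
  then have "gd d I (\<lambda>e. addc d (e 0) (e 1) (e 2) (e 3) (e 4) (e 5))" unfolding addc_def .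
  then show ?thesis using gd_inst6 by blast
qed

lemma gmul: "gd d I (\<lambda>e. mulc d (e i) (e j) (e k) (e l) (e m) (e n))"
proof -
  have g: "gd d I (\<lambda>e. trc d (e 0) (e 1) (e 2) (e 3) (e 6) \<and> (e 3 = e 0 \<longrightarrow> e 5 = e 0) \<and> (e 3 \<noteq> e 0 \<longrightarrow> parc d (e 6) (e 5) (e 2) (e 4)))"
    by (intro gd_and gd_imp gd_not gd_eq gtr gpar)
  have "gd d I (\<lambda>e. colc d (e 0) (e 5) (e 1) \<and> (\<exists>a'. length a' = d \<and> trc d (e 0) (e 1) (e 2) (e 3) a' \<and>
      (e 3 = e 0 \<longrightarrow> e 5 = e 0) \<and> (e 3 \<noteq> e 0 \<longrightarrow> parc d a' (e 5) (e 2) (e 4))))"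
    by (intro gd_and gcol gd_exI[OF g, of _ 6]) simp
  then have "gd d I (\<lambda>e. mulc d (e 0) (e 1) (e 2) (e 3) (e 4) (e 5))" unfolding mulc_def .
  then show ?thesis using gd_inst6 by blast
qed

lemma gle:
  assumes gbw0: "gd d I (\<lambda>e. bwc r d (e 0) (e 1) (e 2))"
  shows "gd d I (\<lambda>e. lec r d (e i) (e j) (e k) (e l) (e m))"
proof -
  have gbw: "gd d I (\<lambda>e. bwc r d (e i) (e j) (e k))" for i j k using gd_inst3[OF gbw0] .
  have g: "gd d I (\<lambda>e. colc d (e 0) (e 5) (e 1) \<and> addc d (e 0) (e 1) (e 2) (e 3) (e 5) (e 4) \<and>
        (bwc r d (e 0) (e 5) (e 1) \<or> bwc r d (e 0) (e 1) (e 5)))"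
    by (intro gd_and gd_or gcol gadd gbw)
  have "gd d I (\<lambda>e. lec r d (e 0) (e 1) (e 2) (e 3) (e 4))"
    unfolding lec_def by (rule gd_exI[OF g, of _ 5]) simp
  then show ?thesis using gd_inst5 by blast
qed

end


fun tvars :: "ftm \<Rightarrow> nat" where
  "tvars (FVar i) = Suc i"
| "tvars FZero = 0"
| "tvars FOne = 0"
| "tvars (FAdd s t) = max (tvars s) (tvars t)"
| "tvars (FMul s t) = max (tvars s) (tvars t)"

fun fvars :: "ffm \<Rightarrow> nat" where
  "fvars (FEq s t) = max (tvars s) (tvars t)"
| "fvars (FLe s t) = max (tvars s) (tvars t)"
| "fvars (FNot \<phi>) = fvars \<phi>"
| "fvars (FAnd \<phi> \<psi>) = max (fvars \<phi>) (fvars \<psi>)"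
| "fvars (FEx x \<phi>) = max (Suc x) (fvars \<phi>)"

definition envf :: "(nat \<Rightarrow> 'a::field) \<Rightarrow> nat \<Rightarrow> nat \<Rightarrow> 'a" where
  "envf g V = (\<lambda>i. if i < V then g i else 0)"

locale fgeo = geo d I for d :: nat and I :: "'s \<Rightarrow> 'a::field list list \<Rightarrow> bool" +
  fixes le :: "('a \<Rightarrow> 'a \<Rightarrow> bool) option"
  assumes leok: "\<And>r. le = Some r \<Longrightarrow> is_field_order r \<and> gd d I (\<lambda>e. bwc r d (e 0) (e 1) (e 2))"
begin

definition cnd :: "nat \<Rightarrow> nat \<Rightarrow> nat \<Rightarrow> nat \<Rightarrow> nat \<Rightarrow> (nat \<Rightarrow> 'a list) \<Rightarrow> (nat \<Rightarrow> 'a) \<Rightarrow> bool" where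
  "cnd io ie iw N V e g \<longleftrightarrow> (\<forall>i. length (e i) = d) \<and> \<not> colc d (e io) (e ie) (e iw) \<and>
      (\<forall>i<V. e (N+i) = pt d (e io) (e ie) (g i))"

lemma cnd_upd:
  assumes "cnd io ie iw N V e g" "io < N" "ie < N" "iw < N" "N + V \<le> j" "length p = d"
  shows "cnd io ie iw N V (e(j := p)) g"
  using assms unfolding cnd_def by auto

lemma term_trans:
  assumes io: "io < N" "ie < N" "iw < N"
  shows "tvars t \<le> V \<Longrightarrow> N + V \<le> M \<Longrightarrow> \<exists>T. gd d I T \<and>
     (\<forall>e g. cnd io ie iw N V e g \<longrightarrow> (T e \<longleftrightarrow> e M = pt d (e io) (e ie) (feval (envf g V) t)))"
proof (induction t arbitrary: M)
  case (FVar i)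
  show ?case
    apply (rule exI[of _ "\<lambda>e. e M = e (N+i)"])
    using FVar by (auto simp: gd_eq cnd_def envf_def)
next
  case FZero
  show ?case
    apply (rule exI[of _ "\<lambda>e. e M = e io"])
    by (auto simp: gd_eq cnd_def pt_0)
next
  case FOne
  show ?case
    apply (rule exI[of _ "\<lambda>e. e M = e ie"])
    by (auto simp: gd_eq cnd_def pt_1)
next
  case (FAdd s t)
  obtain T1 where T1: "gd d I T1" "\<forall>e g. cnd io ie iw N V e g \<longrightarrow> (T1 e \<longleftrightarrow> e (M+1) = pt d (e io) (e ie) (feval (envf g V) s))"
    using FAdd.IH(1)[of "M+1"] FAdd.prems by auto
  obtain T2 where T2: "gd d I T2" "\<forall>e g. cnd io ie iw N V e g \<longrightarrow> (T2 e \<longleftrightarrow> e (M+2) = pt d (e io) (e ie) (feval (envf g V) t))"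
    using FAdd.IH(2)[of "M+2"] FAdd.prems by auto
  define B where "B = (\<lambda>e. T1 e \<and> T2 e \<and> addc d (e io) (e ie) (e iw) (e (M+1)) (e (M+2)) (e M))"
  have gB: "gd d I B" unfolding B_def by (intro gd_and T1(1) T2(1) gadd)
  define T where "T = (\<lambda>e. \<exists>p1. length p1 = d \<and> (\<lambda>e. \<exists>p2. length p2 = d \<and> B (e(M+2 := p2))) (e(M+1 := p1)))"
  have gT: "gd d I T" unfolding T_def by (intro gd_ex gB)
  show ?case
  proof (intro exI[of _ T] conjI gT allI impI)
    fix e g assume c: "cnd io ie iw N V e g"
    define vs where "vs = feval (envf g V) s"
    define vt where "vt = feval (envf g V) t"
    have len: "\<forall>i. length (e i) = d" and nc: "\<not> colc d (e io) (e ie) (e iw)" using c unfolding cnd_def by auto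
    have "T e \<longleftrightarrow> (\<exists>p1 p2. length p1 = d \<and> length p2 = d \<and> p1 = pt d (e io) (e ie) vs \<and>
       p2 = pt d (e io) (e ie) vt \<and> addc d (e io) (e ie) (e iw) p1 p2 (e M))" (is "_ \<longleftrightarrow> ?thesis2")
    proof -
      have "B (e(M+1 := p1, M+2 := p2)) \<longleftrightarrow> p1 = pt d (e io) (e ie) vs \<and>
       p2 = pt d (e io) (e ie) vt \<and> addc d (e io) (e ie) (e iw) p1 p2 (e M)"
        if "length p1 = d" "length p2 = d" for p1 p2
      proof -
        have c2: "cnd io ie iw N V (e(M+1 := p1, M+2 := p2)) g"
          using cnd_upd[OF cnd_upd[OF c io _ that(1)] io _ that(2)] FAdd.prems by auto
        have m: "M + 1 \<noteq> M" "M+2 \<noteq> M" "M+1 \<noteq> M+2" "io \<noteq> M+1" "io \<noteq> M+2" "ie \<noteq> M+1" "ie \<noteq> M+2"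
          "iw \<noteq> M+1" "iw \<noteq> M+2" using io FAdd.prems by auto
        show ?thesis unfolding B_def using T1(2)[rule_format, OF c2] T2(2)[rule_format, OF c2] m
          unfolding vs_def vt_def by simp
      qed
      note h = this
      have "T e \<longleftrightarrow> (\<exists>p1 p2. length p1 = d \<and> length p2 = d \<and> B (e(M+1 := p1, M+2 := p2)))"
        unfolding T_def by simp
      also have "\<dots> \<longleftrightarrow> ?thesis2"
      proof
        assume "\<exists>p1 p2. length p1 = d \<and> length p2 = d \<and> B (e(M+1 := p1, M+2 := p2))"
        then obtain p1 p2 where "length p1 = d" "length p2 = d" "B (e(M+1 := p1, M+2 := p2))" by blast
        then show ?thesis2 using h by blast
      next
        assume ?thesis2
        then obtain p1 p2 where hh: "length p1 = d" "length p2 = d" "p1 = pt d (e io) (e ie) vs"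
          "p2 = pt d (e io) (e ie) vt" "addc d (e io) (e ie) (e iw) p1 p2 (e M)" by blast
        then have "B (e(M+1 := p1, M+2 := p2))" using h by blast
        then show "\<exists>p1 p2. length p1 = d \<and> length p2 = d \<and> B (e(M+1 := p1, M+2 := p2))" using hh by blast
      qed
      finally show ?thesis .
    qed
    also have "\<dots> \<longleftrightarrow> e M = pt d (e io) (e ie) (vs + vt)"
      using add_iff[OF len[rule_format] len[rule_format] len[rule_format] len[rule_format] nc] by auto
    finally show "T e \<longleftrightarrow> e M = pt d (e io) (e ie) (feval (envf g V) (FAdd s t))"
      unfolding vs_def vt_def by simp
  qed
next
  case (FMul s t)
  obtain T1 where T1: "gd d I T1" "\<forall>e g. cnd io ie iw N V e g \<longrightarrow> (T1 e \<longleftrightarrow> e (M+1) = pt d (e io) (e ie) (feval (envf g V) s))"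
    using FMul.IH(1)[of "M+1"] FMul.prems by auto
  obtain T2 where T2: "gd d I T2" "\<forall>e g. cnd io ie iw N V e g \<longrightarrow> (T2 e \<longleftrightarrow> e (M+2) = pt d (e io) (e ie) (feval (envf g V) t))"
    using FMul.IH(2)[of "M+2"] FMul.prems by auto
  define B where "B = (\<lambda>e. T1 e \<and> T2 e \<and> mulc d (e io) (e ie) (e iw) (e (M+1)) (e (M+2)) (e M))"
  have gB: "gd d I B" unfolding B_def by (intro gd_and T1(1) T2(1) gmul)
  define T where "T = (\<lambda>e. \<exists>p1. length p1 = d \<and> (\<lambda>e. \<exists>p2. length p2 = d \<and> B (e(M+2 := p2))) (e(M+1 := p1)))"
  have gT: "gd d I T" unfolding T_def by (intro gd_ex gB)
  show ?case
  proof (intro exI[of _ T] conjI gT allI impI)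
    fix e g assume c: "cnd io ie iw N V e g"
    define vs where "vs = feval (envf g V) s"
    define vt where "vt = feval (envf g V) t"
    have len: "\<forall>i. length (e i) = d" and nc: "\<not> colc d (e io) (e ie) (e iw)" using c unfolding cnd_def by auto
    have "T e \<longleftrightarrow> (\<exists>p1 p2. length p1 = d \<and> length p2 = d \<and> p1 = pt d (e io) (e ie) vs \<and>
       p2 = pt d (e io) (e ie) vt \<and> mulc d (e io) (e ie) (e iw) p1 p2 (e M))" (is "_ \<longleftrightarrow> ?thesis2")
    proof -
      have "B (e(M+1 := p1, M+2 := p2)) \<longleftrightarrow> p1 = pt d (e io) (e ie) vs \<and>
       p2 = pt d (e io) (e ie) vt \<and> mulc d (e io) (e ie) (e iw) p1 p2 (e M)"
        if "length p1 = d" "length p2 = d" for p1 p2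
      proof -
        have c2: "cnd io ie iw N V (e(M+1 := p1, M+2 := p2)) g"
          using cnd_upd[OF cnd_upd[OF c io _ that(1)] io _ that(2)] FMul.prems by auto
        have m: "M + 1 \<noteq> M" "M+2 \<noteq> M" "M+1 \<noteq> M+2" "io \<noteq> M+1" "io \<noteq> M+2" "ie \<noteq> M+1" "ie \<noteq> M+2"
          "iw \<noteq> M+1" "iw \<noteq> M+2" using io FMul.prems by auto
        show ?thesis unfolding B_def using T1(2)[rule_format, OF c2] T2(2)[rule_format, OF c2] m
          unfolding vs_def vt_def by simp
      qed
      note h = this
      have "T e \<longleftrightarrow> (\<exists>p1 p2. length p1 = d \<and> length p2 = d \<and> B (e(M+1 := p1, M+2 := p2)))"
        unfolding T_def by simp
      also have "\<dots> \<longleftrightarrow> ?thesis2"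
      proof
        assume "\<exists>p1 p2. length p1 = d \<and> length p2 = d \<and> B (e(M+1 := p1, M+2 := p2))"
        then obtain p1 p2 where "length p1 = d" "length p2 = d" "B (e(M+1 := p1, M+2 := p2))" by blast
        then show ?thesis2 using h by blast
      next
        assume ?thesis2
        then obtain p1 p2 where hh: "length p1 = d" "length p2 = d" "p1 = pt d (e io) (e ie) vs"
          "p2 = pt d (e io) (e ie) vt" "mulc d (e io) (e ie) (e iw) p1 p2 (e M)" by blast
        then have "B (e(M+1 := p1, M+2 := p2))" using h by blast
        then show "\<exists>p1 p2. length p1 = d \<and> length p2 = d \<and> B (e(M+1 := p1, M+2 := p2))" using hh by blast
      qed
      finally show ?thesis .
    qed
    also have "\<dots> \<longleftrightarrow> e M = pt d (e io) (e ie) (vs * vt)"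
      using mul_iff[OF len[rule_format] len[rule_format] len[rule_format] len[rule_format] nc] by auto
    finally show "T e \<longleftrightarrow> e M = pt d (e io) (e ie) (feval (envf g V) (FMul s t))"
      unfolding vs_def vt_def by simp
  qed
qed

end


context fgeo
begin

lemma envf_upd: "x < V \<Longrightarrow> envf (g(x := a)) V = (envf g V)(x := a)"
  by (auto simp: envf_def fun_eq_iff)

lemma form_trans:
  assumes io: "io < N" "ie < N" "iw < N"
  shows "fvars \<phi> \<le> V \<Longrightarrow> \<exists>Q. gd d I Q \<and>
     (\<forall>e g. cnd io ie iw N V e g \<longrightarrow> (Q e \<longleftrightarrow> fsat le (envf g V) \<phi>))"
proof (induction \<phi>)
  case (FEq s t)
  define M where "M = N + V"
  obtain T1 where T1: "gd d I T1" "\<forall>e g. cnd io ie iw N V e g \<longrightarrow> (T1 e \<longleftrightarrow> e M = pt d (e io) (e ie) (feval (envf g V) s))"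
    using term_trans[OF io, of s V M] FEq.prems M_def by auto
  obtain T2 where T2: "gd d I T2" "\<forall>e g. cnd io ie iw N V e g \<longrightarrow> (T2 e \<longleftrightarrow> e M = pt d (e io) (e ie) (feval (envf g V) t))"
    using term_trans[OF io, of t V M] FEq.prems M_def by auto
  define Q where "Q = (\<lambda>e. \<exists>p. length p = d \<and> (\<lambda>e. T1 e \<and> T2 e) (e(M := p)))"
  have gQ: "gd d I Q" unfolding Q_def by (intro gd_ex gd_and T1(1) T2(1))
  show ?case
  proof (intro exI[of _ Q] conjI gQ allI impI)
    fix e g assume c: "cnd io ie iw N V e g"
    have len: "\<forall>i. length (e i) = d" and nc: "\<not> colc d (e io) (e ie) (e iw)" using c unfolding cnd_def by auto
    have oe: "e io \<noteq> e ie" using ncol_ne1[OF nc] len by auto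
    have m: "io \<noteq> M" "ie \<noteq> M" using io M_def by auto
    have "Q e \<longleftrightarrow> (\<exists>p. length p = d \<and> p = pt d (e io) (e ie) (feval (envf g V) s) \<and> p = pt d (e io) (e ie) (feval (envf g V) t))"
    proof -
      have "T1 (e(M := p)) \<and> T2 (e(M := p)) \<longleftrightarrow> p = pt d (e io) (e ie) (feval (envf g V) s) \<and> p = pt d (e io) (e ie) (feval (envf g V) t)"
        if "length p = d" for p
      proof -
        have c2: "cnd io ie iw N V (e(M := p)) g" using cnd_upd[OF c io _ that] M_def by auto
        show ?thesis using T1(2)[rule_format, OF c2] T2(2)[rule_format, OF c2] m by simp
      qed
      note h = this
      have "Q e \<longleftrightarrow> (\<exists>p. length p = d \<and> T1 (e(M := p)) \<and> T2 (e(M := p)))" unfolding Q_def by simp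
      also have "\<dots> \<longleftrightarrow> (\<exists>p. length p = d \<and> p = pt d (e io) (e ie) (feval (envf g V) s) \<and> p = pt d (e io) (e ie) (feval (envf g V) t))"
        using h by blast
      finally show ?thesis .
    qed
    also have "\<dots> \<longleftrightarrow> feval (envf g V) s = feval (envf g V) t"
      using pt_inj[OF _ _ oe] len by (metis len_pt)
    finally show "Q e \<longleftrightarrow> fsat le (envf g V) (FEq s t)" by simp
  qed
next
  case (FLe s t)
  show ?case
  proof (cases le)
    case None
    then show ?thesis by (intro exI[of _ "\<lambda>e. False"]) (simp add: gd_false)
  next
    case (Some r)
    have ord: "is_field_order r" and gbw: "gd d I (\<lambda>e. bwc r d (e 0) (e 1) (e 2))" using leok[OF Some] by auto
    define M where "M = N + V"
    obtain T1 where T1: "gd d I T1" "\<forall>e g. cnd io ie iw N V e g \<longrightarrow> (T1 e \<longleftrightarrow> e M = pt d (e io) (e ie) (feval (envf g V) s))"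
      using term_trans[OF io, of s V M] FLe.prems M_def by auto
    obtain T2 where T2: "gd d I T2" "\<forall>e g. cnd io ie iw N V e g \<longrightarrow> (T2 e \<longleftrightarrow> e (M+1) = pt d (e io) (e ie) (feval (envf g V) t))"
      using term_trans[OF io, of t V "M+1"] FLe.prems M_def by auto
    define B where "B = (\<lambda>e. T1 e \<and> T2 e \<and> lec r d (e io) (e ie) (e iw) (e M) (e (M+1)))"
    have gB: "gd d I B" unfolding B_def by (intro gd_and T1(1) T2(1) gle[OF gbw])
    define Q where "Q = (\<lambda>e. \<exists>p1. length p1 = d \<and> (\<lambda>e. \<exists>p2. length p2 = d \<and> B (e(Suc M := p2))) (e(M := p1)))"
    have gQ: "gd d I Q" unfolding Q_def by (intro gd_ex gB)
    show ?thesis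
    proof (intro exI[of _ Q] conjI gQ allI impI)
      fix e g assume c: "cnd io ie iw N V e g"
      define vs where "vs = feval (envf g V) s"
      define vt where "vt = feval (envf g V) t"
      have len: "\<forall>i. length (e i) = d" and nc: "\<not> colc d (e io) (e ie) (e iw)" using c unfolding cnd_def by auto
      have h: "B (e(M := p1, Suc M := p2)) \<longleftrightarrow> p1 = pt d (e io) (e ie) vs \<and>
         p2 = pt d (e io) (e ie) vt \<and> lec r d (e io) (e ie) (e iw) p1 p2"
        if "length p1 = d" "length p2 = d" for p1 p2
      proof -
        have c2: "cnd io ie iw N V (e(M := p1, Suc M := p2)) g"
          using cnd_upd[OF cnd_upd[OF c io _ that(1)] io _ that(2)] M_def by auto
        have m: "M + 1 \<noteq> M" "io \<noteq> M" "io \<noteq> M+1" "ie \<noteq> M" "ie \<noteq> M+1"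
          "iw \<noteq> M" "iw \<noteq> M+1" using io M_def by auto
        show ?thesis unfolding B_def using T1(2)[rule_format, OF c2] T2(2)[rule_format, OF c2] m
          unfolding vs_def vt_def by simp
      qed
      have "Q e \<longleftrightarrow> (\<exists>p1 p2. length p1 = d \<and> length p2 = d \<and> B (e(M := p1, Suc M := p2)))"
        unfolding Q_def by simp
      also have "\<dots> \<longleftrightarrow> lec r d (e io) (e ie) (e iw) (pt d (e io) (e ie) vs) (pt d (e io) (e ie) vt)"
      proof
        assume "\<exists>p1 p2. length p1 = d \<and> length p2 = d \<and> B (e(M := p1, Suc M := p2))"
        then obtain p1 p2 where l1: "length p1 = d" and l2: "length p2 = d" and b: "B (e(M := p1, Suc M := p2))" by blast
        from b h[OF l1 l2] show "lec r d (e io) (e ie) (e iw) (pt d (e io) (e ie) vs) (pt d (e io) (e ie) vt)" by metis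
      next
        assume hh: "lec r d (e io) (e ie) (e iw) (pt d (e io) (e ie) vs) (pt d (e io) (e ie) vt)"
        have "B (e(M := pt d (e io) (e ie) vs, Suc M := pt d (e io) (e ie) vt))" using h hh by simp
        then show "\<exists>p1 p2. length p1 = d \<and> length p2 = d \<and> B (e(M := p1, Suc M := p2))" by (metis len_pt)
      qed
      also have "\<dots> \<longleftrightarrow> r vs vt" using le_iff[OF ord] len nc by blast
      finally show "Q e \<longleftrightarrow> fsat le (envf g V) (FLe s t)" unfolding vs_def vt_def using Some by simp
    qed
  qed
next
  case (FNot \<phi>)
  then obtain Q where Q: "gd d I Q" "\<forall>e g. cnd io ie iw N V e g \<longrightarrow> (Q e \<longleftrightarrow> fsat le (envf g V) \<phi>)" by auto
  show ?case by (rule exI[of _ "\<lambda>e. \<not> Q e"]) (use Q in \<open>auto intro: gd_not\<close>)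
next
  case (FAnd \<phi> \<psi>)
  then obtain Q1 where Q1: "gd d I Q1" "\<forall>e g. cnd io ie iw N V e g \<longrightarrow> (Q1 e \<longleftrightarrow> fsat le (envf g V) \<phi>)" by auto
  from FAnd obtain Q2 where Q2: "gd d I Q2" "\<forall>e g. cnd io ie iw N V e g \<longrightarrow> (Q2 e \<longleftrightarrow> fsat le (envf g V) \<psi>)" by auto
  show ?case by (rule exI[of _ "\<lambda>e. Q1 e \<and> Q2 e"]) (use Q1 Q2 in \<open>auto intro: gd_and\<close>)
next
  case (FEx x \<phi>)
  then have xV: "x < V" and fv: "fvars \<phi> \<le> V" by auto
  then obtain Q where Q: "gd d I Q" "\<forall>e g. cnd io ie iw N V e g \<longrightarrow> (Q e \<longleftrightarrow> fsat le (envf g V) \<phi>)"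
    using FEx.IH by auto
  define Q' where "Q' = (\<lambda>e. \<exists>p. length p = d \<and> (\<lambda>e. colc d (e io) (e (N+x)) (e ie) \<and> Q e) (e(N+x := p)))"
  have gQ: "gd d I Q'" unfolding Q'_def by (intro gd_ex gd_and gcol Q(1))
  show ?case
  proof (intro exI[of _ Q'] conjI gQ allI impI)
    fix e g assume c: "cnd io ie iw N V e g"
    have len: "\<forall>i. length (e i) = d" and nc: "\<not> colc d (e io) (e ie) (e iw)" using c unfolding cnd_def by auto
    have oe: "e io \<noteq> e ie" using ncol_ne1[OF nc] len by auto
    have m: "io \<noteq> N+x" "ie \<noteq> N+x" "iw \<noteq> N+x" using io by auto
    have "Q' e \<longleftrightarrow> (\<exists>p. length p = d \<and> colc d (e io) p (e ie) \<and> Q (e(N+x := p)))"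
      unfolding Q'_def using m by simp
    also have "\<dots> \<longleftrightarrow> (\<exists>a. Q (e(N+x := pt d (e io) (e ie) a)))"
      using colc_pt[OF _ _ _ oe] len by (metis len_pt)
    also have "\<dots> \<longleftrightarrow> (\<exists>a. fsat le ((envf g V)(x := a)) \<phi>)"
    proof -
      have "cnd io ie iw N V (e(N+x := pt d (e io) (e ie) a)) (g(x := a))" for a
        using c m xV unfolding cnd_def by auto
      then show ?thesis using Q(2) envf_upd[OF xV] by metis
    qed
    finally show "Q' e \<longleftrightarrow> fsat le (envf g V) (FEx x \<phi>)" by simp
  qed
qed

end


definition coordc :: "nat \<Rightarrow> 'a::field list \<Rightarrow> 'a list list \<Rightarrow> 'a list \<Rightarrow> 'a list list \<Rightarrow> bool" where
  "coordc d oo es x ts \<longleftrightarrow> (\<exists>ys ps. length ys = d \<and> length ps = d \<and> (\<forall>y\<in>set ys. length y = d) \<and>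
     (\<forall>p\<in>set ps. length p = d) \<and> ys!0 = ts!0 \<and>
     (\<forall>j. 1 \<le> j \<and> j < d \<longrightarrow> trc d oo (es!0) (es!j) (ts!j) (ys!j)) \<and> ps!0 = ys!0 \<and>
     (\<forall>j. 1 \<le> j \<and> j < d \<longrightarrow> plusc d oo (ps!(j-1)) (ys!j) (ps!j)) \<and> x = ps!(d-1))"

definition partial :: "nat \<Rightarrow> 'a::field list \<Rightarrow> 'a list list \<Rightarrow> 'a list \<Rightarrow> nat \<Rightarrow> 'a list" where
  "partial d oo es u k = map (\<lambda>i. oo!i + (\<Sum>j<k. u!j * (es!j!i - oo!i))) [0..<d]"

definition Aff :: "nat \<Rightarrow> 'a::field list \<Rightarrow> 'a list list \<Rightarrow> 'a list \<Rightarrow> 'a list" where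
  "Aff d oo es u = partial d oo es u d"

definition ptl :: "nat \<Rightarrow> 'a::field list \<Rightarrow> 'a list \<Rightarrow> 'a list \<Rightarrow> 'a list list" where
  "ptl d oo e u = map (\<lambda>j. pt d oo e (u!j)) [0..<length u]"

lemma len_partial[simp]: "length (partial d oo es u k) = d" by (simp add: partial_def)
lemma len_Aff[simp]: "length (Aff d oo es u) = d" by (simp add: Aff_def)
lemma len_ptl[simp]: "length (ptl d oo e u) = length u" by (simp add: ptl_def)
lemma ptl_nth[simp]: "j < length u \<Longrightarrow> ptl d oo e u ! j = pt d oo e (u!j)" by (simp add: ptl_def)

lemma coord_sound:
  assumes d1: "1 \<le> d" and len: "length oo = d" "length es = d" "\<forall>e\<in>set es. length e = d" "length u = d" "length x = d"
    and fr: "\<forall>j. 1 \<le> j \<and> j < d \<longrightarrow> \<not> colc d oo (es!0) (es!j)"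
    and C: "coordc d oo es x (ptl d oo (es!0) u)"
  shows "x = Aff d oo es u"
proof -
  obtain ys ps where ys: "length ys = d" "length ps = d" "\<forall>y\<in>set ys. length y = d" "\<forall>p\<in>set ps. length p = d"
    "ys!0 = ptl d oo (es!0) u ! 0"
    "\<forall>j. 1 \<le> j \<and> j < d \<longrightarrow> trc d oo (es!0) (es!j) (ptl d oo (es!0) u ! j) (ys!j)" "ps!0 = ys!0"
    "\<forall>j. 1 \<le> j \<and> j < d \<longrightarrow> plusc d oo (ps!(j-1)) (ys!j) (ps!j)" "x = ps!(d-1)"
    using C unfolding coordc_def apply (elim exE conjE) by (rule that) assumption+
  have esl: "j < d \<Longrightarrow> length (es!j) = d" for j using len(2,3) by auto
  have yj: "ys!j = pt d oo (es!j) (u!j)" if "j < d" for j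
  proof (cases "j = 0")
    case True then show ?thesis using ys(5) len d1 by simp
  next
    case False
    then have j: "1 \<le> j" "j < d" using that by auto
    have "trc d oo (es!0) (es!j) (pt d oo (es!0) (u!j)) (ys!j)" using ys(6) j len by simp
    moreover have l1: "length (es!0) = d" using esl d1 by simp
    moreover have l2: "length (es!j) = d" using esl j by simp
    moreover have ly: "length (ys!j) = d" using ys(1,3) j by simp
    moreover have nc: "\<not> colc d oo (es!0) (es!j)" using fr j by simp
    ultimately show ?thesis using tr_sound[OF len(1) l1 l2 ly nc] by simp
  qed
  have pj: "ps!j = partial d oo es u (Suc j)" if "j < d" for j
    using that
  proof (induction j)
    case 0
    then show ?case using ys(7) yj[of 0] len by (simp add: partial_def list_eq_iff_nth_eq)
  next
    case (Suc j)
    have pl: "plusc d oo (ps!j) (ys!Suc j) (ps!Suc j)" using ys(8) Suc.prems by (metis diff_Suc_1 le_add1 plus_1_eq_Suc)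
    have "ps!Suc j = padd d oo (ps!j) (ys!Suc j)"
      using plus_sound[OF len(1) _ _ _ pl] ys(1-4) Suc.prems by (metis Suc_lessD nth_mem)
    also have "\<dots> = partial d oo es u (Suc (Suc j))"
      using Suc yj[OF Suc.prems] len by (simp add: partial_def list_eq_iff_nth_eq algebra_simps)
    finally show ?case .
  qed
  show ?thesis using ys(9) pj[of "d-1"] d1 unfolding Aff_def by simp
qed

section \<open>The standard frame\<close>

definition unitv :: "nat \<Rightarrow> nat \<Rightarrow> 'a::field list" where
  "unitv d j = map (\<lambda>i. if i = j then 1 else 0) [0..<d]"

definition stdE :: "nat \<Rightarrow> 'a::field list list" where
  "stdE d = map (unitv d) [0..<d]"

definition zv :: "nat \<Rightarrow> 'a::field list" where
  "zv d = replicate d 0"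

lemma len_unitv[simp]: "length (unitv d j) = d" by (simp add: unitv_def)
lemma unitv_nth[simp]: "i < d \<Longrightarrow> unitv d j ! i = (if i = j then 1 else 0)" by (simp add: unitv_def)
lemma len_stdE[simp]: "length (stdE d) = d" by (simp add: stdE_def)
lemma stdE_nth[simp]: "j < d \<Longrightarrow> stdE d ! j = unitv d j" by (simp add: stdE_def)
lemma len_zv[simp]: "length (zv d) = d" by (simp add: zv_def)
lemma zv_nth[simp]: "i < d \<Longrightarrow> zv d ! i = 0" by (simp add: zv_def)
lemma stdE_len_all: "\<forall>e\<in>set (stdE d). length (e::'a::field list) = d" by (simp add: stdE_def)

lemma Aff_std: "length u = d \<Longrightarrow> Aff d (zv d) (stdE d) u = (u::'a::field list)"
proof -
  assume l: "length u = d"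
  have "(\<Sum>j<d. u!j * ((if i = j then 1 else 0) - 0)) = u!i" if "i < d" for i :: nat
  proof -
    have "(\<Sum>j<d. u!j * ((if i = j then 1 else 0) - 0)) = (\<Sum>j<d. if j = i then u!i else 0)"
      by (rule sum.cong) auto
    also have "\<dots> = u!i" using that by simp
    finally show ?thesis .
  qed
  then show ?thesis using l unfolding Aff_def partial_def by (simp add: list_eq_iff_nth_eq)
qed

lemma std_ncol: "1 \<le> j \<Longrightarrow> j < d \<Longrightarrow> \<not> colc d (zv d) (stdE d ! 0) (stdE d ! j :: 'a::field list)"
proof
  assume j: "1 \<le> j" "j < d" and c: "colc d (zv d) (stdE d ! 0) (stdE d ! j :: 'a list)"
  then consider l where "\<forall>i<d. (stdE d ! 0 :: 'a list)!i = zv d!i + l*((stdE d ! j)!i - zv d!i)" | "\<forall>i<d. (stdE d ! j :: 'a list)!i = zv d!i"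
    unfolding colc_def by blast
  then show False
  proof cases
    case 1 then have "(stdE d ! 0 :: 'a list)!0 = zv d!0 + l*((stdE d ! j)!0 - zv d!0)" using j by auto
    then show False using j by simp
  next
    case 2 then have "(stdE d ! j :: 'a list)!j = zv d!j" using j by auto
    then show False using j by simp
  qed
qed

lemma coord_std:
  assumes d1: "1 \<le> d" and lu: "length u = d"
  shows "coordc d (zv d) (stdE d) (u::'a::field list) (ptl d (zv d) (stdE d ! 0) u)"
proof -
  define ys where "ys = map (\<lambda>j. pt d (zv d) (stdE d ! j) (u!j)) [0..<d]"
  define ps where "ps = map (\<lambda>j. map (\<lambda>i. if i \<le> j then u!i else 0) [0..<d]) [0..<d]"
  have ys0: "ys!0 = ptl d (zv d) (stdE d ! 0) u ! 0" unfolding ys_def using d1 lu by simp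
  have tr: "trc d (zv d) (stdE d ! 0) (stdE d ! j) (ptl d (zv d) (stdE d ! 0) u ! j) (ys!j)" if "1 \<le> j" "j < d" for j
    using tr_complete[OF len_zv _ _ std_ncol[OF that]] that lu d1 unfolding ys_def by simp
  have ps0: "ps!0 = ys!0" unfolding ps_def ys_def using d1 by (simp add: list_eq_iff_nth_eq)
  have pl: "plusc d (zv d) (ps!(j-1)) (ys!j) (ps!j)" if j: "1 \<le> j" "j < d" for j
  proof -
    have e: "ps!j = padd d (zv d) (ps!(j-1)) (ys!j)"
      unfolding ps_def ys_def using j by (auto simp: list_eq_iff_nth_eq)
    have c: "ps!(j-1) = zv d \<or> ys!j = zv d \<or> \<not> colc d (zv d) (ps!(j-1)) (ys!j)"
    proof (cases "u!j = 0")
      case True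
      then have "ys!j = zv d" unfolding ys_def using j by (simp add: list_eq_iff_nth_eq)
      then show ?thesis by simp
    next
      case False
      show ?thesis
      proof (rule ccontr)
        assume "\<not> ?thesis"
        then have pz: "ps!(j-1) \<noteq> zv d" and cc: "colc d (zv d) (ps!(j-1)) (ys!j)" by auto
        have yj: "(ys!j)!j = u!j" unfolding ys_def using j by simp
        have pjj: "(ps!(j-1))!j = 0" unfolding ps_def using j by auto
        consider l where "\<forall>i<d. (ps!(j-1))!i = zv d!i + l*((ys!j)!i - zv d!i)" | "\<forall>i<d. (ys!j)!i = zv d!i"
          using cc unfolding colc_def by blast
        then show False
        proof cases
          case 1
          then have "0 = l * u!j" using pjj yj j by (metis diff_zero zv_nth add_0)
          then have "l = 0" using False by simp
          then have "ps!(j-1) = zv d" using 1 j unfolding ps_def by (simp add: list_eq_iff_nth_eq)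
          with pz show False by simp
        next
          case 2 then show False using yj j False by (metis zv_nth)
        qed
      qed
    qed
    have l1: "length (ps!(j-1)) = d" and l2: "length (ys!j) = d" unfolding ps_def ys_def using j by auto
    show ?thesis using plus_complete[OF len_zv l1 l2 c] e by simp
  qed
  have last: "u = ps!(d-1)" unfolding ps_def using d1 lu by (auto simp: list_eq_iff_nth_eq)
  have lys: "length ys = d" "\<forall>y\<in>set ys. length y = d" "length ps = d" "\<forall>p\<in>set ps. length p = d"
    by (auto simp: ys_def ps_def)
  show ?thesis unfolding coordc_def
    apply (rule exI[of _ ys], rule exI[of _ ps])
    using lys ys0 tr ps0 pl last by blast
qed


declare upt_Suc[simp del]

context geo
begin

lemma gcoord0:
  assumes d1: "1 \<le> d"
  shows "gd d I (\<lambda>e. coordc d (e 0) (map e [1..<d+1]) (e (d+1)) (map e [d+2..<2*d+2]))"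
proof -
  define Y where "Y = 2*d+2"
  define P where "P = 3*d+2"
  define Body where "Body = (\<lambda>e::nat \<Rightarrow> 'a list. e Y = e (d+2) \<and>
     (\<forall>j<d. 1 \<le> j \<longrightarrow> trc d (e 0) (e 1) (e (1+j)) (e (d+2+j)) (e (Y+j))) \<and> e P = e Y \<and>
     (\<forall>j<d. 1 \<le> j \<longrightarrow> plusc d (e 0) (e (P+(j-1))) (e (Y+j)) (e (P+j))) \<and> e (d+1) = e (P + (d-1)))"
  have gB: "gd d I Body" unfolding Body_def
    by (intro gd_and gd_eq gd_ball gd_imp gd_const gtr gplus)
  define G where "G = (\<lambda>e. \<exists>ys. length ys = d \<and> (\<forall>p\<in>set ys. length p = d) \<and>
     (\<lambda>e. \<exists>ps. length ps = d \<and> (\<forall>p\<in>set ps. length p = d) \<and> Body (upb e P ps)) (upb e Y ys))"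
  have gG: "gd d I G" unfolding G_def by (intro gd_exs gB)
  then show ?thesis
  proof (rule gd_cong)
    fix e :: "nat \<Rightarrow> 'a list" assume len: "\<forall>i. length (e i) = d"
    define RHS where "RHS = (\<lambda>ys ps. ys!0 = e (d+2) \<and>
       (\<forall>j. 1 \<le> j \<and> j < d \<longrightarrow> trc d (e 0) (e 1) (e (1+j)) (e (d+2+j)) (ys!j)) \<and> ps!0 = ys!0 \<and>
       (\<forall>j. 1 \<le> j \<and> j < d \<longrightarrow> plusc d (e 0) (ps!(j-1)) (ys!j) (ps!j)) \<and> e (d+1) = ps!(d-1))"
    have key: "Body (upb (upb e Y ys) P ps) \<longleftrightarrow> RHS ys ps"
      if ly: "length ys = d" and lp: "length ps = d" for ys ps
    proof -
      define e2 where "e2 = upb (upb e Y ys) P ps"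
      have eY: "e2 (Y+j) = ys!j" if "j < d" for j
        unfolding e2_def using that ly lp by (simp add: P_def Y_def upb_def)
      have eP: "e2 (P+j) = ps!j" if "j < d" for j
        unfolding e2_def using that ly lp by (simp add: P_def Y_def upb_def)
      have eL: "e2 i = e i" if "i < Y" for i
        unfolding e2_def using that ly lp by (simp add: P_def Y_def upb_def)
      have a: "e2 Y = ys!0" using eY[of 0] d1 by simp
      have b: "e2 P = ps!0" using eP[of 0] d1 by simp
      have c: "e2 (d+2) = e (d+2)" "e2 0 = e 0" "e2 1 = e 1" "e2 (d+1) = e (d+1)" using eL d1 by (auto simp: Y_def)
      have f: "e2 (1+j) = e (1+j)" "e2 (d+2+j) = e (d+2+j)" if "j < d" for j using eL that by (auto simp: Y_def)
      have g: "e2 (P + j - 1) = ps!(j-1)" if "j < d" "1 \<le> j" for j using eP[of "j-1"] that by simp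
      have h: "e2 (P+(d-1)) = ps!(d-1)" using eP[of "d-1"] d1 by simp
      show ?thesis unfolding Body_def RHS_def e2_def[symmetric] using a b c f g h eY eP by (auto simp del: One_nat_def)
    qed
    have ex: "(\<exists>ys ps. length ys = d \<and> (\<forall>p\<in>set ys. length p = d) \<and> length ps = d \<and> (\<forall>p\<in>set ps. length p = d) \<and> A ys ps) \<longleftrightarrow>
       (\<exists>ys ps. length ys = d \<and> (\<forall>p\<in>set ys. length p = d) \<and> length ps = d \<and> (\<forall>p\<in>set ps. length p = d) \<and> B ys ps)"
      if "\<And>ys ps. length ys = d \<Longrightarrow> length ps = d \<Longrightarrow> A ys ps \<longleftrightarrow> B ys ps" for A B
      using that by blast
    have m1: "map e [1..<d+1] ! j = e (1+j)" if "j < d" for j using that by simp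
    have m2: "map e [d+2..<2*d+2] ! j = e (d+2+j)" if "j < d" for j using that by simp
    have m0: "map e [1..<d+1] ! 0 = e 1" "map e [d+2..<2*d+2] ! 0 = e (d+2)" using m1[of 0] m2[of 0] d1 by auto
    have cc: "coordc d (e 0) (map e [1..<d+1]) (e (d+1)) (map e [d+2..<2*d+2]) \<longleftrightarrow>
      (\<exists>ys ps. length ys = d \<and> (\<forall>p\<in>set ys. length p = d) \<and> length ps = d \<and> (\<forall>p\<in>set ps. length p = d) \<and> RHS ys ps)"
      unfolding coordc_def RHS_def using m0 m1 m2 by (auto simp del: One_nat_def)
    have "G e \<longleftrightarrow> (\<exists>ys ps. length ys = d \<and> (\<forall>p\<in>set ys. length p = d) \<and> length ps = d \<and> (\<forall>p\<in>set ps. length p = d) \<and>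
          Body (upb (upb e Y ys) P ps))" unfolding G_def by auto
    also have "\<dots> \<longleftrightarrow> (\<exists>ys ps. length ys = d \<and> (\<forall>p\<in>set ys. length p = d) \<and> length ps = d \<and> (\<forall>p\<in>set ps. length p = d) \<and> RHS ys ps)"
      by (rule ex) (rule key)
    also have "\<dots> \<longleftrightarrow> coordc d (e 0) (map e [1..<d+1]) (e (d+1)) (map e [d+2..<2*d+2])" using cc by simp
    finally show "G e = coordc d (e 0) (map e [1..<d+1]) (e (d+1)) (map e [d+2..<2*d+2])" .
  qed
qed

lemma gcoord:
  assumes d1: "1 \<le> d" and l: "length EV = d" "length TV = d"
  shows "gd d I (\<lambda>e. coordc d (e a) (map e EV) (e x) (map e TV))"
proof -
  have "gdl d I (2*d+2) (\<lambda>xs. coordc d (xs!0) (take d (drop 1 xs)) (xs!(d+1)) (take d (drop (d+2) xs)))"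
    unfolding gdl_def using gcoord0[OF d1]
  proof (rule gd_cong)
    fix e :: "nat \<Rightarrow> 'a list"
    have "take d (drop 1 (map e [0..<2*d+2])) = map e [1..<d+1]" by (simp add: list_eq_iff_nth_eq del: upt_Suc)
    moreover have "take d (drop (d+2) (map e [0..<2*d+2])) = map e [d+2..<2*d+2]" by (simp add: list_eq_iff_nth_eq del: upt_Suc)
    ultimately show "coordc d (e 0) (map e [1..<d+1]) (e (d+1)) (map e [d+2..<2*d+2]) =
      coordc d (map e [0..<2*d+2] ! 0) (take d (drop 1 (map e [0..<2*d+2]))) (map e [0..<2*d+2] ! (d+1))
        (take d (drop (d+2) (map e [0..<2*d+2])))" by (simp add: nth_append)
  qed
  from gdl_inst[OF this, of "a # EV @ x # TV"] l show ?thesis by (simp add: nth_append)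
qed

end


declare upt_Suc[simp del]

lemma chunk_concat:
  "(\<forall>x\<in>set t. length x = d) \<Longrightarrow> i < length t \<Longrightarrow> take d (drop (i*d) (concat t)) = t!i"
proof (induction t arbitrary: i)
  case (Cons x t)
  show ?case
  proof (cases i)
    case 0 then show ?thesis using Cons by simp
  next
    case (Suc i')
    have "drop (i*d) (concat (x#t)) = drop (i'*d) (concat t)"
      using Cons.prems Suc by (simp add: add.commute)
    then show ?thesis using Cons Suc by simp
  qed
qed simp

lemma length_concat_d: "(\<forall>x\<in>set t. length x = d) \<Longrightarrow> length (concat t) = d * length t"
  by (induction t) auto

lemma tuples_iff: "t \<in> tuples d m \<longleftrightarrow> length t = m \<and> (\<forall>x\<in>set t. length x = d)"
  by (auto simp: tuples_def pts_def)

definition goodc :: "nat \<Rightarrow> ('s \<Rightarrow> nat) \<Rightarrow> ('s \<Rightarrow> 'a::field list list \<Rightarrow> bool) \<Rightarrow> 'a list \<Rightarrow> 'a list list \<Rightarrow> bool" where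
  "goodc d ar I oo es \<longleftrightarrow> length oo = d \<and> length es = d \<and> (\<forall>x\<in>set es. length x = d) \<and>
   (\<forall>j. 1 \<le> j \<and> j < d \<longrightarrow> \<not> colc d oo (es!0) (es!j)) \<and>
   (\<forall>u. length u = d \<longrightarrow> (\<exists>x. length x = d \<and> coordc d oo es x (ptl d oo (es!0) u))) \<and>
   (\<forall>x. length x = d \<longrightarrow> (\<exists>u. length u = d \<and> coordc d oo es x (ptl d oo (es!0) u))) \<and>
   (\<forall>x u u'. length x = d \<longrightarrow> length u = d \<longrightarrow> length u' = d \<longrightarrow> coordc d oo es x (ptl d oo (es!0) u) \<longrightarrow>
       coordc d oo es x (ptl d oo (es!0) u') \<longrightarrow> u = u') \<and>
   (\<forall>s ys. length ys = ar s \<longrightarrow> (\<forall>y\<in>set ys. length y = d) \<longrightarrow> (I s ys \<longleftrightarrow>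
      (\<exists>u. length u = d * ar s \<and> (\<forall>i<ar s. coordc d oo es (ys!i) (ptl d oo (es!0) (take d (drop (i*d) u)))) \<and>
           u \<in> flatten {t. I s t})))"

definition Rsem :: "nat \<Rightarrow> ('s \<Rightarrow> nat) \<Rightarrow> ('s \<Rightarrow> 'a::field list list \<Rightarrow> bool) \<Rightarrow> nat \<Rightarrow> 'a list list set \<Rightarrow> 'a list list \<Rightarrow> bool" where
  "Rsem d ar I n R xs \<longleftrightarrow> (\<exists>oo es. goodc d ar I oo es \<and>
     (\<exists>u. length u = d * n \<and> (\<forall>i<n. coordc d oo es (xs!i) (ptl d oo (es!0) (take d (drop (i*d) u)))) \<and> u \<in> flatten R))"

definition Lin :: "nat \<Rightarrow> 'a::field list \<Rightarrow> 'a list list \<Rightarrow> 'a list \<Rightarrow> 'a list" where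
  "Lin d oo es u = map (\<lambda>i. \<Sum>j<d. u!j * (es!j!i - oo!i)) [0..<d]"

lemma Aff_Lin: "length oo = d \<Longrightarrow> Aff d oo es u = vadd (Lin d oo es u) oo"
  by (simp add: Aff_def partial_def Lin_def list_eq_iff_nth_eq vadd_nth add.commute)

lemma linear_Lin: "linear_on d (Lin d oo es)"
proof -
  have "Lin d oo es (vadd p q) = vadd (Lin d oo es p) (Lin d oo es q)" if "p \<in> pts d" "q \<in> pts d" for p q
    using that by (simp add: Lin_def list_eq_iff_nth_eq vadd_nth pts_def distrib_right sum.distrib)
  moreover have "Lin d oo es (smul c p) = smul c (Lin d oo es p)" if "p \<in> pts d" for c p
    using that by (simp add: Lin_def list_eq_iff_nth_eq smul_nth pts_def sum_distrib_left mult.assoc)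
  ultimately show ?thesis unfolding linear_on_def by blast
qed

locale sem =
  fixes d :: nat and ar :: "'s \<Rightarrow> nat" and I :: "'s \<Rightarrow> 'a::field list list \<Rightarrow> bool"
  assumes wf: "wf_struct d ar I" and d2: "2 \<le> d"
begin

lemma Is_len: "I s t \<Longrightarrow> length t = ar s \<and> (\<forall>x\<in>set t. length x = d)"
  using wf unfolding wf_struct_def tuples_def pts_def by auto

lemma flatten_Is: "u \<in> flatten {t. I s t} \<longleftrightarrow> (\<exists>t. I s t \<and> u = concat t)"
  unfolding flatten_def by auto

lemma good_props:
  assumes G: "goodc d ar I oo es"
  shows "bij_betw (Aff d oo es) (pts d) (pts d)"
    and "\<And>x u. length x = d \<Longrightarrow> length u = d \<Longrightarrow> coordc d oo es x (ptl d oo (es!0) u) \<longleftrightarrow> x = Aff d oo es u"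
    and "automorphism d I (Aff d oo es)"
    and "affine_transf d (Aff d oo es)"
proof -
  have lo: "length oo = d" and les: "length es = d" "\<forall>x\<in>set es. length x = d"
    and nc: "\<forall>j. 1 \<le> j \<and> j < d \<longrightarrow> \<not> colc d oo (es!0) (es!j)"
    and tot: "\<forall>u. length u = d \<longrightarrow> (\<exists>x. length x = d \<and> coordc d oo es x (ptl d oo (es!0) u))"
    and sur: "\<forall>x. length x = d \<longrightarrow> (\<exists>u. length u = d \<and> coordc d oo es x (ptl d oo (es!0) u))"
    and uni: "\<forall>x u u'. length x = d \<longrightarrow> length u = d \<longrightarrow> length u' = d \<longrightarrow> coordc d oo es x (ptl d oo (es!0) u) \<longrightarrow>
       coordc d oo es x (ptl d oo (es!0) u') \<longrightarrow> u = u'"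
    and rel: "\<forall>s ys. length ys = ar s \<longrightarrow> (\<forall>y\<in>set ys. length y = d) \<longrightarrow> (I s ys \<longleftrightarrow>
      (\<exists>u. length u = d * ar s \<and> (\<forall>i<ar s. coordc d oo es (ys!i) (ptl d oo (es!0) (take d (drop (i*d) u)))) \<and>
           u \<in> flatten {t. I s t}))"
    using G unfolding goodc_def by blast+
  have d1: "1 \<le> d" using d2 by simp
  have snd: "x = Aff d oo es u" if "length x = d" "length u = d" "coordc d oo es x (ptl d oo (es!0) u)" for x u
    using coord_sound[OF d1 lo les _ _ nc] that by simp
  show cA: "\<And>x u. length x = d \<Longrightarrow> length u = d \<Longrightarrow> coordc d oo es x (ptl d oo (es!0) u) \<longleftrightarrow> x = Aff d oo es u"
  proof
    fix x u :: "'a list" assume "length x = d" "length u = d" "coordc d oo es x (ptl d oo (es!0) u)"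
    then show "x = Aff d oo es u" using snd by blast
  next
    fix x u :: "'a list" assume l: "length x = d" "length u = d" and xe: "x = Aff d oo es u"
    obtain y where "length y = d" "coordc d oo es y (ptl d oo (es!0) u)" using tot l by blast
    moreover then have "y = Aff d oo es u" using snd l by blast
    ultimately show "coordc d oo es x (ptl d oo (es!0) u)" using xe by simp
  qed
  have inj: "u = u'" if "length u = d" "length u' = d" "Aff d oo es u = Aff d oo es u'" for u u'
  proof -
    have "coordc d oo es (Aff d oo es u) (ptl d oo (es!0) u)" "coordc d oo es (Aff d oo es u) (ptl d oo (es!0) u')"
      using cA that by auto
    then show ?thesis using uni that by (metis len_Aff)
  qed
  have surj: "\<exists>u. length u = d \<and> x = Aff d oo es u" if "length x = d" for x
    using sur cA that by blast
  show bij: "bij_betw (Aff d oo es) (pts d) (pts d)"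
    unfolding bij_betw_def inj_on_def pts_def using inj surj by (auto simp: image_def)
  show "automorphism d I (Aff d oo es)"
    unfolding automorphism_def
  proof (intro conjI bij allI impI)
    fix s and t :: "'a list list" assume st: "set t \<subseteq> pts d"
    then have lt: "\<forall>x\<in>set t. length x = d" by (auto simp: pts_def)
    show "I s t \<longleftrightarrow> I s (map (Aff d oo es) t)"
    proof (cases "length t = ar s")
      case False then show ?thesis using Is_len by force
    next
      case True
      have lm: "\<forall>y\<in>set (map (Aff d oo es) t). length y = d" by simp
      have "I s (map (Aff d oo es) t) \<longleftrightarrow> (\<exists>u. length u = d * ar s \<and>
           (\<forall>i<ar s. coordc d oo es (Aff d oo es (t!i)) (ptl d oo (es!0) (take d (drop (i*d) u)))) \<and>
           u \<in> flatten {t. I s t})"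
        using rel True lm by simp
      also have "\<dots> \<longleftrightarrow> (\<exists>u. length u = d * ar s \<and> (\<forall>i<ar s. take d (drop (i*d) u) = t!i) \<and> u \<in> flatten {t. I s t})"
      proof -
        have "coordc d oo es (Aff d oo es (t!i)) (ptl d oo (es!0) (take d (drop (i*d) u))) \<longleftrightarrow> take d (drop (i*d) u) = t!i"
          if "length u = d * ar s" "i < ar s" for u i
        proof -
          have lc: "length (take d (drop (i*d) u)) = d"
          proof -
            have "i*d + d \<le> d * ar s" using that(2) by (metis Suc_leI mult.commute mult_Suc_right add.commute mult_le_mono2)
            then show ?thesis using that(1) by simp
          qed
          have lti: "length (t!i) = d" using lt True that(2) by simp
          show ?thesis using cA[OF _ lc] inj[OF lc lti] by auto
        qed
        then show ?thesis by (metis (no_types, lifting))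
      qed
      also have "\<dots> \<longleftrightarrow> I s t"
      proof
        assume "\<exists>u. length u = d * ar s \<and> (\<forall>i<ar s. take d (drop (i*d) u) = t!i) \<and> u \<in> flatten {t. I s t}"
        then obtain u t' where u: "\<forall>i<ar s. take d (drop (i*d) u) = t!i" "I s t'" "u = concat t'"
          using flatten_Is by blast
        have l': "length t' = ar s" "\<forall>x\<in>set t'. length x = d" using Is_len[OF u(2)] by auto
        have "t' = t"
        proof (rule nth_equalityI)
          show "length t' = length t" using l' True by simp
          fix i assume "i < length t'"
          then show "t'!i = t!i" using u(1,3) chunk_concat[OF l'(2)] l' by metis
        qed
        then show "I s t" using u(2) by simp
      next
        assume "I s t"
        then show "\<exists>u. length u = d * ar s \<and> (\<forall>i<ar s. take d (drop (i*d) u) = t!i) \<and> u \<in> flatten {t. I s t}"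
          using chunk_concat[OF lt] length_concat_d[OF lt] True flatten_Is by auto
      qed
      finally show ?thesis by simp
    qed
  qed
  show "affine_transf d (Aff d oo es)"
    unfolding affine_transf_def
  proof (intro exI conjI)
    show "linear_on d (Lin d oo es)" by (rule linear_Lin)
    show "oo \<in> pts d" using lo by (simp add: pts_def)
    show "\<forall>p\<in>pts d. Aff d oo es p = vadd (Lin d oo es p) oo" using Aff_Lin[OF lo] by blast
    have ll: "length (Lin d oo es u) = d" for u by (simp add: Lin_def)
    have vi: "vadd (Lin d oo es u) oo = Aff d oo es u" for u using Aff_Lin[OF lo] by simp
    show "bij_betw (Lin d oo es) (pts d) (pts d)"
      unfolding bij_betw_def inj_on_def
    proof (intro conjI ballI impI)
      fix p q assume "p \<in> pts d" "q \<in> pts d" "Lin d oo es p = Lin d oo es q"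
      then show "p = q" using inj vi by (metis mem_Collect_eq pts_def)
    next
      show "Lin d oo es ` pts d = pts d"
      proof
        show "Lin d oo es ` pts d \<subseteq> pts d" using ll by (auto simp: pts_def)
        show "pts d \<subseteq> Lin d oo es ` pts d"
        proof
          fix y :: "'a list" assume y: "y \<in> pts d"
          have "length (vadd y oo) = d" using y lo by (simp add: pts_def)
          then obtain u where u: "length u = d" "vadd y oo = Aff d oo es u" using surj by blast
          have "Lin d oo es u = y"
          proof -
            have "vadd (Lin d oo es u) oo = vadd y oo" using u vi by simp
            then show ?thesis using y lo ll by (auto simp: pts_def list_eq_iff_nth_eq vadd_nth)
          qed
          then show "y \<in> Lin d oo es ` pts d" using u by (auto simp: pts_def)
        qed
      qed
    qed
  qed
qed

end


declare upt_Suc[simp del]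

lemma chunk_len: "length u = d * m \<Longrightarrow> i < m \<Longrightarrow> length (take d (drop (i*d) u)) = d"
proof -
  assume "length u = d * m" "i < m"
  moreover have "i*d + d \<le> d * m" using \<open>i < m\<close> by (metis Suc_leI mult.commute mult_Suc_right add.commute mult_le_mono2)
  ultimately show ?thesis by simp
qed

context sem
begin

lemma coord_std_iff:
  assumes "length x = d" "length u = d"
  shows "coordc d (zv d) (stdE d) x (ptl d (zv d) (stdE d ! 0) u) \<longleftrightarrow> x = (u::'a list)"
proof
  have d1: "1 \<le> d" using d2 by simp
  assume "coordc d (zv d) (stdE d) x (ptl d (zv d) (stdE d ! 0) u)"
  then have "x = Aff d (zv d) (stdE d) u"
    using coord_sound[OF d1 len_zv len_stdE stdE_len_all assms(2,1)] std_ncol by blast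
  then show "x = u" using Aff_std[OF assms(2)] by simp
next
  have d1: "1 \<le> d" using d2 by simp
  assume "x = u" then show "coordc d (zv d) (stdE d) x (ptl d (zv d) (stdE d ! 0) u)"
    using coord_std[OF d1 assms(2)] by simp
qed

lemma good_std: "goodc d ar I (zv d) (stdE d :: 'a list list)"
  unfolding goodc_def
proof (intro conjI allI impI)
  show "length (zv d :: 'a list) = d" by simp
  show "length (stdE d :: 'a list list) = d" by simp
  show "\<forall>x\<in>set (stdE d :: 'a list list). length x = d" by (rule stdE_len_all)
  show "\<not> colc d (zv d) (stdE d ! 0) (stdE d ! j :: 'a list)" if "1 \<le> j \<and> j < d" for j
    using std_ncol that by blast
  show "\<exists>x. length x = d \<and> coordc d (zv d) (stdE d) x (ptl d (zv d) (stdE d ! 0) u)" if "length u = d" for u :: "'a list"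
    using coord_std_iff that by blast
  show "\<exists>u. length u = d \<and> coordc d (zv d) (stdE d) x (ptl d (zv d) (stdE d ! 0) u)" if "length x = d" for x :: "'a list"
    using coord_std_iff that by blast
  show "u = u'" if "length x = d" "length u = d" "length u' = d"
    "coordc d (zv d) (stdE d) x (ptl d (zv d) (stdE d ! 0) u)"
    "coordc d (zv d) (stdE d) x (ptl d (zv d) (stdE d ! 0) u')" for x u u' :: "'a list"
    using coord_std_iff that by blast
  fix s and ys :: "'a list list" assume ly: "length ys = ar s" and lys: "\<forall>y\<in>set ys. length y = d"
  have step: "(\<forall>i<ar s. coordc d (zv d) (stdE d) (ys!i) (ptl d (zv d) (stdE d ! 0) (take d (drop (i*d) u)))) \<longleftrightarrow>
      (\<forall>i<ar s. take d (drop (i*d) u) = ys!i)" if "length u = d * ar s" for u :: "'a list"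
    using coord_std_iff[OF _ chunk_len[OF that]] ly lys by (metis nth_mem)
  show "I s ys \<longleftrightarrow> (\<exists>u. length u = d * ar s \<and>
     (\<forall>i<ar s. coordc d (zv d) (stdE d) (ys!i) (ptl d (zv d) (stdE d ! 0) (take d (drop (i*d) u)))) \<and>
     u \<in> flatten {t. I s t})" (is "_ \<longleftrightarrow> ?R")
  proof
    assume "I s ys"
    then show ?R using step chunk_concat[OF lys] length_concat_d[OF lys] ly flatten_Is by (metis (no_types, lifting))
  next
    assume ?R
    then obtain u t where u: "length u = d * ar s" "\<forall>i<ar s. take d (drop (i*d) u) = ys!i" "I s t" "u = concat t"
      using step flatten_Is by blast
    have l': "length t = ar s" "\<forall>x\<in>set t. length x = d" using Is_len[OF u(3)] by auto
    have "t = ys"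
    proof (rule nth_equalityI)
      show "length t = length ys" using l' ly by simp
      fix i assume "i < length t"
      then show "t!i = ys!i" using u(2,4) chunk_concat[OF l'(2)] l' by metis
    qed
    then show "I s ys" using u(3) by simp
  qed
qed

lemma Rsem_iff:
  assumes RT: "R \<subseteq> tuples d n"
    and clos: "\<forall>f. automorphism d I f \<and> affine_transf d f \<longrightarrow> closed_under R f"
    and lx: "length xs = n" "\<forall>x\<in>set xs. length x = d"
  shows "Rsem d ar I n R xs \<longleftrightarrow> xs \<in> R"
proof
  assume xR: "xs \<in> R"
  have c: "\<forall>i<n. coordc d (zv d) (stdE d) (xs!i) (ptl d (zv d) (stdE d ! 0) (take d (drop (i*d) (concat xs))))"
    using coord_std_iff chunk_concat[OF lx(2)] lx by (metis nth_mem)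
  have l: "length (concat xs) = d * n" using length_concat_d[OF lx(2)] lx by simp
  have f: "concat xs \<in> flatten R" using xR unfolding flatten_def by simp
  show "Rsem d ar I n R xs"
    unfolding Rsem_def using good_std c l f by blast
next
  assume "Rsem d ar I n R xs"
  then obtain oo es u where G: "goodc d ar I oo es" and u: "length u = d * n"
    "\<forall>i<n. coordc d oo es (xs!i) (ptl d oo (es!0) (take d (drop (i*d) u)))" "u \<in> flatten R"
    unfolding Rsem_def by blast
  obtain t where t: "t \<in> R" "u = concat t" using u(3) unfolding flatten_def by blast
  have lt: "length t = n" "\<forall>x\<in>set t. length x = d" using t(1) RT by (auto simp: tuples_iff)
  have "xs = map (Aff d oo es) t"
  proof (rule nth_equalityI)
    show "length xs = length (map (Aff d oo es) t)" using lx lt by simp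
    fix i assume i: "i < length xs"
    have ch: "take d (drop (i*d) u) = t!i" using chunk_concat[OF lt(2)] t(2) lt i lx by simp
    have "coordc d oo es (xs!i) (ptl d oo (es!0) (t!i))" using u(2) ch i lx by metis
    then have "xs!i = Aff d oo es (t!i)" using good_props(2)[OF G] lx lt i by (metis nth_mem)
    then show "xs!i = map (Aff d oo es) t ! i" using i lx lt by simp
  qed
  moreover have "closed_under R (Aff d oo es)" using clos good_props(3,4)[OF G] by blast
  ultimately show "xs \<in> R" using t(1) unfolding closed_under_def by blast
qed

end


declare upt_Suc[simp del]

lemma onL_ptl:
  assumes l: "length oo = d" "length e1 = d" "oo \<noteq> e1" "\<forall>t\<in>set ts. length t = d"
  shows "(\<forall>j<length ts. colc d oo (ts!j) e1) \<longleftrightarrow> (\<exists>u. length u = length ts \<and> ts = ptl d oo e1 u)"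
proof
  assume h: "\<forall>j<length ts. colc d oo (ts!j) e1"
  have "\<forall>j<length ts. \<exists>a. ts!j = pt d oo e1 a"
  proof (intro allI impI)
    fix j assume j: "j < length ts"
    have "length (ts!j) = d" using l(4) j by simp
    then show "\<exists>a. ts!j = pt d oo e1 a" using h j colc_pt[OF l(1,2) _ l(3)] by blast
  qed
  then obtain g where g: "\<forall>j<length ts. ts!j = pt d oo e1 (g j)" by metis
  show "\<exists>u. length u = length ts \<and> ts = ptl d oo e1 u"
  proof (rule exI[of _ "map g [0..<length ts]"], intro conjI)
    show "ts = ptl d oo e1 (map g [0..<length ts])"
    proof (rule nth_equalityI)
      fix j assume "j < length ts"
      then show "ts!j = ptl d oo e1 (map g [0..<length ts]) ! j" using g by (simp only: ptl_nth length_map length_upt nth_map nth_upt diff_zero add_0)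
    qed simp
  qed simp
next
  assume "\<exists>u. length u = length ts \<and> ts = ptl d oo e1 u"
  then obtain u where "length u = length ts" "ts = ptl d oo e1 u" by blast
  then show "\<forall>j<length ts. colc d oo (ts!j) e1" unfolding colc_def by (auto intro!: exI)
qed

lemma ptl_set_len[simp]: "p \<in> set (ptl d oo e u) \<Longrightarrow> length p = d"
  by (auto simp: ptl_def)

lemma colc_pt1: "colc d oo (pt d oo e a) e"
  unfolding colc_def by (intro disjI1 exI[of _ a]) simp

lemma ptl_inj:
  assumes l: "length oo = d" "length e1 = d" "oo \<noteq> e1" "length u = length u'"
  shows "ptl d oo e1 u = ptl d oo e1 u' \<longleftrightarrow> u = u'"
proof
  assume h: "ptl d oo e1 u = ptl d oo e1 u'"
  show "u = u'"
  proof (rule nth_equalityI)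
    show "length u = length u'" using l by simp
    fix i assume i: "i < length u"
    have "ptl d oo e1 u ! i = ptl d oo e1 u' ! i" using h by simp
    then have "pt d oo e1 (u!i) = pt d oo e1 (u'!i)" using i l(4) by simp
    then show "u!i = u'!i" using pt_inj[OF l(1-3)] by blast
  qed
qed simp

lemma upb_map_low: "b \<le> N \<Longrightarrow> map (upb e N ts) [a..<b] = map e [a..<b]"
  by (rule map_cong) auto
lemma upb_map_block: "map (upb e N ts) [N..<N + length ts] = ts"
  by (rule nth_equalityI) (simp_all add: add.commute)
lemma upd_map_out: "x \<notin> set is \<Longrightarrow> map (e(x := p)) is = map e is"
  by (induction "is") auto

definition geoc :: "nat \<Rightarrow> 'a::field list \<Rightarrow> 'a list list \<Rightarrow> bool" where
  "geoc d oo es \<longleftrightarrow>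
   (\<forall>j. 1 \<le> j \<and> j < d \<longrightarrow> \<not> colc d oo (es!0) (es!j)) \<and>
   (\<forall>u. length u = d \<longrightarrow> (\<exists>x. length x = d \<and> coordc d oo es x (ptl d oo (es!0) u))) \<and>
   (\<forall>x. length x = d \<longrightarrow> (\<exists>u. length u = d \<and> coordc d oo es x (ptl d oo (es!0) u))) \<and>
   (\<forall>x u u'. length x = d \<longrightarrow> length u = d \<longrightarrow> length u' = d \<longrightarrow> coordc d oo es x (ptl d oo (es!0) u) \<longrightarrow>
       coordc d oo es x (ptl d oo (es!0) u') \<longrightarrow> u = u')"

context geo
begin

lemma ggeo:
  assumes d2: "2 \<le> d"
  shows "gd d I (\<lambda>e. geoc d (e 0) (map e [1..<d+1]))"
proof -
  define K where "K = d + 1"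
  have d1: "1 \<le> d" using d2 by simp
  define ES where "ES = [1..<d+1]"
  have lES: "length ES = d" unfolding ES_def by simp
  have ES_nth: "map e ES ! j = e (1+j)" if "j < d" for j and e :: "nat \<Rightarrow> 'a list" unfolding ES_def using that by simp
  have ES0: "map e ES ! 0 = e 1" for e :: "nat \<Rightarrow> 'a list" using ES_nth[of 0 e] d1 by simp
  have ESK: "\<forall>i\<in>set ES. i < K" unfolding ES_def K_def by auto
  define NCg where "NCg = (\<lambda>e::nat \<Rightarrow> 'a list. \<forall>j<d. 1 \<le> j \<longrightarrow> \<not> colc d (e 0) (e 1) (e (1+j)))"
  have gNC: "gd d I NCg" unfolding NCg_def by (intro gd_ball gd_imp gd_const gd_not gcol)
  define TOTg where "TOTg = (\<lambda>e::nat \<Rightarrow> 'a list. \<forall>ts. length ts = d \<and> (\<forall>p\<in>set ts. length p = d) \<longrightarrow>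
     (\<lambda>e. (\<forall>j<d. colc d (e 0) (e (K+j)) (e 1)) \<longrightarrow> (\<exists>x. length x = d \<and>
        (\<lambda>e. coordc d (e 0) (map e ES) (e (K+d)) (map e [K..<K+d])) (e(K+d := x)))) (upb e K ts))"
  have gTOT: "gd d I TOTg" unfolding TOTg_def
    by (intro gd_alls gd_imp gd_ball gcol gd_ex gcoord d1 lES) simp
  define Bs where "Bs = (\<lambda>e::nat \<Rightarrow> 'a list. (\<forall>j<d. colc d (e 0) (e (K+1+j)) (e 1)) \<and> coordc d (e 0) (map e ES) (e K) (map e [K+1..<K+1+d]))"
  define SURg where "SURg = (\<lambda>e::nat \<Rightarrow> 'a list. \<forall>x. length x = d \<longrightarrow> (\<lambda>e. \<exists>ts. length ts = d \<and> (\<forall>p\<in>set ts. length p = d) \<and>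
     Bs (upb e (K+1) ts)) (e(K := x)))"
  have gSUR: "gd d I SURg" unfolding SURg_def Bs_def
    by (intro gd_all gd_exs gd_and gd_ball gcol gcoord d1 lES) simp
  define Bu where "Bu = (\<lambda>e::nat \<Rightarrow> 'a list. (\<forall>j<d. colc d (e 0) (e (K+1+j)) (e 1)) \<and> (\<forall>j<d. colc d (e 0) (e (K+1+d+j)) (e 1)) \<and>
          coordc d (e 0) (map e ES) (e K) (map e [K+1..<K+1+d]) \<and> coordc d (e 0) (map e ES) (e K) (map e [K+1+d..<K+1+d+d])
          \<longrightarrow> (\<forall>j<d. e (K+1+j) = e (K+1+d+j)))"
  define UNIg where "UNIg = (\<lambda>e::nat \<Rightarrow> 'a list. \<forall>x. length x = d \<longrightarrow> (\<lambda>e. \<forall>ts. length ts = d \<and> (\<forall>p\<in>set ts. length p = d) \<longrightarrow>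
     (\<lambda>e. \<forall>ts'. length ts' = d \<and> (\<forall>p\<in>set ts'. length p = d) \<longrightarrow>
       Bu (upb e (K+1+d) ts')) (upb e (K+1) ts)) (e(K := x)))"
  have gUNI: "gd d I UNIg" unfolding UNIg_def Bu_def
    by (intro gd_all gd_alls gd_imp gd_and gd_ball gcol gcoord gd_eq d1 lES) simp_all
  have "gd d I (\<lambda>e. NCg e \<and> TOTg e \<and> SURg e \<and> UNIg e)" by (intro gd_and gNC gTOT gSUR gUNI)
  then show ?thesis
  proof (rule gd_cong)
    fix e :: "nat \<Rightarrow> 'a list" assume len: "\<forall>i. length (e i) = d"
    define oo where "oo = e 0"
    define es where "es = map e ES"
    have les: "length es = d" "\<forall>x\<in>set es. length x = d" unfolding es_def using lES len by auto
    have lo: "length oo = d" unfolding oo_def using len by simp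
    have es0: "es!0 = e 1" unfolding es_def using ES0 by simp
    have esj: "es!j = e (1+j)" if "j < d" for j unfolding es_def using ES_nth that by simp
    have NC: "NCg e \<longleftrightarrow> (\<forall>j. 1 \<le> j \<and> j < d \<longrightarrow> \<not> colc d oo (es!0) (es!j))"
      unfolding NCg_def oo_def using es0 esj by auto
    show "(NCg e \<and> TOTg e \<and> SURg e \<and> UNIg e) = geoc d (e 0) (map e [1..<d+1])"
    proof (cases "NCg e")
      case False
      have gg: "geoc d (e 0) (map e [1..<d+1]) = geoc d oo es" by (simp add: oo_def es_def ES_def)
      show ?thesis using False NC gg unfolding geoc_def by blast
    next
      case True
      then have nc1: "\<not> colc d oo (es!0) (es!1)" using NC d2 by auto
      have oe: "oo \<noteq> e 1" using ncol_ne1[OF nc1 lo] len es0 by simp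
      have le1: "length (e 1) = d" using len by simp
      note oL = onL_ptl[OF lo le1 oe]
      have TOT: "TOTg e \<longleftrightarrow> (\<forall>u. length u = d \<longrightarrow> (\<exists>x. length x = d \<and> coordc d oo es x (ptl d oo (es!0) u)))"
      proof -
        have ev: "(\<lambda>e. (\<forall>j<d. colc d (e 0) (e (K+j)) (e 1)) \<longrightarrow> (\<exists>x. length x = d \<and>
          (\<lambda>e. coordc d (e 0) (map e ES) (e (K+d)) (map e [K..<K+d])) (e(K+d := x)))) (upb e K ts) \<longleftrightarrow>
          ((\<forall>j<d. colc d oo (ts!j) (e 1)) \<longrightarrow> (\<exists>x. length x = d \<and> coordc d oo es x ts))"
          if "length ts = d" for ts
        proof -
          have a: "((upb e K ts)(K + d := x)) 0 = oo" "upb e K ts 0 = oo" "upb e K ts 1 = e 1" for x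
            unfolding oo_def K_def using d1 by auto
          have b: "map ((upb e K ts)(K + d := x)) ES = es" for x
            unfolding es_def using ESK upd_map_out[of "K+d" ES] upb_map_low[of K K] ES_def K_def
            by (simp add: list_eq_iff_nth_eq upb_def)
          have c: "map ((upb e K ts)(K + d := x)) [K..<K+d] = ts" for x
            using upd_map_out[of "K+d" "[K..<K+d]"] upb_map_block[of e K ts] that by simp
          have dd: "upb e K ts (K+j) = ts!j" if "j < d" for j using that \<open>length ts = d\<close> by simp
          show ?thesis using a b c dd by simp
        qed
        have "TOTg e \<longleftrightarrow> (\<forall>ts. length ts = d \<and> (\<forall>p\<in>set ts. length p = d) \<longrightarrow>
            ((\<forall>j<d. colc d oo (ts!j) (e 1)) \<longrightarrow> (\<exists>x. length x = d \<and> coordc d oo es x ts)))"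
          unfolding TOTg_def using ev by auto
        also have "\<dots> \<longleftrightarrow> (\<forall>u. length u = d \<longrightarrow> (\<exists>x. length x = d \<and> coordc d oo es x (ptl d oo (es!0) u)))"
        proof
          assume h: "\<forall>ts. length ts = d \<and> (\<forall>p\<in>set ts. length p = d) \<longrightarrow>
            ((\<forall>j<d. colc d oo (ts!j) (e 1)) \<longrightarrow> (\<exists>x. length x = d \<and> coordc d oo es x ts))"
          show "\<forall>u. length u = d \<longrightarrow> (\<exists>x. length x = d \<and> coordc d oo es x (ptl d oo (es!0) u))"
          proof (intro allI impI)
            fix u :: "'a list" assume lu: "length u = d"
            have "\<forall>j<d. colc d oo (ptl d oo (e 1) u ! j) (e 1)" using lu by (auto intro!: colc_pt1)
            then show "\<exists>x. length x = d \<and> coordc d oo es x (ptl d oo (es!0) u)" using h[rule_format, of "ptl d oo (e 1) u"] lu es0 by auto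
          qed
        next
          assume h: "\<forall>u. length u = d \<longrightarrow> (\<exists>x. length x = d \<and> coordc d oo es x (ptl d oo (es!0) u))"
          show "\<forall>ts. length ts = d \<and> (\<forall>p\<in>set ts. length p = d) \<longrightarrow>
            ((\<forall>j<d. colc d oo (ts!j) (e 1)) \<longrightarrow> (\<exists>x. length x = d \<and> coordc d oo es x ts))"
          proof (intro allI impI)
            fix ts :: "'a list list" assume lt: "length ts = d \<and> (\<forall>p\<in>set ts. length p = d)" and c: "\<forall>j<d. colc d oo (ts!j) (e 1)"
            then obtain u where "length u = d" "ts = ptl d oo (e 1) u" using oL[of ts] by auto
            then show "\<exists>x. length x = d \<and> coordc d oo es x ts" using h es0 by auto
          qed
        qed
        finally show ?thesis .
      qed
      have SUR: "SURg e \<longleftrightarrow> (\<forall>x. length x = d \<longrightarrow> (\<exists>u. length u = d \<and> coordc d oo es x (ptl d oo (es!0) u)))"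
      proof -
        have ev: "Bs (upb (e(K := x)) (K+1) ts) \<longleftrightarrow> (\<forall>j<d. colc d oo (ts!j) (e 1)) \<and> coordc d oo es x ts"
          if "length ts = d" for ts x
        proof -
          define e' where "e' = upb (e(K := x)) (K+1) ts"
          have a: "e' 0 = oo" "e' 1 = e 1" "e' K = x" unfolding e'_def oo_def K_def using d1 by auto
          have b: "map e' ES = es"
            unfolding e'_def es_def ES_def K_def by (rule map_cong) auto
          have c: "map e' [K+1..<K+1+d] = ts" unfolding e'_def using upb_map_block[of "e(K := x)" "K+1" ts] that by simp
          have dd: "e' (K+1+j) = ts!j" if "j < d" for j unfolding e'_def using that \<open>length ts = d\<close> by (simp add: upb_def)
          show ?thesis unfolding Bs_def e'_def[symmetric] using a b c dd by simp
        qed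
        have "SURg e \<longleftrightarrow> (\<forall>x. length x = d \<longrightarrow> (\<exists>ts. length ts = d \<and> (\<forall>p\<in>set ts. length p = d) \<and>
            (\<forall>j<d. colc d oo (ts!j) (e 1)) \<and> coordc d oo es x ts))"
          unfolding SURg_def using ev by blast
        also have "\<dots> \<longleftrightarrow> (\<forall>x. length x = d \<longrightarrow> (\<exists>u. length u = d \<and> coordc d oo es x (ptl d oo (es!0) u)))"
        proof (intro all_cong imp_cong refl iffI)
          fix x assume "\<exists>ts. length ts = d \<and> (\<forall>p\<in>set ts. length p = d) \<and> (\<forall>j<d. colc d oo (ts!j) (e 1)) \<and> coordc d oo es x ts"
          then obtain ts where "length ts = d" "\<forall>p\<in>set ts. length p = d" "\<forall>j<d. colc d oo (ts!j) (e 1)" "coordc d oo es x ts" by blast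
          then show "\<exists>u. length u = d \<and> coordc d oo es x (ptl d oo (es!0) u)" using oL[of ts] es0 by auto
        next
          fix x assume "\<exists>u. length u = d \<and> coordc d oo es x (ptl d oo (es!0) u)"
          then obtain u where u: "length u = d" "coordc d oo es x (ptl d oo (es!0) u)" by blast
          have "\<forall>j<d. colc d oo (ptl d oo (e 1) u ! j) (e 1)" using u(1) by (auto intro!: colc_pt1)
          then show "\<exists>ts. length ts = d \<and> (\<forall>p\<in>set ts. length p = d) \<and> (\<forall>j<d. colc d oo (ts!j) (e 1)) \<and> coordc d oo es x ts"
            using es0 u by (intro exI[of _ "ptl d oo (e 1) u"]) simp
        qed
        finally show ?thesis .
      qed
      have UNI: "UNIg e \<longleftrightarrow> (\<forall>x u u'. length x = d \<longrightarrow> length u = d \<longrightarrow> length u' = d \<longrightarrow> coordc d oo es x (ptl d oo (es!0) u) \<longrightarrow>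
       coordc d oo es x (ptl d oo (es!0) u') \<longrightarrow> u = u')"
      proof -
        have ev: "Bu (upb (upb (e(K := x)) (K+1) ts) (K+1+d) ts') \<longleftrightarrow>
          ((\<forall>j<d. colc d oo (ts!j) (e 1)) \<and> (\<forall>j<d. colc d oo (ts'!j) (e 1)) \<and> coordc d oo es x ts \<and> coordc d oo es x ts'
          \<longrightarrow> ts = ts')"
          if lt: "length ts = d" "length ts' = d" for ts ts' x
        proof -
          define e' where "e' = upb (upb (e(K := x)) (K+1) ts) (K+1+d) ts'"
          have a: "e' 0 = oo" "e' 1 = e 1" "e' K = x" unfolding e'_def oo_def K_def using d1 by auto
          have b: "map e' ES = es"
            unfolding e'_def es_def ES_def K_def by (rule map_cong) auto
          have c0: "map e' [K+1..<K+1+d] = map (upb (e(K := x)) (K+1) ts) [K+1..<K+1+d]"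
            unfolding e'_def by (rule upb_map_low) simp
          have c: "map e' [K+1..<K+1+d] = ts" unfolding c0 using upb_map_block[of "e(K := x)" "K+1" ts] lt by simp
          have c2: "map e' [K+1+d..<K+1+d+d] = ts'" unfolding e'_def using upb_map_block[of _ "K+1+d" ts'] lt by simp
          have dd: "e' (K+1+j) = ts!j" if "j < d" for j unfolding e'_def using that lt by (simp add: upb_def)
          have dd2: "e' (K+1+d+j) = ts'!j" if "j < d" for j unfolding e'_def using that lt upb_in[of j ts' _ "K+1+d"] by simp
          have "(\<forall>j<d. ts!j = ts'!j) \<longleftrightarrow> ts = ts'" using lt by (simp add: list_eq_iff_nth_eq)
          then show ?thesis unfolding Bu_def e'_def[symmetric] using a b c c2 dd dd2 by simp
        qed
        have "UNIg e \<longleftrightarrow> (\<forall>x. length x = d \<longrightarrow> (\<forall>ts. length ts = d \<and> (\<forall>p\<in>set ts. length p = d) \<longrightarrow>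
          (\<forall>ts'. length ts' = d \<and> (\<forall>p\<in>set ts'. length p = d) \<longrightarrow>
          ((\<forall>j<d. colc d oo (ts!j) (e 1)) \<and> (\<forall>j<d. colc d oo (ts'!j) (e 1)) \<and> coordc d oo es x ts \<and> coordc d oo es x ts'
          \<longrightarrow> ts = ts'))))"
          unfolding UNIg_def using ev by blast
        also have "\<dots> \<longleftrightarrow> (\<forall>x u u'. length x = d \<longrightarrow> length u = d \<longrightarrow> length u' = d \<longrightarrow> coordc d oo es x (ptl d oo (es!0) u) \<longrightarrow>
          coordc d oo es x (ptl d oo (es!0) u') \<longrightarrow> u = u')"
        proof
          assume h: "\<forall>x. length x = d \<longrightarrow> (\<forall>ts. length ts = d \<and> (\<forall>p\<in>set ts. length p = d) \<longrightarrow>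
            (\<forall>ts'. length ts' = d \<and> (\<forall>p\<in>set ts'. length p = d) \<longrightarrow>
            ((\<forall>j<d. colc d oo (ts!j) (e 1)) \<and> (\<forall>j<d. colc d oo (ts'!j) (e 1)) \<and> coordc d oo es x ts \<and> coordc d oo es x ts'
            \<longrightarrow> ts = ts')))"
          show "\<forall>x u u'. length x = d \<longrightarrow> length u = d \<longrightarrow> length u' = d \<longrightarrow> coordc d oo es x (ptl d oo (es!0) u) \<longrightarrow>
            coordc d oo es x (ptl d oo (es!0) u') \<longrightarrow> u = u'"
          proof (intro allI impI)
            fix x u u' :: "'a list" assume l: "length x = d" "length u = d" "length u' = d"
              and c: "coordc d oo es x (ptl d oo (es!0) u)" "coordc d oo es x (ptl d oo (es!0) u')"
            have "\<forall>j<d. colc d oo (ptl d oo (e 1) u ! j) (e 1)" using l by (auto intro!: colc_pt1)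
            moreover have "\<forall>j<d. colc d oo (ptl d oo (e 1) u' ! j) (e 1)" using l by (auto intro!: colc_pt1)
            ultimately have "ptl d oo (e 1) u = ptl d oo (e 1) u'"
              using h[rule_format, of x "ptl d oo (e 1) u" "ptl d oo (e 1) u'"] l c es0 by simp
            then show "u = u'" using ptl_inj[OF lo le1 oe] l by simp
          qed
        next
          assume h: "\<forall>x u u'. length x = d \<longrightarrow> length u = d \<longrightarrow> length u' = d \<longrightarrow> coordc d oo es x (ptl d oo (es!0) u) \<longrightarrow>
            coordc d oo es x (ptl d oo (es!0) u') \<longrightarrow> u = u'"
          show "\<forall>x. length x = d \<longrightarrow> (\<forall>ts. length ts = d \<and> (\<forall>p\<in>set ts. length p = d) \<longrightarrow>
            (\<forall>ts'. length ts' = d \<and> (\<forall>p\<in>set ts'. length p = d) \<longrightarrow>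
            ((\<forall>j<d. colc d oo (ts!j) (e 1)) \<and> (\<forall>j<d. colc d oo (ts'!j) (e 1)) \<and> coordc d oo es x ts \<and> coordc d oo es x ts'
            \<longrightarrow> ts = ts')))"
          proof (intro allI impI)
            fix x :: "'a list" and ts ts' :: "'a list list"
            assume l: "length x = d" "length ts = d \<and> (\<forall>p\<in>set ts. length p = d)" "length ts' = d \<and> (\<forall>p\<in>set ts'. length p = d)"
              and c: "(\<forall>j<d. colc d oo (ts!j) (e 1)) \<and> (\<forall>j<d. colc d oo (ts'!j) (e 1)) \<and> coordc d oo es x ts \<and> coordc d oo es x ts'"
            obtain u where u: "length u = d" "ts = ptl d oo (e 1) u" using oL[of ts] l c by auto
            obtain u' where u': "length u' = d" "ts' = ptl d oo (e 1) u'" using oL[of ts'] l c by auto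
            have "u = u'" using h[rule_format, of x u u'] l u u' c es0 by simp
            then show "ts = ts'" using u u' by simp
          qed
        qed
        finally show ?thesis .
      qed
      show ?thesis using True NC TOT SUR UNI unfolding geoc_def oo_def es_def ES_def by simp
    qed
  qed
qed

end


declare upt_Suc[simp del]

lemma ptl_map: "ptl d oo e u = map (pt d oo e) u"
  unfolding ptl_def by (rule nth_equalityI) simp_all

lemma chunk_take: "i < m \<Longrightarrow> take d (drop (i*d) (take (d*m) u)) = take d (drop (i*d) u)"
proof -
  assume "i < m"
  then have "i*d + d \<le> d*m" by (metis Suc_leI mult.commute mult_Suc_right add.commute mult_le_mono2)
  then show ?thesis by (simp add: take_drop min_def)
qed

context fgeo
begin

lemma EXL:
  assumes io: "io < N" "ie < N" "iw < N" and lES: "length ES = d" and ESN: "\<forall>i\<in>set ES. i < N"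
    and lP: "length P = m" and PN: "\<forall>i\<in>set P. i < N" and dm: "d*m \<le> V"
    and fv: "fvars \<phi> \<le> V" and phi: "\<forall>e. map e [0..<d*m] \<in> S \<longleftrightarrow> fsat le e \<phi>"
    and d1: "1 \<le> d"
  shows "\<exists>X. gd d I X \<and> (\<forall>e. (\<forall>i. length (e i) = d) \<and> \<not> colc d (e io) (e ie) (e iw) \<longrightarrow>
     (X e \<longleftrightarrow> (\<exists>u. length u = d*m \<and> (\<forall>i<m. coordc d (e io) (map e ES) (e (P!i)) (ptl d (e io) (e ie) (take d (drop (i*d) u))))
        \<and> u \<in> S)))"
proof -
  obtain Q where Q: "gd d I Q" "\<forall>e g. cnd io ie iw N V e g \<longrightarrow> (Q e \<longleftrightarrow> fsat le (envf g V) \<phi>)"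
    using form_trans[OF io fv] by blast
  define Inner where "Inner = (\<lambda>e::nat \<Rightarrow> 'a list. (\<forall>j<V. colc d (e io) (e (N+j)) (e ie)) \<and>
     (\<forall>i<m. coordc d (e io) (map e ES) (e (P!i)) (map e [N+i*d..<N+i*d+d])) \<and> Q e)"
  have gI: "gd d I Inner" unfolding Inner_def
    by (intro gd_and gd_ball gcol gcoord d1 lES Q(1)) simp
  define X where "X = (\<lambda>e. \<exists>ts. length ts = V \<and> (\<forall>p\<in>set ts. length p = d) \<and> Inner (upb e N ts))"
  have gX: "gd d I X" unfolding X_def by (intro gd_exs gI)
  show ?thesis
  proof (intro exI[of _ X] conjI gX allI impI)
    fix e :: "nat \<Rightarrow> 'a list" assume h: "(\<forall>i. length (e i) = d) \<and> \<not> colc d (e io) (e ie) (e iw)"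
    then have len: "\<forall>i. length (e i) = d" and nc: "\<not> colc d (e io) (e ie) (e iw)" by auto
    have oe: "e io \<noteq> e ie" using ncol_ne1[OF nc] len by auto
    note oL = onL_ptl[of "e io" d "e ie", OF _ _ oe]
    have key: "Inner (upb e N (ptl d (e io) (e ie) u)) \<longleftrightarrow>
       (\<forall>i<m. coordc d (e io) (map e ES) (e (P!i)) (ptl d (e io) (e ie) (take d (drop (i*d) (take (d*m) u))))) \<and>
       take (d*m) u \<in> S" if lu: "length u = V" for u
    proof -
      define ts where "ts = ptl d (e io) (e ie) u"
      define e2 where "e2 = upb e N ts"
      have lts: "length ts = V" unfolding ts_def using lu by simp
      have a: "e2 io = e io" "e2 ie = e ie" "e2 iw = e iw" unfolding e2_def using io by auto
      have b: "map e2 ES = map e ES" unfolding e2_def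
      proof (rule map_cong[OF refl])
        fix x assume "x \<in> set ES"
        then have "x < N" using ESN by blast
        then show "upb e N ts x = e x" by simp
      qed
      have c: "e2 (P!i) = e (P!i)" if "i < m" for i unfolding e2_def using PN lP that by auto
      have dd: "e2 (N+j) = pt d (e io) (e ie) (u!j)" if "j < V" for j
        unfolding e2_def ts_def using that lu by simp
      have f: "map e2 [N+i*d..<N+i*d+d] = ptl d (e io) (e ie) (take d (drop (i*d) (take (d*m) u)))" if "i < m" for i
      proof -
        have "i*d + d \<le> d*m" using that by (metis Suc_leI mult.commute mult_Suc_right add.commute mult_le_mono2)
        then have "i*d + d \<le> V" using dm by simp
        then have lt: "length (take d (drop (i*d) u)) = d" using lu by simp
        show ?thesis unfolding chunk_take[OF that]
        proof (rule nth_equalityI)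
          show "length (map e2 [N+i*d..<N+i*d+d]) = length (ptl d (e io) (e ie) (take d (drop (i*d) u)))"
            using lt by simp
          fix k assume k: "k < length (map e2 [N+i*d..<N+i*d+d])"
          then have k': "k < d" by simp
          have "map e2 [N+i*d..<N+i*d+d] ! k = e2 (N + (i*d+k))" using k' by (simp add: add.assoc)
          also have "\<dots> = pt d (e io) (e ie) (u!(i*d+k))" using dd \<open>i*d + d \<le> V\<close> k' by simp
          also have "\<dots> = ptl d (e io) (e ie) (take d (drop (i*d) u)) ! k" using lt k' lu by simp
          finally show "map e2 [N+i*d..<N+i*d+d] ! k = ptl d (e io) (e ie) (take d (drop (i*d) u)) ! k" .
        qed
      qed
      have g1: "\<forall>j<V. colc d (e io) (e2 (N+j)) (e ie)" using dd by (auto intro!: colc_pt1)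
      have cn: "cnd io ie iw N V e2 (\<lambda>j. u!j)" unfolding cnd_def using e2_def len a nc dd lts by (auto simp: upb_def)
      have "Q e2 \<longleftrightarrow> fsat le (envf (\<lambda>j. u!j) V) \<phi>" using Q(2) cn by blast
      also have "\<dots> \<longleftrightarrow> map (envf (\<lambda>j. u!j) V) [0..<d*m] \<in> S" using phi by simp
      also have "map (envf (\<lambda>j. u!j) V) [0..<d*m] = take (d*m) u" using dm lu by (simp add: list_eq_iff_nth_eq envf_def)
      finally have q: "Q e2 \<longleftrightarrow> take (d*m) u \<in> S" .
      show ?thesis unfolding e2_def[symmetric] ts_def[symmetric] Inner_def b using a c f g1 q by simp
    qed
    have "X e \<longleftrightarrow> (\<exists>u. length u = V \<and> Inner (upb e N (ptl d (e io) (e ie) u)))"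
    proof
      assume "X e"
      then obtain ts where ts: "length ts = V" "\<forall>p\<in>set ts. length p = d" "Inner (upb e N ts)" unfolding X_def by blast
      have "\<forall>j<V. colc d (e io) (ts!j) (e ie)"
      proof (intro allI impI)
        fix j assume j: "j < V"
        have "upb e N ts (N+j) = ts!j" using j ts(1) by simp
        then show "colc d (e io) (ts!j) (e ie)" using ts(3) j io unfolding Inner_def by auto
      qed
      then obtain u where "length u = V" "ts = ptl d (e io) (e ie) u" using oL[of ts] len ts by auto
      then show "\<exists>u. length u = V \<and> Inner (upb e N (ptl d (e io) (e ie) u))" using ts by blast
    next
      assume "\<exists>u. length u = V \<and> Inner (upb e N (ptl d (e io) (e ie) u))"
      then obtain u where "length u = V" "Inner (upb e N (ptl d (e io) (e ie) u))" by blast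
      then show "X e" unfolding X_def by (intro exI[of _ "ptl d (e io) (e ie) u"]) simp
    qed
    also have "\<dots> \<longleftrightarrow> (\<exists>u. length u = V \<and> (\<forall>i<m. coordc d (e io) (map e ES) (e (P!i)) (ptl d (e io) (e ie) (take d (drop (i*d) (take (d*m) u))))) \<and>
       take (d*m) u \<in> S)" using key by blast
    also have "\<dots> \<longleftrightarrow> (\<exists>u. length u = d*m \<and> (\<forall>i<m. coordc d (e io) (map e ES) (e (P!i)) (ptl d (e io) (e ie) (take d (drop (i*d) u))))
        \<and> u \<in> S)"
    proof
      assume "\<exists>u. length u = V \<and> (\<forall>i<m. coordc d (e io) (map e ES) (e (P!i)) (ptl d (e io) (e ie) (take d (drop (i*d) (take (d*m) u))))) \<and>
       take (d*m) u \<in> S"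
      then obtain u where "length u = V" "\<forall>i<m. coordc d (e io) (map e ES) (e (P!i)) (ptl d (e io) (e ie) (take d (drop (i*d) (take (d*m) u))))"
        "take (d*m) u \<in> S" by blast
      then show "\<exists>u. length u = d*m \<and> (\<forall>i<m. coordc d (e io) (map e ES) (e (P!i)) (ptl d (e io) (e ie) (take d (drop (i*d) u))))
        \<and> u \<in> S" using dm by (intro exI[of _ "take (d*m) u"]) simp
    next
      assume "\<exists>u. length u = d*m \<and> (\<forall>i<m. coordc d (e io) (map e ES) (e (P!i)) (ptl d (e io) (e ie) (take d (drop (i*d) u))))
        \<and> u \<in> S"
      then obtain u where u: "length u = d*m" "\<forall>i<m. coordc d (e io) (map e ES) (e (P!i)) (ptl d (e io) (e ie) (take d (drop (i*d) u)))"
        "u \<in> S" by blast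
      define u' where "u' = u @ replicate (V - d*m) 0"
      have "length u' = V" "take (d*m) u' = u" unfolding u'_def using u(1) dm by auto
      then show "\<exists>u. length u = V \<and> (\<forall>i<m. coordc d (e io) (map e ES) (e (P!i)) (ptl d (e io) (e ie) (take d (drop (i*d) (take (d*m) u))))) \<and>
       take (d*m) u \<in> S" using u by metis
    qed
    finally show "X e \<longleftrightarrow> (\<exists>u. length u = d*m \<and> (\<forall>i<m. coordc d (e io) (map e ES) (e (P!i)) (ptl d (e io) (e ie) (take d (drop (i*d) u))))
        \<and> u \<in> S)" .
  qed
qed

end


declare upt_Suc[simp del]

definition relsem :: "nat \<Rightarrow> ('s \<Rightarrow> nat) \<Rightarrow> ('s \<Rightarrow> 'a::field list list \<Rightarrow> bool) \<Rightarrow> 's \<Rightarrow> 'a list \<Rightarrow> 'a list list \<Rightarrow> bool" where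
  "relsem d ar I s oo es \<longleftrightarrow> (\<forall>ys. length ys = ar s \<longrightarrow> (\<forall>y\<in>set ys. length y = d) \<longrightarrow> (I s ys \<longleftrightarrow>
      (\<exists>u. length u = d * ar s \<and> (\<forall>i<ar s. coordc d oo es (ys!i) (ptl d oo (es!0) (take d (drop (i*d) u)))) \<and>
           u \<in> flatten {t. I s t})))"

lemma goodc_geoc: "goodc d ar I oo es \<longleftrightarrow> length oo = d \<and> length es = d \<and> (\<forall>x\<in>set es. length x = d) \<and> geoc d oo es \<and>
   (\<forall>s. relsem d ar I s oo es)"
  unfolding goodc_def geoc_def relsem_def by blast

locale topl = fgeo d I le + sem d ar I
  for d :: nat and I :: "'s \<Rightarrow> 'a::field list list \<Rightarrow> bool" and le and ar +
  assumes fin: "finite (UNIV :: 's set)"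
    and fdI: "\<And>s. fdefinable le d (ar s) {t. I s t}"
begin

lemma relG: "\<exists>Rg. gd d I Rg \<and> (\<forall>e. (\<forall>i. length (e i) = d) \<and> \<not> colc d (e 0) (e 1) (e 2) \<longrightarrow>
    (Rg e \<longleftrightarrow> relsem d ar I s (e 0) (map e [1..<d+1])))"
proof -
  have d1: "1 \<le> d" using d2 by simp
  define K where "K = d + 1"
  define ES where "ES = [1..<d+1]"
  define m where "m = ar s"
  have lES: "length ES = d" unfolding ES_def by simp
  have ESK: "\<forall>i\<in>set ES. i < K" unfolding ES_def K_def by auto
  obtain \<phi> where phi: "\<forall>e. map e [0..<d * m] \<in> flatten {t. I s t} \<longleftrightarrow> fsat le e \<phi>"
    using fdI[of s] unfolding fdefinable_def fdefinable_rel_def m_def by blast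
  define V where "V = max (fvars \<phi>) (d * m)"
  have PN: "\<forall>i\<in>set [K..<K + m]. i < K + m" by simp
  obtain X where X: "gd d I X" "\<forall>e. (\<forall>i. length (e i) = d) \<and> \<not> colc d (e 0) (e 1) (e 2) \<longrightarrow>
     (X e \<longleftrightarrow> (\<exists>u. length u = d * m \<and> (\<forall>i<m. coordc d (e 0) (map e ES) (e ([K..<K + m]!i)) (ptl d (e 0) (e 1) (take d (drop (i*d) u))))
        \<and> u \<in> flatten {t. I s t}))"
    using EXL[of 0 "K + m" 1 2 ES "[K..<K + m]" m V \<phi> "flatten {t. I s t}", OF _ _ _ lES _ _ PN _ _ phi d1] ESK d2
    unfolding V_def K_def by fastforce
  define Rg where "Rg = (\<lambda>e::nat \<Rightarrow> 'a list. \<forall>ys. length ys = m \<and> (\<forall>p\<in>set ys. length p = d) \<longrightarrow>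
      (\<lambda>e. I s (map e [K..<K + m]) \<longleftrightarrow> X e) (upb e K ys))"
  have g: "gd d I Rg" unfolding Rg_def by (intro gd_alls gd_iff gd_rel X(1))
  show ?thesis
  proof (intro exI[of _ Rg] conjI g allI impI)
    fix e :: "nat \<Rightarrow> 'a list" assume h: "(\<forall>i. length (e i) = d) \<and> \<not> colc d (e 0) (e 1) (e 2)"
    have ev: "(I s (map (upb e K ys) [K..<K + m]) \<longleftrightarrow> X (upb e K ys)) \<longleftrightarrow>
      (I s ys \<longleftrightarrow> (\<exists>u. length u = d * m \<and> (\<forall>i<m. coordc d (e 0) (map e ES) (ys!i) (ptl d (e 0) (map e ES ! 0) (take d (drop (i*d) u)))) \<and>
           u \<in> flatten {t. I s t}))" if ly: "length ys = m" "\<forall>p\<in>set ys. length p = d" for ys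
    proof -
      define e1 where "e1 = upb e K ys"
      have a: "e1 0 = e 0" "e1 1 = e 1" "e1 2 = e 2" unfolding e1_def K_def using d2 by auto
      have b: "map e1 ES = map e ES" unfolding e1_def
      proof (rule map_cong[OF refl])
        fix x assume "x \<in> set ES"
        then have "x < K" using ESK by blast
        then show "upb e K ys x = e x" by simp
      qed
      have c: "e1 ([K..<K + m]!i) = ys!i" if "i < m" for i unfolding e1_def using that ly by (simp add: add.commute)
      have mm: "map e1 [K..<K + m] = ys" unfolding e1_def using upb_map_block[of e K ys] ly by simp
      have l1: "\<forall>i. length (e1 i) = d" unfolding e1_def using h ly by (auto simp: upb_def)
      have es0: "map e ES ! 0 = e 1" unfolding ES_def using d1 by simp
      have "X e1 \<longleftrightarrow> (\<exists>u. length u = d * m \<and> (\<forall>i<m. coordc d (e1 0) (map e1 ES) (e1 ([K..<K + m]!i)) (ptl d (e1 0) (e1 1) (take d (drop (i*d) u))))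
        \<and> u \<in> flatten {t. I s t})" using X(2) l1 h a by simp
      also have "\<dots> \<longleftrightarrow> (\<exists>u. length u = d * m \<and> (\<forall>i<m. coordc d (e 0) (map e ES) (ys!i) (ptl d (e 0) (map e ES ! 0) (take d (drop (i*d) u))))
        \<and> u \<in> flatten {t. I s t})" unfolding a b es0 using c by simp
      finally show ?thesis unfolding e1_def[symmetric] mm by simp
    qed
    show "Rg e \<longleftrightarrow> relsem d ar I s (e 0) (map e [1..<d+1])"
      unfolding Rg_def relsem_def m_def[symmetric] ES_def[symmetric] using ev by auto
  qed
qed

lemma ggood: "gd d I (\<lambda>e. goodc d ar I (e 0) (map e [1..<d+1]))"
proof -
  obtain Rg where Rg: "\<forall>s. gd d I (Rg s) \<and> (\<forall>e. (\<forall>i. length (e i) = d) \<and> \<not> colc d (e 0) (e 1) (e 2) \<longrightarrow>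
    (Rg s e \<longleftrightarrow> relsem d ar I s (e 0) (map e [1..<d+1])))"
    using relG by metis
  have "gd d I (\<lambda>e. geoc d (e 0) (map e [1..<d+1]) \<and> (\<forall>s\<in>UNIV. Rg s e))"
    using Rg by (intro gd_and ggeo d2 gd_fin fin) auto
  then show ?thesis
  proof (rule gd_cong)
    fix e :: "nat \<Rightarrow> 'a list" assume len: "\<forall>i. length (e i) = d"
    have l: "length (e 0) = d" "length (map e [1..<d+1]) = d" "\<forall>x\<in>set (map e [1..<d+1]). length x = d" using len by auto
    show "(geoc d (e 0) (map e [1..<d+1]) \<and> (\<forall>s\<in>UNIV. Rg s e)) = goodc d ar I (e 0) (map e [1..<d+1])"
    proof (cases "geoc d (e 0) (map e [1..<d+1])")
      case False then show ?thesis unfolding goodc_geoc by blast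
    next
      case True
      then have "\<not> colc d (e 0) (map e [1..<d+1] ! 0) (map e [1..<d+1] ! 1)" using d2 unfolding geoc_def by auto
      moreover have "map e [1..<d+1] ! 0 = e 1" "map e [1..<d+1] ! 1 = e 2" using d2 by (auto simp: numeral_2_eq_2)
      ultimately have nc: "\<not> colc d (e 0) (e 1) (e 2)" by simp
      then show ?thesis using Rg len True l unfolding goodc_geoc by auto
    qed
  qed
qed

end


declare upt_Suc[simp del]

context topl
begin

lemma ggood_at: "gd d I (\<lambda>e. goodc d ar I (e n) (map e [n+1..<n+d+1]))"
proof -
  have u: "[0..<d+1] = 0 # [1..<d+1]" by (simp add: upt_conv_Cons)
  have gl: "gdl d I (d+1) (\<lambda>xs. goodc d ar I (hd xs) (tl xs))" unfolding gdl_def using ggood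
    by (rule gd_cong) (simp add: upt_conv_Cons)
  have u2: "[n..<n+d+1] = n # [n+1..<n+d+1]" by (simp add: upt_conv_Cons)
  have g2: "gd d I (\<lambda>e. goodc d ar I (hd (map e [n..<n+d+1])) (tl (map e [n..<n+d+1])))"
    using gdl_inst[OF gl, of "[n..<n+d+1]"] by simp
  then show ?thesis by (rule gd_cong) (simp only: u2 list.map list.sel)
qed

lemma gRsem:
  assumes fR: "fdefinable le d n R"
  shows "gd d I (\<lambda>e. Rsem d ar I n R (map e [0..<n]))"
proof -
  have d1: "1 \<le> d" using d2 by simp
  obtain \<phi> where phi: "\<forall>e. map e [0..<d * n] \<in> flatten R \<longleftrightarrow> fsat le e \<phi>"
    using fR unfolding fdefinable_def fdefinable_rel_def by blast
  define V where "V = max (fvars \<phi>) (d * n)"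
  define N where "N = n + d + 1"
  define ES where "ES = [n+1..<n+d+1]"
  have lES: "length ES = d" unfolding ES_def by simp
  have ESN: "\<forall>i\<in>set ES. i < N" unfolding ES_def N_def by auto
  have PN: "\<forall>i\<in>set [0..<n]. i < N" unfolding N_def by auto
  obtain X where X: "gd d I X" "\<forall>e. (\<forall>i. length (e i) = d) \<and> \<not> colc d (e n) (e (n+1)) (e (n+2)) \<longrightarrow>
     (X e \<longleftrightarrow> (\<exists>u. length u = d * n \<and> (\<forall>i<n. coordc d (e n) (map e ES) (e ([0..<n]!i)) (ptl d (e n) (e (n+1)) (take d (drop (i*d) u))))
        \<and> u \<in> flatten R))"
    using EXL[of n N "n+1" "n+2" ES "[0..<n]" n V \<phi> "flatten R", OF _ _ _ lES ESN _ PN _ _ phi d1] d2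
    unfolding V_def N_def by fastforce
  define Rg where "Rg = (\<lambda>e::nat \<Rightarrow> 'a list. \<exists>fr. length fr = d + 1 \<and> (\<forall>p\<in>set fr. length p = d) \<and>
     (\<lambda>e. goodc d ar I (e n) (map e ES) \<and> X e) (upb e n fr))"
  have g: "gd d I Rg" unfolding Rg_def ES_def by (intro gd_exs gd_and ggood_at X(1))
  then show ?thesis
  proof (rule gd_cong)
    fix e :: "nat \<Rightarrow> 'a list" assume len: "\<forall>i. length (e i) = d"
    have ev: "(goodc d ar I (upb e n fr n) (map (upb e n fr) ES) \<and> X (upb e n fr)) \<longleftrightarrow>
      goodc d ar I (fr!0) (tl fr) \<and> (\<exists>u. length u = d * n \<and> (\<forall>i<n. coordc d (fr!0) (tl fr) (e i) (ptl d (fr!0) (tl fr ! 0) (take d (drop (i*d) u))))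
        \<and> u \<in> flatten R)" if lf: "length fr = d + 1" "\<forall>p\<in>set fr. length p = d" for fr
    proof -
      define e1 where "e1 = upb e n fr"
      have a: "e1 n = fr!0" "e1 (n+1) = fr!1" "e1 (n+2) = fr!2" unfolding e1_def using lf d2 by (auto simp: upb_def)
      have b: "map e1 ES = tl fr" unfolding e1_def ES_def using lf by (simp add: list_eq_iff_nth_eq nth_tl upb_def)
      have c: "e1 ([0..<n]!i) = e i" if "i < n" for i unfolding e1_def using that by simp
      have t0: "tl fr ! 0 = fr!1" using lf d1 by (simp add: nth_tl)
      have l1: "\<forall>i. length (e1 i) = d" unfolding e1_def using len lf by (auto simp: upb_def)
      show ?thesis
      proof (cases "goodc d ar I (fr!0) (tl fr)")
        case False then show ?thesis unfolding e1_def[symmetric] a b by simp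
      next
        case True
        then have "geoc d (fr!0) (tl fr)" using goodc_geoc by blast
        then have "\<not> colc d (fr!0) (tl fr ! 0) (tl fr ! 1)" using d2 unfolding geoc_def by auto
        moreover have "tl fr ! 1 = fr!2" using lf d2 by (simp add: nth_tl numeral_2_eq_2)
        ultimately have nc: "\<not> colc d (e1 n) (e1 (n+1)) (e1 (n+2))" using a t0 by simp
        have "X e1 \<longleftrightarrow> (\<exists>u. length u = d * n \<and> (\<forall>i<n. coordc d (e1 n) (map e1 ES) (e1 ([0..<n]!i)) (ptl d (e1 n) (e1 (n+1)) (take d (drop (i*d) u))))
          \<and> u \<in> flatten R)" using X(2) l1 nc by blast
        also have "\<dots> \<longleftrightarrow> (\<exists>u. length u = d * n \<and> (\<forall>i<n. coordc d (fr!0) (tl fr) (e i) (ptl d (fr!0) (tl fr ! 0) (take d (drop (i*d) u))))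
          \<and> u \<in> flatten R)" unfolding a b t0 using c by simp
        finally show ?thesis unfolding e1_def[symmetric] a b using True by simp
      qed
    qed
    have "Rg e \<longleftrightarrow> (\<exists>fr. length fr = d + 1 \<and> (\<forall>p\<in>set fr. length p = d) \<and> goodc d ar I (fr!0) (tl fr) \<and>
       (\<exists>u. length u = d * n \<and> (\<forall>i<n. coordc d (fr!0) (tl fr) (e i) (ptl d (fr!0) (tl fr ! 0) (take d (drop (i*d) u)))) \<and> u \<in> flatten R))"
      unfolding Rg_def using ev by blast
    also have "\<dots> \<longleftrightarrow> Rsem d ar I n R (map e [0..<n])"
    proof
      assume "\<exists>fr. length fr = d + 1 \<and> (\<forall>p\<in>set fr. length p = d) \<and> goodc d ar I (fr!0) (tl fr) \<and>
       (\<exists>u. length u = d * n \<and> (\<forall>i<n. coordc d (fr!0) (tl fr) (e i) (ptl d (fr!0) (tl fr ! 0) (take d (drop (i*d) u)))) \<and> u \<in> flatten R)"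
      then obtain fr u where "goodc d ar I (fr!0) (tl fr)" "length u = d * n"
        "\<forall>i<n. coordc d (fr!0) (tl fr) (e i) (ptl d (fr!0) (tl fr ! 0) (take d (drop (i*d) u)))" "u \<in> flatten R" by blast
      then show "Rsem d ar I n R (map e [0..<n])" unfolding Rsem_def by auto
    next
      assume "Rsem d ar I n R (map e [0..<n])"
      then obtain oo es u where h: "goodc d ar I oo es" "length u = d * n"
        "\<forall>i<n. coordc d oo es (map e [0..<n] ! i) (ptl d oo (es!0) (take d (drop (i*d) u)))" "u \<in> flatten R"
        unfolding Rsem_def by blast
      have l: "length oo = d" "length es = d" "\<forall>x\<in>set es. length x = d" using h(1) unfolding goodc_def by auto
      show "\<exists>fr. length fr = d + 1 \<and> (\<forall>p\<in>set fr. length p = d) \<and> goodc d ar I (fr!0) (tl fr) \<and>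
       (\<exists>u. length u = d * n \<and> (\<forall>i<n. coordc d (fr!0) (tl fr) (e i) (ptl d (fr!0) (tl fr ! 0) (take d (drop (i*d) u)))) \<and> u \<in> flatten R)"
        apply (rule exI[of _ "oo # es"])
        using h l by auto
    qed
    finally show "Rg e = Rsem d ar I n R (map e [0..<n])" .
  qed
qed

lemma iii_i:
  assumes RT: "R \<subseteq> tuples d n" and fR: "fdefinable le d n R"
    and clos: "\<forall>f. automorphism d I f \<and> affine_transf d f \<longrightarrow> closed_under R f"
  shows "gdefinable d I n R"
  unfolding gdefinable_gdl gdl_def using gRsem[OF fR]
proof (rule gd_cong)
  fix e :: "nat \<Rightarrow> 'a list" assume "\<forall>i. length (e i) = d"
  then show "Rsem d ar I n R (map e [0..<n]) \<longleftrightarrow> map e [0..<n] \<in> R"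
    using Rsem_iff[OF RT clos] by simp
qed

end


declare upt_Suc[simp del]

section \<open>From the geometry to the field\<close>

fun trename :: "(nat \<Rightarrow> nat) \<Rightarrow> ftm \<Rightarrow> ftm" where
  "trename r (FVar i) = FVar (r i)"
| "trename r FZero = FZero"
| "trename r FOne = FOne"
| "trename r (FAdd s t) = FAdd (trename r s) (trename r t)"
| "trename r (FMul s t) = FMul (trename r s) (trename r t)"

fun frename :: "(nat \<Rightarrow> nat) \<Rightarrow> ffm \<Rightarrow> ffm" where
  "frename r (FEq s t) = FEq (trename r s) (trename r t)"
| "frename r (FLe s t) = FLe (trename r s) (trename r t)"
| "frename r (FNot \<phi>) = FNot (frename r \<phi>)"
| "frename r (FAnd \<phi> \<psi>) = FAnd (frename r \<phi>) (frename r \<psi>)"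
| "frename r (FEx x \<phi>) = FEx (r x) (frename r \<phi>)"

lemma feval_trename: "feval e (trename r t) = feval (e \<circ> r) t"
  by (induction t) auto

lemma fsat_frename: "inj r \<Longrightarrow> fsat le e (frename r \<phi>) = fsat le (e \<circ> r) \<phi>"
proof (induction \<phi> arbitrary: e)
  case (FEx x \<phi>)
  have h: "(e(r x := a)) \<circ> r = (e \<circ> r)(x := a)" for a
    using FEx.prems by (auto simp: fun_eq_iff inj_eq)
  have "fsat le e (frename r (FEx x \<phi>)) = (\<exists>a. fsat le ((e(r x := a)) \<circ> r) \<phi>)"
    by (simp only: frename.simps fsat.simps FEx.IH[OF FEx.prems])
  then show ?case by (simp only: h fsat.simps)
qed (auto simp: feval_trename split: option.splits)

definition ftrue :: ffm where "ftrue = FEq FZero FZero"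
definition ffalse :: ffm where "ffalse = FNot (FEq FZero FZero)"

fun fconj :: "ffm list \<Rightarrow> ffm" where
  "fconj [] = ftrue"
| "fconj (f # fs) = FAnd f (fconj fs)"

fun fexs :: "nat list \<Rightarrow> ffm \<Rightarrow> ffm" where
  "fexs [] \<psi> = \<psi>"
| "fexs (v # vs) \<psi> = FEx v (fexs vs \<psi>)"

lemma fsat_ftrue[simp]: "fsat le e ftrue" by (simp add: ftrue_def)
lemma fsat_ffalse[simp]: "\<not> fsat le e ffalse" by (simp add: ffalse_def)
lemma fsat_fconj: "fsat le e (fconj fs) \<longleftrightarrow> (\<forall>f\<in>set fs. fsat le e f)"
  by (induction fs) auto

lemma fsat_fexs: "fsat le e (fexs vs \<psi>) \<longleftrightarrow> (\<exists>g. fsat le (\<lambda>w. if w \<in> set vs then g w else e w) \<psi>)"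
proof (induction vs arbitrary: e)
  case Nil then show ?case by simp
next
  case (Cons v vs)
  have "fsat le e (fexs (v#vs) \<psi>) \<longleftrightarrow> (\<exists>a g. fsat le (\<lambda>w. if w \<in> set vs then g w else (e(v := a)) w) \<psi>)"
    using Cons by simp
  also have "\<dots> \<longleftrightarrow> (\<exists>g. fsat le (\<lambda>w. if w \<in> set (v#vs) then g w else e w) \<psi>)"
  proof
    assume "\<exists>a g. fsat le (\<lambda>w. if w \<in> set vs then g w else (e(v := a)) w) \<psi>"
    then obtain a g where h: "fsat le (\<lambda>w. if w \<in> set vs then g w else (e(v := a)) w) \<psi>" by blast
    have "(\<lambda>w. if w \<in> set vs then g w else (e(v := a)) w) =
      (\<lambda>w. if w \<in> set (v#vs) then (\<lambda>w. if w \<in> set vs then g w else a) w else e w)"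
      by (auto simp: fun_eq_iff)
    then show "\<exists>g. fsat le (\<lambda>w. if w \<in> set (v#vs) then g w else e w) \<psi>" using h by metis
  next
    assume "\<exists>g. fsat le (\<lambda>w. if w \<in> set (v#vs) then g w else e w) \<psi>"
    then obtain g where h: "fsat le (\<lambda>w. if w \<in> set (v#vs) then g w else e w) \<psi>" by blast
    have "(\<lambda>w. if w \<in> set (v#vs) then g w else e w) = (\<lambda>w. if w \<in> set vs then g w else (e(v := g v)) w)"
      by (auto simp: fun_eq_iff)
    then show "\<exists>a g. fsat le (\<lambda>w. if w \<in> set vs then g w else (e(v := a)) w) \<psi>" using h by metis
  qed
  finally show ?case .
qed

lemma nth_concat_d:
  assumes "\<forall>x\<in>set t. length x = d" "k < d * length t"
  shows "concat t ! k = t ! (k div d) ! (k mod d)"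
proof -
  have d0: "0 < d" using assms(2) by (cases d) auto
  have kd: "k div d < length t" using assms(2) d0 by (simp add: less_mult_imp_div_less mult.commute)
  have kk: "(k div d)*d + k mod d = k" by simp
  have "(k div d)*d \<le> k" by (metis div_mult_mod_eq le_add1)
  then have le: "(k div d)*d \<le> length (concat t)" using length_concat_d[OF assms(1)] assms(2) by linarith
  have "drop ((k div d)*d) (concat t) ! (k mod d) = concat t ! ((k div d)*d + k mod d)"
    by (rule nth_drop[OF le])
  then have "concat t ! k = drop ((k div d)*d) (concat t) ! (k mod d)" by (simp only: kk)
  also have "\<dots> = take d (drop ((k div d)*d) (concat t)) ! (k mod d)" using d0 by simp
  also have "\<dots> = t ! (k div d) ! (k mod d)" using chunk_concat[OF assms(1) kd] by simp
  finally show ?thesis .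
qed

lemma blk_inj: "j < (d::nat) \<Longrightarrow> j' < d \<Longrightarrow> i*d + j = i'*d + j' \<longleftrightarrow> i = i' \<and> j = j'"
proof
  assume j: "j < d" "j' < d" and h: "i*d + j = i'*d + j'"
  have "(i*d + j) div d = i" "(i'*d + j') div d = i'" "(i*d + j) mod d = j" "(i'*d + j') mod d = j'"
    using j by auto
  then show "i = i' \<and> j = j'" using h by metis
qed simp

definition dec :: "nat \<Rightarrow> (nat \<Rightarrow> 'a) \<Rightarrow> nat \<Rightarrow> 'a list" where
  "dec d e i = map (\<lambda>j. e (2*(i*d+j))) [0..<d]"

lemma len_dec[simp]: "length (dec d e i) = d" by (simp add: dec_def)

fun trG :: "nat \<Rightarrow> ('s \<Rightarrow> nat) \<Rightarrow> ('s \<Rightarrow> ffm) \<Rightarrow> 's gfm \<Rightarrow> ffm" where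
  "trG d ar ph (GEq x y) = fconj (map (\<lambda>j. FEq (FVar (2*(x*d+j))) (FVar (2*(y*d+j)))) [0..<d])"
| "trG d ar ph (GRel s xs) = (if length xs = ar s then
     fexs (map (\<lambda>k. 2*k+1) [0..<d * ar s])
       (FAnd (fconj (map (\<lambda>k. FEq (FVar (2*k+1)) (FVar (2*((xs!(k div d))*d + k mod d)))) [0..<d * ar s]))
             (frename (\<lambda>k. 2*k+1) (ph s)))
     else ffalse)"
| "trG d ar ph (GNot \<phi>) = FNot (trG d ar ph \<phi>)"
| "trG d ar ph (GAnd \<phi> \<psi>) = FAnd (trG d ar ph \<phi>) (trG d ar ph \<psi>)"
| "trG d ar ph (GEx x \<phi>) = fexs (map (\<lambda>j. 2*(x*d+j)) [0..<d]) (trG d ar ph \<phi>)"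

context sem
begin

lemma concat_flatten_I:
  assumes "length ys = ar s" "\<forall>y\<in>set ys. length y = d"
  shows "concat ys \<in> flatten {t. I s t} \<longleftrightarrow> I s ys"
proof
  assume "concat ys \<in> flatten {t. I s t}"
  then obtain t where t: "I s t" "concat ys = concat t" using flatten_Is by blast
  have l: "length t = ar s" "\<forall>x\<in>set t. length x = d" using Is_len[OF t(1)] by auto
  have "t = ys"
  proof (rule nth_equalityI)
    show "length t = length ys" using l assms by simp
    fix i assume "i < length t"
    then show "t!i = ys!i" using chunk_concat[OF l(2)] chunk_concat[OF assms(2)] t(2) l assms by metis
  qed
  then show "I s ys" using t by simp
next
  assume "I s ys" then show "concat ys \<in> flatten {t. I s t}" using flatten_Is by blast
qed

lemma trG_correct:
  assumes ph: "\<And>s e. map e [0..<d * ar s] \<in> flatten {t. I s t} \<longleftrightarrow> fsat le e (ph s)"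
  shows "fsat le e (trG d ar ph \<phi>) \<longleftrightarrow> gsat d I (dec d e) \<phi>"
proof (induction \<phi> arbitrary: e)
  case (GEq x y)
  have "fsat le e (trG d ar ph (GEq x y)) \<longleftrightarrow> (\<forall>j<d. e (2*(x*d+j)) = e (2*(y*d+j)))"
    by (auto simp: fsat_fconj)
  also have "\<dots> \<longleftrightarrow> dec d e x = dec d e y" by (simp add: dec_def list_eq_iff_nth_eq)
  finally show ?case by simp
next
  case (GRel s xs)
  show ?case
  proof (cases "length xs = ar s")
    case False
    then have "\<not> I s (map (dec d e) xs)" using Is_len by force
    then show ?thesis using False by simp
  next
    case True
    define m where "m = d * ar s"
    define src where "src = (\<lambda>k. 2*((xs!(k div d))*d + k mod d))"
    define OD where "OD = map (\<lambda>k. 2*k+1) [0..<m]"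
    have inj: "inj (\<lambda>k::nat. 2*k+1)" by (auto simp: inj_def)
    have ev: "even (src k)" for k unfolding src_def by simp
    have od: "\<forall>w\<in>set OD. odd w" unfolding OD_def by auto
    have srcE: "src k \<notin> set OD" for k using ev od by blast
    have "fsat le e (trG d ar ph (GRel s xs)) \<longleftrightarrow> (\<exists>g. fsat le (\<lambda>w. if w \<in> set OD then g w else e w)
       (FAnd (fconj (map (\<lambda>k. FEq (FVar (2*k+1)) (FVar (src k))) [0..<m])) (frename (\<lambda>k. 2*k+1) (ph s))))"
      using True unfolding OD_def m_def src_def by (simp add: fsat_fexs)
    also have "\<dots> \<longleftrightarrow> (\<exists>g. (\<forall>k<m. g (2*k+1) = e (src k)) \<and>
       map (\<lambda>k. if k < m then g (2*k+1) else e (2*k+1)) [0..<m] \<in> flatten {t. I s t})"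
    proof -
      have OD_mem: "Suc (2*k) \<in> set OD \<longleftrightarrow> k < m" for k unfolding OD_def by auto
      have b: "(\<lambda>w. if w \<in> set OD then g w else e w) (src k) = e (src k)" for g k using srcE by simp
      have s1: "fsat le (\<lambda>w. if w \<in> set OD then g w else e w) (fconj (map (\<lambda>k. FEq (FVar (2*k+1)) (FVar (src k))) [0..<m]))
        \<longleftrightarrow> (\<forall>k<m. g (2*k+1) = e (src k))" for g
        using srcE by (auto simp: fsat_fconj OD_mem)
      have c: "fsat le (\<lambda>w. if w \<in> set OD then g w else e w) (frename (\<lambda>k. 2*k+1) (ph s)) \<longleftrightarrow>
         map (\<lambda>k. if k < m then g (2*k+1) else e (2*k+1)) [0..<m] \<in> flatten {t. I s t}" for g
      proof -
        have "fsat le (\<lambda>w. if w \<in> set OD then g w else e w) (frename (\<lambda>k. 2*k+1) (ph s)) \<longleftrightarrow>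
          fsat le ((\<lambda>w. if w \<in> set OD then g w else e w) \<circ> (\<lambda>k. 2*k+1)) (ph s)" using fsat_frename[OF inj] by blast
        also have "\<dots> \<longleftrightarrow> map ((\<lambda>w. if w \<in> set OD then g w else e w) \<circ> (\<lambda>k. 2*k+1)) [0..<m] \<in> flatten {t. I s t}"
          using ph[symmetric] unfolding m_def by blast
        also have "map ((\<lambda>w. if w \<in> set OD then g w else e w) \<circ> (\<lambda>k. 2*k+1)) [0..<m] = map (\<lambda>k. if k < m then g (2*k+1) else e (2*k+1)) [0..<m]"
          by (simp add: OD_mem)
        finally show ?thesis .
      qed
      show ?thesis unfolding fsat.simps(4) s1 c by blast
    qed
    also have "\<dots> \<longleftrightarrow> map (\<lambda>k. e (src k)) [0..<m] \<in> flatten {t. I s t}"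
    proof
      assume "\<exists>g. (\<forall>k<m. g (2*k+1) = e (src k)) \<and> map (\<lambda>k. if k < m then g (2*k+1) else e (2*k+1)) [0..<m] \<in> flatten {t. I s t}"
      then obtain g where "\<forall>k<m. g (2*k+1) = e (src k)" "map (\<lambda>k. if k < m then g (2*k+1) else e (2*k+1)) [0..<m] \<in> flatten {t. I s t}" by blast
      moreover have "map (\<lambda>k. if k < m then g (2*k+1) else e (2*k+1)) [0..<m] = map (\<lambda>k. e (src k)) [0..<m]"
        using calculation(1) by simp
      ultimately show "map (\<lambda>k. e (src k)) [0..<m] \<in> flatten {t. I s t}" by simp
    next
      assume h: "map (\<lambda>k. e (src k)) [0..<m] \<in> flatten {t. I s t}"
      define g where "g = (\<lambda>w. e (src ((w - 1) div 2)))"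
      have g1: "\<forall>k<m. g (2*k+1) = e (src k)" unfolding g_def by simp
      have g2: "map (\<lambda>k. if k < m then g (2*k+1) else e (2*k+1)) [0..<m] = map (\<lambda>k. e (src k)) [0..<m]"
        unfolding g_def by simp
      show "\<exists>g. (\<forall>k<m. g (2*k+1) = e (src k)) \<and> map (\<lambda>k. if k < m then g (2*k+1) else e (2*k+1)) [0..<m] \<in> flatten {t. I s t}"
        apply (rule exI[of _ g])
        using g1 g2 h by (simp only: simp_thms)
    qed
    also have "map (\<lambda>k. e (src k)) [0..<m] = concat (map (dec d e) xs)"
    proof (rule nth_equalityI)
      have l: "\<forall>x\<in>set (map (dec d e) xs). length x = d" by simp
      show "length (map (\<lambda>k. e (src k)) [0..<m]) = length (concat (map (dec d e) xs))"
        using length_concat_d[OF l] True m_def by simp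
      fix k assume "k < length (map (\<lambda>k. e (src k)) [0..<m])"
      then have k: "k < d * length (map (dec d e) xs)" using True m_def by simp
      then have d0: "0 < d" by (cases d) auto
      have kd: "k div d < length xs" using k d0 by (simp add: less_mult_imp_div_less mult.commute)
      show "map (\<lambda>k. e (src k)) [0..<m] ! k = concat (map (dec d e) xs) ! k"
        using nth_concat_d[OF l k] k kd d0 True m_def unfolding src_def dec_def by simp
    qed
    also have "\<dots> \<in> flatten {t. I s t} \<longleftrightarrow> I s (map (dec d e) xs)"
      using concat_flatten_I[of "map (dec d e) xs" s] True by simp
    finally show ?thesis by simp
  qed
next
  case (GNot \<phi>) then show ?case by simp
next
  case (GAnd \<phi> \<psi>) then show ?case by simp
next
  case (GEx x \<phi>)
  define VS where "VS = map (\<lambda>j. 2*(x*d+j)) [0..<d]"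
  have "fsat le e (trG d ar ph (GEx x \<phi>)) \<longleftrightarrow> (\<exists>g. gsat d I (dec d (\<lambda>w. if w \<in> set VS then g w else e w)) \<phi>)"
    using GEx.IH by (simp add: fsat_fexs VS_def)
  also have "\<dots> \<longleftrightarrow> (\<exists>p. length p = d \<and> gsat d I ((dec d e)(x := p)) \<phi>)"
  proof -
    have dd: "dec d (\<lambda>w. if w \<in> set VS then g w else e w) = (dec d e)(x := map (\<lambda>j. g (2*(x*d+j))) [0..<d])" for g
    proof
      fix i
      show "dec d (\<lambda>w. if w \<in> set VS then g w else e w) i = ((dec d e)(x := map (\<lambda>j. g (2*(x*d+j))) [0..<d])) i"
      proof (cases "i = x")
        case True then show ?thesis unfolding dec_def VS_def by auto
      next
        case False
        have "2*(i*d+j) \<notin> set VS" if "j < d" for j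
        proof
          assume "2*(i*d+j) \<in> set VS"
          then obtain j' where j': "j' < d" "2*(i*d+j) = 2*(x*d+j')" unfolding VS_def by auto
          then have "i*d+j = x*d+j'" by (simp only: mult_cancel1) simp
          then show False using blk_inj[OF that j'(1)] False by simp
        qed
        then show ?thesis unfolding dec_def using False by simp
      qed
    qed
    show ?thesis
    proof
      assume "\<exists>g. gsat d I (dec d (\<lambda>w. if w \<in> set VS then g w else e w)) \<phi>"
      then obtain g where "gsat d I (dec d (\<lambda>w. if w \<in> set VS then g w else e w)) \<phi>" by blast
      then show "\<exists>p. length p = d \<and> gsat d I ((dec d e)(x := p)) \<phi>" unfolding dd by (intro exI[of _ "map (\<lambda>j. g (2*(x*d+j))) [0..<d]"]) simp
    next
      assume "\<exists>p. length p = d \<and> gsat d I ((dec d e)(x := p)) \<phi>"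
      then obtain p where p: "length p = d" "gsat d I ((dec d e)(x := p)) \<phi>" by blast
      define g where "g = (\<lambda>w. p ! ((w div 2) mod d))"
      have "map (\<lambda>j. g (2*(x*d+j))) [0..<d] = p" unfolding g_def using p(1) by (simp add: list_eq_iff_nth_eq)
      then show "\<exists>g. gsat d I (dec d (\<lambda>w. if w \<in> set VS then g w else e w)) \<phi>" using p(2) dd by metis
    qed
  qed
  finally show ?case by simp
qed

lemma i_fdef:
  assumes ph: "\<And>s e. map e [0..<d * ar s] \<in> flatten {t. I s t} \<longleftrightarrow> fsat le e (ph s)"
    and RT: "R \<subseteq> tuples d n" and G: "gdefinable d I n R"
  shows "fdefinable le d n R"
proof -
  obtain \<psi> where psi: "\<forall>e. (\<forall>i. length (e i) = d) \<longrightarrow> (map e [0..<n] \<in> R \<longleftrightarrow> gsat d I e \<psi>)"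
    using G unfolding gdefinable_def by blast
  define M where "M = d * n"
  define r where "r = (\<lambda>k. if even k \<and> k div 2 < M then k div 2 else k + M)"
  have inj: "inj r" unfolding inj_def r_def by (auto elim!: evenE)
  have "\<forall>e. map e [0..<d*n] \<in> flatten R \<longleftrightarrow> fsat le e (frename r (trG d ar ph \<psi>))"
  proof
    fix e :: "nat \<Rightarrow> 'a"
    have "fsat le e (frename r (trG d ar ph \<psi>)) \<longleftrightarrow> gsat d I (dec d (e \<circ> r)) \<psi>"
      using fsat_frename[OF inj, of le e "trG d ar ph \<psi>"] trG_correct[OF ph, of "e \<circ> r" \<psi>] by simp
    also have "\<dots> \<longleftrightarrow> map (dec d (e \<circ> r)) [0..<n] \<in> R" using psi by simp
    also have "map (dec d (e \<circ> r)) [0..<n] = map (\<lambda>i. take d (drop (i*d) (map e [0..<d*n]))) [0..<n]"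
    proof (rule nth_equalityI)
      fix i assume "i < length (map (dec d (e \<circ> r)) [0..<n])"
      then have i: "i < n" by simp
      have "i*d + d \<le> d*n" using i by (metis Suc_leI mult.commute mult_Suc_right add.commute mult_le_mono2)
      then have "\<And>j. j < d \<Longrightarrow> i*d + j < M" unfolding M_def by linarith
      then show "map (dec d (e \<circ> r)) [0..<n] ! i = map (\<lambda>i. take d (drop (i*d) (map e [0..<d*n]))) [0..<n] ! i"
        using i \<open>i*d + d \<le> d*n\<close> unfolding dec_def r_def by (simp add: list_eq_iff_nth_eq)
    qed simp
    also have "\<dots> \<in> R \<longleftrightarrow> map e [0..<d*n] \<in> flatten R"
    proof
      assume h: "map (\<lambda>i. take d (drop (i*d) (map e [0..<d*n]))) [0..<n] \<in> R"
      have l: "\<forall>x\<in>set (map (\<lambda>i. take d (drop (i*d) (map e [0..<d*n]))) [0..<n]). length x = d"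
        using h RT by (auto simp: tuples_iff)
      have "concat (map (\<lambda>i. take d (drop (i*d) (map e [0..<d*n]))) [0..<n]) = map e [0..<d*n]"
      proof (rule nth_equalityI)
        show "length (concat (map (\<lambda>i. take d (drop (i*d) (map e [0..<d*n]))) [0..<n])) = length (map e [0..<d*n])"
          using length_concat_d[OF l] by simp
        fix k assume k: "k < length (concat (map (\<lambda>i. take d (drop (i*d) (map e [0..<d*n]))) [0..<n]))"
        then have k': "k < d * n" using length_concat_d[OF l] by simp
        then have d0: "0 < d" by (cases d) auto
        have kd: "k div d < n" using k' d0 by (simp add: less_mult_imp_div_less mult.commute)
        have "(k div d)*d + k mod d = k" by simp
        then show "concat (map (\<lambda>i. take d (drop (i*d) (map e [0..<d*n]))) [0..<n]) ! k = map e [0..<d*n] ! k"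
          using nth_concat_d[OF l] k' kd d0 by (simp add: add.commute)
      qed
      then show "map e [0..<d*n] \<in> flatten R" using h unfolding flatten_def by (metis image_eqI)
    next
      assume "map e [0..<d*n] \<in> flatten R"
      then obtain t where t: "t \<in> R" "map e [0..<d*n] = concat t" unfolding flatten_def by blast
      have lt: "length t = n" "\<forall>x\<in>set t. length x = d" using t(1) RT by (auto simp: tuples_iff)
      have "map (\<lambda>i. take d (drop (i*d) (map e [0..<d*n]))) [0..<n] = t"
      proof (rule nth_equalityI)
        fix i assume "i < length (map (\<lambda>i. take d (drop (i*d) (map e [0..<d*n]))) [0..<n])"
        then have i: "i < length t" using lt by simp
        have "map (\<lambda>i. take d (drop (i*d) (map e [0..<d*n]))) [0..<n] ! i = take d (drop (i*d) (concat t))"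
          using i lt(1) t(2) by simp
        also have "\<dots> = t ! i" using chunk_concat[OF lt(2) i] .
        finally show "map (\<lambda>i. take d (drop (i*d) (map e [0..<d*n]))) [0..<n] ! i = t ! i" .
      qed (use lt in simp)
      then show "map (\<lambda>i. take d (drop (i*d) (map e [0..<d*n]))) [0..<n] \<in> R" using t(1) by simp
    qed
    finally show "map e [0..<d*n] \<in> flatten R \<longleftrightarrow> fsat le e (frename r (trG d ar ph \<psi>))" by simp
  qed
  then show ?thesis unfolding fdefinable_def fdefinable_rel_def by blast
qed

end

section \<open>Automorphism invariance\<close>

lemma gsat_auto:
  assumes A: "automorphism d I f" and len: "\<forall>i. length (e i) = d"
  shows "gsat d I e \<phi> \<longleftrightarrow> gsat d I (f \<circ> e) \<phi>"
  using len
proof (induction \<phi> arbitrary: e)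
  case (GEq x y)
  have "inj_on f (pts d)" using A unfolding automorphism_def bij_betw_def by blast
  then show ?case using GEq by (auto simp: pts_def inj_on_def)
next
  case (GRel s xs)
  have "set (map e xs) \<subseteq> pts d" using GRel by (auto simp: pts_def)
  then show ?case using A unfolding automorphism_def by (simp add: map_map comp_def)
next
  case (GNot \<phi>) then show ?case by simp
next
  case (GAnd \<phi> \<psi>) then show ?case by simp
next
  case (GEx x \<phi>)
  have bij: "bij_betw f (pts d) (pts d)" using A unfolding automorphism_def by blast
  have fl: "length (f p) = d" if "length p = d" for p using bij that unfolding bij_betw_def pts_def by auto
  show ?case
  proof
    assume "gsat d I e (GEx x \<phi>)"
    then obtain p where p: "length p = d" "gsat d I (e(x := p)) \<phi>" by auto
    have lp: "\<forall>i. length ((e(x := p)) i) = d" using GEx.prems p(1) by simp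
    have "gsat d I (f \<circ> (e(x := p))) \<phi>" using GEx.IH[OF lp] p(2) by blast
    moreover have "f \<circ> (e(x := p)) = (f \<circ> e)(x := f p)" by (auto simp: fun_eq_iff)
    ultimately show "gsat d I (f \<circ> e) (GEx x \<phi>)" using fl p(1) by auto
  next
    assume "gsat d I (f \<circ> e) (GEx x \<phi>)"
    then obtain q where q: "length q = d" "gsat d I ((f \<circ> e)(x := q)) \<phi>" by auto
    have "q \<in> f ` pts d" using bij q(1) unfolding bij_betw_def by (simp add: pts_def)
    then obtain p0 where p0: "p0 \<in> pts d" "q = f p0" by blast
    then have p: "length p0 = d" "f p0 = q" by (simp_all add: pts_def)
    have "(f \<circ> e)(x := q) = f \<circ> (e(x := p0))" using p by (auto simp: fun_eq_iff)
    have lp: "\<forall>i. length ((e(x := p0)) i) = d" using GEx.prems p(1) by simp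
    from \<open>(f \<circ> e)(x := q) = f \<circ> (e(x := p0))\<close> q(2) have "gsat d I (f \<circ> (e(x := p0))) \<phi>" by simp
    then have "gsat d I (e(x := p0)) \<phi>" using GEx.IH[OF lp] by blast
    then show "gsat d I e (GEx x \<phi>)" using p(1) by auto
  qed
qed

lemma i_closed:
  assumes G: "gdefinable d I n R" and RT: "R \<subseteq> tuples d n" and A: "automorphism d I f"
  shows "closed_under R f"
  unfolding closed_under_def
proof
  fix t assume tR: "t \<in> R"
  have lt: "length t = n" "\<forall>x\<in>set t. length x = d" using tR RT by (auto simp: tuples_iff)
  obtain \<psi> where psi: "\<forall>e. (\<forall>i. length (e i) = d) \<longrightarrow> (map e [0..<n] \<in> R \<longleftrightarrow> gsat d I e \<psi>)"
    using G unfolding gdefinable_def by blast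
  define e where "e = (\<lambda>i. if i < n then t!i else replicate d undefined)"
  have le: "\<forall>i. length (e i) = d" unfolding e_def using lt by auto
  have me: "map e [0..<n] = t" unfolding e_def using lt by (simp add: list_eq_iff_nth_eq)
  have fl: "length (f p) = d" if "length p = d" for p using A that unfolding automorphism_def bij_betw_def pts_def by auto
  have le2: "\<forall>i. length ((f \<circ> e) i) = d" using le fl by simp
  have "(map e [0..<n] \<in> R) = gsat d I e \<psi>" using psi le by blast
  then have "gsat d I e \<psi>" using me tR by simp
  then have "gsat d I (f \<circ> e) \<psi>" using gsat_auto[OF A le] by simp
  then have "map (f \<circ> e) [0..<n] \<in> R" using psi le2 by simp
  then show "map f t \<in> R" using me by (simp flip: map_map)
qed


declare upt_Suc[simp del]

lemma ord_mu:
  assumes ord: "is_field_order r" and l: "r l 0"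
  shows "r 0 (-l/(1-l)) \<and> r (-l/(1-l)) 1 \<and> 1 - l \<noteq> 0"
proof -
  have nl: "r 0 (-l)" using o_sub[OF ord, of l 0] l by simp
  have "r (0+1) (-l+1)" using o_add[OF ord nl] .
  then have l1: "r 1 (1-l)" by simp
  then have l0: "r 0 (1-l)" and ln: "1 - l \<noteq> 0" using o_inv1[OF ord l1] o_trans[OF ord o_01[OF ord] l1] by auto
  have i0: "r 0 (1/(1-l))" using o_inv[OF ord l0] .
  have "r 0 ((-l)*(1/(1-l)))" using o_mul[OF ord nl i0] .
  then have m0: "r 0 (-l/(1-l))" by simp
  have "1 - (-l/(1-l)) = 1/(1-l)" using ln by (simp add: field_simps)
  then have "r (-l/(1-l)) 1" using o_sub[OF ord, of "-l/(1-l)" 1] i0 by simp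
  then show ?thesis using m0 ln by simp
qed

lemma col_bw:
  assumes ord: "is_field_order r"
  shows "colc d p q f \<longleftrightarrow> bwc r d p q f \<or> bwc r d q p f \<or> bwc r d p f q"
proof
  assume "colc d p q f"
  then consider l where "\<forall>i<d. q!i = p!i + l*(f!i - p!i)" | "\<forall>i<d. f!i = p!i" unfolding colc_def by blast
  then show "bwc r d p q f \<or> bwc r d q p f \<or> bwc r d p f q"
  proof cases
    case 2
    then have "bwc r d p f q" unfolding bwc_def using o_refl[OF ord] o_01[OF ord] by (intro exI[of _ 0]) auto
    then show ?thesis by simp
  next
    case (1 l)
    show ?thesis
    proof (cases "r 0 l \<and> r l 1")
      case True then show ?thesis unfolding bwc_def using 1 by blast
    next
      case False
      then consider "\<not> r l 1" | "\<not> r 0 l" by blast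
      then show ?thesis
      proof cases
        case a: 1
        then have "r 1 l" using o_total[OF ord] by blast
        then have h: "r (1/l) 1" "l \<noteq> 0" using o_inv1[OF ord] by auto
        have h2: "r 0 (1/l)" using o_inv[OF ord] o_trans[OF ord o_01[OF ord] \<open>r 1 l\<close>] by blast
        have "\<forall>i<d. f!i = p!i + (1/l)*(q!i - p!i)" using 1 h(2) by (simp add: field_simps)
        then have "bwc r d p f q" unfolding bwc_def using h h2 by blast
        then show ?thesis by simp
      next
        case b: 2
        then have "r l 0" using o_total[OF ord] by blast
        from ord_mu[OF ord this] have m: "r 0 (-l/(1-l))" "r (-l/(1-l)) 1" "1 - l \<noteq> 0" by auto
        have "\<forall>i<d. p!i = q!i + (-l/(1-l))*(f!i - q!i)"
        proof (intro allI impI)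
          fix i assume i: "i < d"
          have qi: "q!i = p!i + l*(f!i - p!i)" using 1 i by simp
          show "p!i = q!i + (-l/(1-l))*(f!i - q!i)" unfolding qi using m(3) by (simp add: field_simps)
        qed
        then have "bwc r d q p f" unfolding bwc_def using m by blast
        then show ?thesis by simp
      qed
    qed
  qed
next
  assume "bwc r d p q f \<or> bwc r d q p f \<or> bwc r d p f q"
  then consider "bwc r d p q f" | "bwc r d q p f" | "bwc r d p f q" by blast
  then show "colc d p q f"
  proof cases
    case 1 then show ?thesis unfolding bwc_def colc_def by blast
  next
    case 2
    then obtain l where l: "\<forall>i<d. p!i = q!i + l*(f!i - q!i)" unfolding bwc_def by blast
    show ?thesis
    proof (cases "l = 1")
      case True then have "\<forall>i<d. f!i = p!i" using l by simp
      then show ?thesis unfolding colc_def by blast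
    next
      case False
      have "\<forall>i<d. q!i = p!i + (-l/(1-l))*(f!i - p!i)"
      proof (intro allI impI)
        fix i assume i: "i < d"
        have pi: "p!i = q!i + l*(f!i - q!i)" using l i by simp
        have "1 - l \<noteq> 0" using False by simp
        then show "q!i = p!i + (-l/(1-l))*(f!i - p!i)" unfolding pi by (simp add: field_simps)
      qed
      then show ?thesis unfolding colc_def by blast
    qed
  next
    case 3
    then obtain l where l: "\<forall>i<d. f!i = p!i + l*(q!i - p!i)" unfolding bwc_def by blast
    show ?thesis
    proof (cases "l = 0")
      case True then have "\<forall>i<d. f!i = p!i" using l by simp
      then show ?thesis unfolding colc_def by blast
    next
      case False
      have "\<forall>i<d. q!i = p!i + (1/l)*(f!i - p!i)" using l False by (simp add: field_simps)
      then show ?thesis unfolding colc_def by blast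
    qed
  qed
qed

lemma lam_hyp:
  assumes "field_hyp (le :: ('a::field \<Rightarrow> 'a \<Rightarrow> bool) option)"
  shows "\<exists>lam::'a. lam \<noteq> 0 \<and> lam \<noteq> 1"
proof (cases le)
  case None
  then obtain x y z :: 'a where "distinct [x, y, z]" using assms unfolding field_hyp_def by auto
  then show ?thesis by (metis distinct_length_2_or_more distinct_singleton)
next
  case (Some r)
  then have ord: "is_field_order r" using assms unfolding field_hyp_def by simp
  have "(1::'a) + 1 \<noteq> 0"
  proof
    assume h: "(1::'a) + 1 = 0"
    have "r (0+1) (1+1)" using o_add[OF ord o_01[OF ord]] .
    then have "r 1 0" using h by simp
    then show False using o_antisym[OF ord _ o_01[OF ord]] by simp
  qed
  moreover have "(1::'a) + 1 \<noteq> 1"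
  proof
    assume "(1::'a) + 1 = 1"
    then have "(1::'a) + 1 = 1 + 0" by simp
    then have "(1::'a) = 0" by (simp only: add_left_cancel)
    then show False by simp
  qed
  ultimately show ?thesis by blast
qed

lemma gd_from_gdefinable3:
  assumes "gdefinable d I 3 S"
    and "\<And>p q f. length p = d \<Longrightarrow> length q = d \<Longrightarrow> length f = d \<Longrightarrow> [p, q, f] \<in> S \<longleftrightarrow> P p q f"
  shows "gd d I (\<lambda>e. P (e 0) (e 1) (e 2))"
proof -
  have u: "[0..<3] = [0,1,2::nat]" by (simp add: upt_rec)
  show ?thesis using assms(1) unfolding gdefinable_gdl gdl_def u
    by (rule gd_cong) (simp add: assms(2))
qed

theorem theorem1:
  fixes le :: "('a::field \<Rightarrow> 'a \<Rightarrow> bool) option"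
    and d n :: nat
    and ar :: "'s \<Rightarrow> nat"
    and I :: "'s \<Rightarrow> 'a list list \<Rightarrow> bool"
    and R :: "'a list list set"
  assumes "d \<ge> 2"
    and "field_hyp le"
    and "FFD le d ar I"
    and "n \<ge> 1"
    and "R \<subseteq> tuples d n"
  shows "(gdefinable d I n R \<longleftrightarrow>
            fdefinable le d n R \<and> (\<forall>f. automorphism d I f \<longrightarrow> closed_under R f))
       \<and> (gdefinable d I n R \<longleftrightarrow>
            fdefinable le d n R \<and>
            (\<forall>f. automorphism d I f \<and> affine_transf d f \<longrightarrow> closed_under R f))"
proof -
  note d2 = assms(1) and fh = assms(2) and RT = assms(5)
  have cg: "coord_geom le d ar I" and fin: "finite (UNIV :: 's set)" and fdI: "\<And>s. fdefinable le d (ar s) {t. I s t}"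
    using assms(3) unfolding FFD_def by auto
  have wf: "wf_struct d ar I" using cg unfolding coord_geom_def by simp
  have gcol0: "gd d I (\<lambda>e. colc d (e 0) (e 1) (e 2))"
  proof (cases le)
    case None
    then have "gdefinable d I 3 (col_rel d)" using cg unfolding coord_geom_def by simp
    then show ?thesis
      by (rule gd_from_gdefinable3) (auto simp: col_rel_def pts_def col_colc)
  next
    case (Some r)
    have ord: "is_field_order r" using fh Some unfolding field_hyp_def by simp
    have "gdefinable d I 3 (bw_rel r d)" using cg Some unfolding coord_geom_def by simp
    then have gb: "gd d I (\<lambda>e. bwc r d (e 0) (e 1) (e 2))"
      by (rule gd_from_gdefinable3) (auto simp: bw_rel_def pts_def bw_bwc)
    have "gd d I (\<lambda>e. bwc r d (e 0) (e 1) (e 2) \<or> bwc r d (e 1) (e 0) (e 2) \<or> bwc r d (e 0) (e 2) (e 1))"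
      by (intro gd_or gb gd_inst3[OF gb])
    then show ?thesis by (rule gd_cong) (simp add: col_bw[OF ord])
  qed
  have leok: "is_field_order r \<and> gd d I (\<lambda>e. bwc r d (e 0) (e 1) (e 2))" if "le = Some r" for r
  proof -
    have ord: "is_field_order r" using fh that unfolding field_hyp_def by simp
    have "gdefinable d I 3 (bw_rel r d)" using cg that unfolding coord_geom_def by simp
    then have gb: "gd d I (\<lambda>e. bwc r d (e 0) (e 1) (e 2))"
      by (rule gd_from_gdefinable3) (auto simp: bw_rel_def pts_def bw_bwc)
    then show ?thesis using ord by simp
  qed
  have T: "topl d I le ar"
    unfolding topl_def topl_axioms_def fgeo_def fgeo_axioms_def geo_def sem_def
    using gcol0 lam_hyp[OF fh] leok wf d2 fin fdI by blast
  have S: "sem d ar I" using wf d2 unfolding sem_def by blast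
  obtain ph where ph: "\<And>s e. map e [0..<d * ar s] \<in> flatten {t. I s t} \<longleftrightarrow> fsat le e (ph s)"
    using fdI unfolding fdefinable_def fdefinable_rel_def by metis
  have i_ii: "gdefinable d I n R \<Longrightarrow> fdefinable le d n R \<and> (\<forall>f. automorphism d I f \<longrightarrow> closed_under R f)"
    using sem.i_fdef[OF S ph RT] i_closed[OF _ RT] by blast
  have iii_i: "fdefinable le d n R \<and> (\<forall>f. automorphism d I f \<and> affine_transf d f \<longrightarrow> closed_under R f) \<Longrightarrow> gdefinable d I n R"
    using topl.iii_i[OF T RT] by blast
  show ?thesis using i_ii iii_i by blast
qed


end
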